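(* Let $A$ and $B$ be finite-dimensional local $k$-algebras, $X$ a finite-dimensional $(A,B)$-bimodule on which $k$ acts centrally, and $\Lambda=\begin{pmatrix}A&X\\0&B\end{pmatrix}$, $P_1=[A\ X]$, $P_2=[0\ B]$. (a) $\Sigma(\Lambda)$ contains $\operatorname{cone}\{(0,-1),(1,-r)\}$ for $r:=t(X)_B=\dim_{B/J_B}(X/XJ_B)$. (b) $\Sigma(\Lambda)$ contains $\operatorname{cone}\{(1,0),(\ell,-1)\}$ for $\ell:=t_A(X)=\dim_{A/J_A}(X/J_AX)$. (c) Let $g_1,\dots,g_r$ be a minimal set of generators of the right $B$-module $X$ and $g:=[g_1\ \cdots\ g_r]\in M_{1,r}(X)$. Then $\mu_1^+(\Lambda[1])=P_g\oplus P_2[1]$, a basic 2-term silting complex. (d) Let $h_1,\dots,h_\ell$ be a minimal set of generators of the left $A$-module $X$ and $h:=(h_1,\dots,h_\ell)^{T}\in M_{\ell,1}(X)$. Then $\mu_2^-(\Lambda)=P_1\oplus P_h$, a basic 2-term silting complex.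
   Context: $k$ a field; $t(X)_B$ (resp. $t_A(X)$) is the minimal number of generators of $X$ as right $B$- (resp. left $A$-) module. For $x\in M_{s,t}(X)$ ($s\times t$ matrices over $X$), $P_x$ is the 2-term complex $P_2^{\oplus t}\xrightarrow{x(\cdot)}P_1^{\oplus s}$ in degrees $-1,0$. $g$-fan $\Sigma(\Lambda)$: set of cones $\operatorname{cone}\{[T_i]\}$ for basic 2-term presilting complexes $T=\bigoplus T_i$ (presilting: $\operatorname{Hom}(T,T[\ell])=0$ for $\ell>0$; $[T]=[T^0]-[T^{-1}]$), in $\mathbb{R}^2$ via $[P_1]\mapsto(1,0)$, $[P_2]\mapsto(0,1)$. A 2-term presilting complex with two non-isomorphic indecomposable summands is silting. For basic 2-term silting complexes, $T\ge U$ iff $\operatorname{Hom}(T,U[\ell])=0$ for $\ell>0$. For basic 2-term silting $T=T_1\oplus T_2$ the mutation at $T_i$ is the unique other basic 2-term silting complex $T'_i\oplus T_j$ ($j\ne i$, $T'_i\not\cong T_i$), denoted $\mu_i^+(T)$ if it is $>T$ and $\mu_i^-(T)$ if $<T$. For $\Lambda[1]=P_1[1]\oplus P_2[1]$ and $\Lambda=P_1\oplus P_2$ the index $i$ refers to the summand $P_i[1]$, resp. $P_i$. *)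

theory Defs
  imports "HOL-Analysis.Analysis"
begin

definition k_alg :: "('k::field \<Rightarrow> 'a::ring_1) \<Rightarrow> bool" where
  "k_alg \<iota> \<longleftrightarrow> (\<forall>c d. \<iota> (c + d) = \<iota> c + \<iota> d) \<and> (\<forall>c d. \<iota> (c * d) = \<iota> c * \<iota> d)
      \<and> \<iota> 1 = 1 \<and> (\<forall>c a. \<iota> c * a = a * \<iota> c)"

definition fin_dim_k :: "('k \<Rightarrow> 'v::comm_monoid_add \<Rightarrow> 'v) \<Rightarrow> bool" where
  "fin_dim_k sc \<longleftrightarrow> (\<exists>S. finite S \<and> (\<forall>v. \<exists>c. v = (\<Sum>s\<in>S. sc (c s) s)))"

definition two_sided_unit :: "'a::ring_1 \<Rightarrow> bool" where
  "two_sided_unit x \<longleftrightarrow> (\<exists>y. x * y = 1 \<and> y * x = 1)"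

text \<open>Local ring: the non-units form an ideal (equivalently, are closed under addition).\<close>
definition loc_ring :: "'a::ring_1 itself \<Rightarrow> bool" where
  "loc_ring _ \<longleftrightarrow> (\<forall>x y::'a. \<not> two_sided_unit x \<longrightarrow> \<not> two_sided_unit y \<longrightarrow> \<not> two_sided_unit (x + y))"

definition bimod :: "('a::ring_1 \<Rightarrow> 'x::ab_group_add \<Rightarrow> 'x) \<Rightarrow> ('x \<Rightarrow> 'b::ring_1 \<Rightarrow> 'x) \<Rightarrow> bool" where
  "bimod la ra \<longleftrightarrow>
     (\<forall>a a' x. la (a * a') x = la a (la a' x)) \<and> (\<forall>x. la 1 x = x) \<and>
     (\<forall>a a' x. la (a + a') x = la a x + la a' x) \<and> (\<forall>a x y. la a (x + y) = la a x + la a y) \<and>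
     (\<forall>x b b'. ra x (b * b') = ra (ra x b) b') \<and> (\<forall>x. ra x 1 = x) \<and>
     (\<forall>x b b'. ra x (b + b') = ra x b + ra x b') \<and> (\<forall>x y b. ra (x + y) b = ra x b + ra y b) \<and>
     (\<forall>a x b. la a (ra x b) = ra (la a x) b)"

definition right_gen :: "('x::ab_group_add \<Rightarrow> 'b \<Rightarrow> 'x) \<Rightarrow> (nat \<Rightarrow> 'x) \<Rightarrow> nat \<Rightarrow> bool" where
  "right_gen ra g n \<longleftrightarrow> (\<forall>x. \<exists>b. x = (\<Sum>i<n. ra (g i) (b i)))"

definition left_gen :: "('a \<Rightarrow> 'x::ab_group_add \<Rightarrow> 'x) \<Rightarrow> (nat \<Rightarrow> 'x) \<Rightarrow> nat \<Rightarrow> bool" where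
  "left_gen la h n \<longleftrightarrow> (\<forall>x. \<exists>a. x = (\<Sum>i<n. la (a i) (h i)))"

definition rgen_num :: "('x::ab_group_add \<Rightarrow> 'b \<Rightarrow> 'x) \<Rightarrow> nat" where
  "rgen_num ra = (LEAST n. \<exists>g. right_gen ra g n)"

definition lgen_num :: "('a \<Rightarrow> 'x::ab_group_add \<Rightarrow> 'x) \<Rightarrow> nat" where
  "lgen_num la = (LEAST n. \<exists>h. left_gen la h n)"

text \<open>A morphism P1^p (+) P2^q -> P1^p' (+) P2^q' is a block matrix
  [[alpha, xi],[0, beta]] with alpha a p'xp matrix over A (=Hom(P1,P1)), xi a p'xq matrix
  over X (=Hom(P2,P1)), beta a q'xq matrix over B (=Hom(P2,P2)); Hom(P1,P2)=0.
  Matrices are functions nat => nat => _, only entries within bounds matter.\<close>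
record ('a, 'x, 'b) bm =
  mA :: "nat \<Rightarrow> nat \<Rightarrow> 'a"
  mX :: "nat \<Rightarrow> nat \<Rightarrow> 'x"
  mB :: "nat \<Rightarrow> nat \<Rightarrow> 'b"

text \<open>Composition N o M, where the middle object is P1^pm (+) P2^qm.\<close>
definition bcomp :: "('a::ring_1 \<Rightarrow> 'x::ab_group_add \<Rightarrow> 'x) \<Rightarrow> ('x \<Rightarrow> 'b::ring_1 \<Rightarrow> 'x) \<Rightarrow> nat \<Rightarrow> nat
    \<Rightarrow> ('a, 'x, 'b) bm \<Rightarrow> ('a, 'x, 'b) bm \<Rightarrow> ('a, 'x, 'b) bm" where
  "bcomp la ra pm qm N M =
     \<lparr>mA = (\<lambda>i j. \<Sum>k<pm. mA N i k * mA M k j),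
      mX = (\<lambda>i j. (\<Sum>k<pm. la (mA N i k) (mX M k j)) + (\<Sum>k<qm. ra (mX N i k) (mB M k j))),
      mB = (\<lambda>i j. \<Sum>k<qm. mB N i k * mB M k j)\<rparr>"

definition badd :: "('a::ring_1, 'x::ab_group_add, 'b::ring_1) bm \<Rightarrow> ('a, 'x, 'b) bm \<Rightarrow> ('a, 'x, 'b) bm" where
  "badd M N = \<lparr>mA = (\<lambda>i j. mA M i j + mA N i j), mX = (\<lambda>i j. mX M i j + mX N i j),
               mB = (\<lambda>i j. mB M i j + mB N i j)\<rparr>"

definition bsub :: "('a::ring_1, 'x::ab_group_add, 'b::ring_1) bm \<Rightarrow> ('a, 'x, 'b) bm \<Rightarrow> ('a, 'x, 'b) bm" where
  "bsub M N = \<lparr>mA = (\<lambda>i j. mA M i j - mA N i j), mX = (\<lambda>i j. mX M i j - mX N i j),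
               mB = (\<lambda>i j. mB M i j - mB N i j)\<rparr>"

definition bid :: "('a::ring_1, 'x::ab_group_add, 'b::ring_1) bm" where
  "bid = \<lparr>mA = (\<lambda>i j. if i = j then 1 else 0), mX = (\<lambda>i j. 0), mB = (\<lambda>i j. if i = j then 1 else 0)\<rparr>"

definition bzero :: "('a::zero, 'x::zero, 'b::zero) bm" where
  "bzero = \<lparr>mA = (\<lambda>i j. 0), mX = (\<lambda>i j. 0), mB = (\<lambda>i j. 0)\<rparr>"

definition beq :: "nat \<Rightarrow> nat \<Rightarrow> nat \<Rightarrow> nat \<Rightarrow> ('a, 'x, 'b) bm \<Rightarrow> ('a, 'x, 'b) bm \<Rightarrow> bool" where
  "beq ps qs pt qt M N \<longleftrightarrow>
     (\<forall>i<pt. \<forall>j<ps. mA M i j = mA N i j) \<and> (\<forall>i<pt. \<forall>j<qs. mX M i j = mX N i j) \<and>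
     (\<forall>i<qt. \<forall>j<qs. mB M i j = mB N i j)"

text \<open>Block-diagonal sum of M: (ps,qs)->(pt,qt) and N, reordered so that the
  P1-summands come first.\<close>
definition bdiag :: "nat \<Rightarrow> nat \<Rightarrow> nat \<Rightarrow> nat \<Rightarrow> ('a::zero, 'x::zero, 'b::zero) bm \<Rightarrow> ('a, 'x, 'b) bm \<Rightarrow> ('a, 'x, 'b) bm" where
  "bdiag ps qs pt qt M N =
     \<lparr>mA = (\<lambda>i j. if i < pt \<and> j < ps then mA M i j else if pt \<le> i \<and> ps \<le> j then mA N (i - pt) (j - ps) else 0),
      mX = (\<lambda>i j. if i < pt \<and> j < qs then mX M i j else if pt \<le> i \<and> qs \<le> j then mX N (i - pt) (j - qs) else 0),
      mB = (\<lambda>i j. if i < qt \<and> j < qs then mB M i j else if qt \<le> i \<and> qs \<le> j then mB N (i - qt) (j - qs) else 0)\<rparr>"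

text \<open>A 2-term complex T^{-1} -> T^0 with T^{-1} = P1^p1 (+) P2^q1 (degree -1),
  T^0 = P1^p0 (+) P2^q0 (degree 0), differential dd.\<close>
record ('a, 'x, 'b) cx =
  p1 :: nat
  q1 :: nat
  p0 :: nat
  q0 :: nat
  dd :: "('a, 'x, 'b) bm"

definition chain_map :: "('a::ring_1 \<Rightarrow> 'x::ab_group_add \<Rightarrow> 'x) \<Rightarrow> ('x \<Rightarrow> 'b::ring_1 \<Rightarrow> 'x) \<Rightarrow>
    ('a, 'x, 'b) cx \<Rightarrow> ('a, 'x, 'b) cx \<Rightarrow> ('a, 'x, 'b) bm \<Rightarrow> ('a, 'x, 'b) bm \<Rightarrow> bool" where
  "chain_map la ra T U f1 f0 \<longleftrightarrow>
     beq (p1 T) (q1 T) (p0 U) (q0 U) (bcomp la ra (p0 T) (q0 T) f0 (dd T)) (bcomp la ra (p1 U) (q1 U) (dd U) f1)"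

definition nullhtp :: "('a::ring_1 \<Rightarrow> 'x::ab_group_add \<Rightarrow> 'x) \<Rightarrow> ('x \<Rightarrow> 'b::ring_1 \<Rightarrow> 'x) \<Rightarrow>
    ('a, 'x, 'b) cx \<Rightarrow> ('a, 'x, 'b) cx \<Rightarrow> ('a, 'x, 'b) bm \<Rightarrow> ('a, 'x, 'b) bm \<Rightarrow> bool" where
  "nullhtp la ra T U f1 f0 \<longleftrightarrow> (\<exists>h.
     beq (p1 T) (q1 T) (p1 U) (q1 U) f1 (bcomp la ra (p0 T) (q0 T) h (dd T)) \<and>
     beq (p0 T) (q0 T) (p0 U) (q0 U) f0 (bcomp la ra (p1 U) (q1 U) (dd U) h))"

definition hiso :: "('a::ring_1 \<Rightarrow> 'x::ab_group_add \<Rightarrow> 'x) \<Rightarrow> ('x \<Rightarrow> 'b::ring_1 \<Rightarrow> 'x) \<Rightarrow>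
    ('a, 'x, 'b) cx \<Rightarrow> ('a, 'x, 'b) cx \<Rightarrow> bool" where
  "hiso la ra T U \<longleftrightarrow> (\<exists>f1 f0 g1 g0.
     chain_map la ra T U f1 f0 \<and> chain_map la ra U T g1 g0 \<and>
     nullhtp la ra T T (bsub (bcomp la ra (p1 U) (q1 U) g1 f1) bid) (bsub (bcomp la ra (p0 U) (q0 U) g0 f0) bid) \<and>
     nullhtp la ra U U (bsub (bcomp la ra (p1 T) (q1 T) f1 g1) bid) (bsub (bcomp la ra (p0 T) (q0 T) f0 g0) bid))"

text \<open>Hom(T, U[1]) = 0 in K^b(proj Lambda): every map T^{-1} -> U^0 is null-homotopic
  (for 2-term complexes Hom(T,U[l]) = 0 automatically for l >= 2).\<close>
definition hom1_zero :: "('a::ring_1 \<Rightarrow> 'x::ab_group_add \<Rightarrow> 'x) \<Rightarrow> ('x \<Rightarrow> 'b::ring_1 \<Rightarrow> 'x) \<Rightarrow>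
    ('a, 'x, 'b) cx \<Rightarrow> ('a, 'x, 'b) cx \<Rightarrow> bool" where
  "hom1_zero la ra T U \<longleftrightarrow> (\<forall>\<phi>. \<exists>a b.
     beq (p1 T) (q1 T) (p0 U) (q0 U) \<phi>
       (badd (bcomp la ra (p1 U) (q1 U) (dd U) a) (bcomp la ra (p0 T) (q0 T) b (dd T))))"

definition presilting :: "('a::ring_1 \<Rightarrow> 'x::ab_group_add \<Rightarrow> 'x) \<Rightarrow> ('x \<Rightarrow> 'b::ring_1 \<Rightarrow> 'x) \<Rightarrow>
    ('a, 'x, 'b) cx \<Rightarrow> bool" where
  "presilting la ra T \<longleftrightarrow> hom1_zero la ra T T"

definition dsum :: "('a::zero, 'x::zero, 'b::zero) cx \<Rightarrow> ('a, 'x, 'b) cx \<Rightarrow> ('a, 'x, 'b) cx" where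
  "dsum T U = \<lparr>p1 = p1 T + p1 U, q1 = q1 T + q1 U, p0 = p0 T + p0 U, q0 = q0 T + q0 U,
               dd = bdiag (p1 T) (q1 T) (p0 T) (q0 T) (dd T) (dd U)\<rparr>"

definition zcx :: "('a::zero, 'x::zero, 'b::zero) cx" where
  "zcx = \<lparr>p1 = 0, q1 = 0, p0 = 0, q0 = 0, dd = bzero\<rparr>"

definition dsum_list :: "('a::zero, 'x::zero, 'b::zero) cx list \<Rightarrow> ('a, 'x, 'b) cx" where
  "dsum_list Ts = foldr dsum Ts zcx"

definition indec :: "('a::ring_1 \<Rightarrow> 'x::ab_group_add \<Rightarrow> 'x) \<Rightarrow> ('x \<Rightarrow> 'b::ring_1 \<Rightarrow> 'x) \<Rightarrow>
    ('a, 'x, 'b) cx \<Rightarrow> bool" where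
  "indec la ra T \<longleftrightarrow> \<not> hiso la ra T zcx \<and>
     (\<forall>U V. hiso la ra T (dsum U V) \<longrightarrow> hiso la ra U zcx \<or> hiso la ra V zcx)"

definition basic_presilting :: "('a::ring_1 \<Rightarrow> 'x::ab_group_add \<Rightarrow> 'x) \<Rightarrow> ('x \<Rightarrow> 'b::ring_1 \<Rightarrow> 'x) \<Rightarrow>
    ('a, 'x, 'b) cx list \<Rightarrow> bool" where
  "basic_presilting la ra Ts \<longleftrightarrow> (\<forall>T\<in>set Ts. indec la ra T) \<and>
     (\<forall>i<length Ts. \<forall>j<length Ts. i \<noteq> j \<longrightarrow> \<not> hiso la ra (Ts ! i) (Ts ! j)) \<and>
     presilting la ra (dsum_list Ts)"

text \<open>g-vector [T] = [T^0] - [T^{-1}], with [P1] = (1,0), [P2] = (0,1).\<close>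
definition gvec :: "('a, 'x, 'b) cx \<Rightarrow> real \<times> real" where
  "gvec T = (real (p0 T) - real (p1 T), real (q0 T) - real (q1 T))"

definition gfan :: "('a::ring_1 \<Rightarrow> 'x::ab_group_add \<Rightarrow> 'x) \<Rightarrow> ('x \<Rightarrow> 'b::ring_1 \<Rightarrow> 'x) \<Rightarrow> (real \<times> real) set set" where
  "gfan la ra = {cone hull (gvec ` set Ts) | Ts. basic_presilting la ra Ts}"

text \<open>Basic 2-term silting complex T1 (+) T2 (Lambda has 2 simple modules).\<close>
definition silting2 :: "('a::ring_1 \<Rightarrow> 'x::ab_group_add \<Rightarrow> 'x) \<Rightarrow> ('x \<Rightarrow> 'b::ring_1 \<Rightarrow> 'x) \<Rightarrow>
    ('a, 'x, 'b) cx \<Rightarrow> ('a, 'x, 'b) cx \<Rightarrow> bool" where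
  "silting2 la ra T1 T2 \<longleftrightarrow> basic_presilting la ra [T1, T2]"

definition sgt :: "('a::ring_1 \<Rightarrow> 'x::ab_group_add \<Rightarrow> 'x) \<Rightarrow> ('x \<Rightarrow> 'b::ring_1 \<Rightarrow> 'x) \<Rightarrow>
    ('a, 'x, 'b) cx \<Rightarrow> ('a, 'x, 'b) cx \<Rightarrow> bool" where
  "sgt la ra T U \<longleftrightarrow> hom1_zero la ra T U \<and> \<not> hiso la ra T U"

definition mut_ok :: "('a::ring_1 \<Rightarrow> 'x::ab_group_add \<Rightarrow> 'x) \<Rightarrow> ('x \<Rightarrow> 'b::ring_1 \<Rightarrow> 'x) \<Rightarrow>
    ('a, 'x, 'b) cx \<Rightarrow> ('a, 'x, 'b) cx \<Rightarrow> nat \<Rightarrow> ('a, 'x, 'b) cx \<Rightarrow> bool" where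
  "mut_ok la ra T1 T2 i U \<longleftrightarrow>
     (if i = 1 then silting2 la ra U T2 \<and> \<not> hiso la ra U T1 \<and>
          (\<forall>V. silting2 la ra V T2 \<and> \<not> hiso la ra V T1 \<longrightarrow> hiso la ra V U)
      else silting2 la ra T1 U \<and> \<not> hiso la ra U T2 \<and>
          (\<forall>V. silting2 la ra T1 V \<and> \<not> hiso la ra V T2 \<longrightarrow> hiso la ra V U))"

definition mut_cx :: "('a::zero, 'x::zero, 'b::zero) cx \<Rightarrow> ('a, 'x, 'b) cx \<Rightarrow> nat \<Rightarrow> ('a, 'x, 'b) cx \<Rightarrow> ('a, 'x, 'b) cx" where
  "mut_cx T1 T2 i U = (if i = 1 then dsum U T2 else dsum T1 U)"

definition mu_plus :: "('a::ring_1 \<Rightarrow> 'x::ab_group_add \<Rightarrow> 'x) \<Rightarrow> ('x \<Rightarrow> 'b::ring_1 \<Rightarrow> 'x) \<Rightarrow>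
    ('a, 'x, 'b) cx \<Rightarrow> ('a, 'x, 'b) cx \<Rightarrow> nat \<Rightarrow> ('a, 'x, 'b) cx \<Rightarrow> bool" where
  "mu_plus la ra T1 T2 i U \<longleftrightarrow> mut_ok la ra T1 T2 i U \<and> sgt la ra (mut_cx T1 T2 i U) (dsum T1 T2)"

definition mu_minus :: "('a::ring_1 \<Rightarrow> 'x::ab_group_add \<Rightarrow> 'x) \<Rightarrow> ('x \<Rightarrow> 'b::ring_1 \<Rightarrow> 'x) \<Rightarrow>
    ('a, 'x, 'b) cx \<Rightarrow> ('a, 'x, 'b) cx \<Rightarrow> nat \<Rightarrow> ('a, 'x, 'b) cx \<Rightarrow> bool" where
  "mu_minus la ra T1 T2 i U \<longleftrightarrow> mut_ok la ra T1 T2 i U \<and> sgt la ra (dsum T1 T2) (mut_cx T1 T2 i U)"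

text \<open>P1, P2 in degree 0 and P1[1], P2[1] (in degree -1).\<close>
definition P1cx :: "('a::zero, 'x::zero, 'b::zero) cx" where
  "P1cx = \<lparr>p1 = 0, q1 = 0, p0 = 1, q0 = 0, dd = bzero\<rparr>"
definition P2cx :: "('a::zero, 'x::zero, 'b::zero) cx" where
  "P2cx = \<lparr>p1 = 0, q1 = 0, p0 = 0, q0 = 1, dd = bzero\<rparr>"
definition P1sh :: "('a::zero, 'x::zero, 'b::zero) cx" where
  "P1sh = \<lparr>p1 = 1, q1 = 0, p0 = 0, q0 = 0, dd = bzero\<rparr>"
definition P2sh :: "('a::zero, 'x::zero, 'b::zero) cx" where
  "P2sh = \<lparr>p1 = 0, q1 = 1, p0 = 0, q0 = 0, dd = bzero\<rparr>"

text \<open>P_x for x in M_{s,t}(X): P2^t --x(.)--> P1^s.\<close>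
definition Px :: "nat \<Rightarrow> nat \<Rightarrow> (nat \<Rightarrow> nat \<Rightarrow> 'x) \<Rightarrow> ('a::zero, 'x::zero, 'b::zero) cx" where
  "Px s t x = \<lparr>p1 = 0, q1 = t, p0 = s, q0 = 0,
               dd = \<lparr>mA = (\<lambda>i j. 0), mX = x, mB = (\<lambda>i j. 0)\<rparr>\<rparr>"

end

theory Submission
  imports Defs
begin

section \<open>Local rings\<close>

abbreviation nu :: "'r::ring_1 \<Rightarrow> bool" where "nu x \<equiv> \<not> two_sided_unit x"

locale lring = fixes T :: "'r::ring_1 itself" assumes loc: "loc_ring TYPE('r)"
begin

lemma nu_add: "nu (x::'r) \<Longrightarrow> nu y \<Longrightarrow> nu (x + y)"
  using loc unfolding loc_ring_def by blast

lemma unit_one[simp]: "two_sided_unit (1::'r)"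
  unfolding two_sided_unit_def by auto

lemma nu_zero[simp]: "nu (0::'r)"
  unfolding two_sided_unit_def by auto

lemma unit_idem: assumes "two_sided_unit (e::'r)" "e * e = e" shows "e = 1"
proof -
  obtain z where z: "e * z = 1" "z * e = 1" using assms(1) unfolding two_sided_unit_def by blast
  have "z * (e * e) = z * e" using assms(2) by simp
  hence "(z * e) * e = z * e" by (simp add: mult.assoc)
  thus ?thesis using z by simp
qed

lemma rinv_unit: assumes "(x::'r) * y = 1" shows "two_sided_unit x"
proof (rule ccontr)
  assume nx: "nu x"
  define e where "e = y * x"
  have ee: "e * e = e" unfolding e_def by (metis assms mult.assoc mult_1_left)
  have ne: "nu e"
  proof
    assume "two_sided_unit e"
    then have "e = 1" using ee by (rule unit_idem)
    with assms nx show False unfolding e_def two_sided_unit_def by blast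
  qed
  have ee2: "(1 - e) * (1 - e) = 1 - e" using ee by (simp add: algebra_simps)
  have n1e: "nu (1 - e)"
  proof
    assume "two_sided_unit (1 - e)"
    with ee2 have "1 - e = 1" using unit_idem by blast
    hence "e = 0" by simp
    hence "x = 0" unfolding e_def by (metis assms mult.assoc mult_1_left mult_zero_right)
    with assms show False by simp
  qed
  from nu_add[OF ne n1e] show False by simp
qed

lemma linv_unit: assumes "(x::'r) * y = 1" shows "two_sided_unit y"
proof -
  obtain z where z: "x * z = 1" "z * x = 1" using rinv_unit[OF assms] unfolding two_sided_unit_def by blast
  have "y = z" by (metis assms z(2) mult.assoc mult_1_left mult_1_right)
  thus ?thesis using z unfolding two_sided_unit_def by blast
qed

lemma nu_mult_left: "nu (x::'r) \<Longrightarrow> nu (x * y)"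
  unfolding two_sided_unit_def
  by (metis mult.assoc rinv_unit two_sided_unit_def)

lemma nu_mult_right: "nu (y::'r) \<Longrightarrow> nu (x * y)"
  unfolding two_sided_unit_def
  by (metis mult.assoc linv_unit two_sided_unit_def)

lemma nu_uminus: "nu (x::'r) \<Longrightarrow> nu (- x)"
  by (metis mult_minus1 nu_mult_right)

lemma nu_diff: "nu (x::'r) \<Longrightarrow> nu y \<Longrightarrow> nu (x - y)"
  using nu_add nu_uminus by (metis diff_conv_add_uminus)

lemma nu_sum: "(\<And>k. k \<in> S \<Longrightarrow> nu (f k :: 'r)) \<Longrightarrow> nu (sum f S)"
proof (induction S rule: infinite_finite_induct)
  case (insert x F)
  then show ?case using nu_add[of "f x" "sum f F"] by simp
qed auto

lemma unit_one_plus: "nu (j::'r) \<Longrightarrow> two_sided_unit (1 + j)"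
  using nu_add[of "1 + j" "- j"] nu_uminus by force

lemma idem_01: assumes ee: "(e::'r) * e = e" shows "e = 0 \<or> e = 1"
proof (cases "two_sided_unit e")
  case True then show ?thesis using unit_idem ee by blast
next
  case False
  have "(1 - e) * (1 - e) = 1 - e" using ee by (simp add: algebra_simps)
  moreover have "two_sided_unit (1 - e)" using nu_add[OF False, of "1 - e"] by auto
  ultimately have "1 - e = 1" using unit_idem by blast
  thus ?thesis by simp
qed

definition rinv :: "'r \<Rightarrow> 'r" where "rinv x = (SOME y. x * y = 1 \<and> y * x = 1)"

lemma rinv: "two_sided_unit x \<Longrightarrow> x * rinv x = 1 \<and> rinv x * x = 1"
  unfolding rinv_def two_sided_unit_def by (rule someI_ex)

end

lemma sum_split: "(\<Sum>k<(a::nat)+b. f k) = (\<Sum>k<a. f k) + (\<Sum>k<b. f (a+k))"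
  by (induction b) (simp_all add: add.assoc)

lemma sum_split': "(a::nat) \<le> n \<Longrightarrow> (\<Sum>k<n. f k) = (\<Sum>k<a. f k) + (\<Sum>k<n-a. f (a+k))"
  using sum_split[of f a "n-a"] by (simp add: le_add_diff_inverse)

lemma if01_mult[simp]: "(if P then 1 else 0) * (x::'r::semiring_1) = (if P then x else 0)" by simp
lemma mult_if01[simp]: "(x::'r::semiring_1) * (if P then 1 else 0) = (if P then x else 0)" by simp


section \<open>Ring matrices\<close>

definition mm :: "nat \<Rightarrow> (nat \<Rightarrow> nat \<Rightarrow> 'r::semiring_0) \<Rightarrow> (nat \<Rightarrow> nat \<Rightarrow> 'r) \<Rightarrow> nat \<Rightarrow> nat \<Rightarrow> 'r" where
  "mm n M N = (\<lambda>i j. \<Sum>k<n. M i k * N k j)"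

definition mI :: "nat \<Rightarrow> nat \<Rightarrow> 'r::{zero,one}" where
  "mI = (\<lambda>i j. if i = j then 1 else 0)"

definition eqm :: "nat \<Rightarrow> nat \<Rightarrow> (nat \<Rightarrow> nat \<Rightarrow> 'r) \<Rightarrow> (nat \<Rightarrow> nat \<Rightarrow> 'r) \<Rightarrow> bool" where
  "eqm m n M N \<longleftrightarrow> (\<forall>i<m. \<forall>j<n. M i j = N i j)"

definition invp :: "nat \<Rightarrow> (nat \<Rightarrow> nat \<Rightarrow> 'r::semiring_1) \<Rightarrow> (nat \<Rightarrow> nat \<Rightarrow> 'r) \<Rightarrow> bool" where
  "invp n P P' \<longleftrightarrow> eqm n n (mm n P P') mI \<and> eqm n n (mm n P' P) mI"

lemma mm_assoc: "mm n (mm m A B) C = mm m A (mm n B C)"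
  unfolding mm_def
  by (auto simp: sum_distrib_left sum_distrib_right mult.assoc intro!: ext sum.swap)

lemma mm_I_left: "i < m \<Longrightarrow> mm m mI M i j = (M i j :: 'r::semiring_1)"
  unfolding mm_def mI_def by simp

lemma mm_I_right: "j < n \<Longrightarrow> mm n M mI i j = (M i j :: 'r::semiring_1)"
  unfolding mm_def mI_def by simp

lemma eqm_refl[simp]: "eqm m n M M" unfolding eqm_def by simp
lemma eqm_sym: "eqm m n M N \<Longrightarrow> eqm m n N M" unfolding eqm_def by simp
lemma eqm_trans: "eqm m n M N \<Longrightarrow> eqm m n N K \<Longrightarrow> eqm m n M K" unfolding eqm_def by simp

lemma mm_cong: "eqm m k A A' \<Longrightarrow> eqm k n B B' \<Longrightarrow> eqm m n (mm k A B) (mm k A' B')"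
  unfolding eqm_def mm_def by simp

lemma mm_cong_pt: "(\<And>k. k < n \<Longrightarrow> A i k = A' i k) \<Longrightarrow> (\<And>k. k < n \<Longrightarrow> B k j = B' k j)
   \<Longrightarrow> mm n A B i j = mm n A' B' i j"
  unfolding mm_def by simp

lemma eqm_I_left: "eqm m n (mm m mI M) (M::_\<Rightarrow>_\<Rightarrow>'r::semiring_1)"
  unfolding eqm_def by (simp add: mm_I_left)
lemma eqm_I_right: "eqm m n (mm n M mI) (M::_\<Rightarrow>_\<Rightarrow>'r::semiring_1)"
  unfolding eqm_def by (simp add: mm_I_right)

lemma mm_add_left: "mm n (\<lambda>i j. A i j + B i j) C = (\<lambda>i j. mm n A C i j + mm n B C i j)"
  unfolding mm_def by (simp add: distrib_right sum.distrib)
lemma mm_add_right: "mm n A (\<lambda>i j. B i j + C i j) = (\<lambda>i j. mm n A B i j + mm n A C i j)"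
  unfolding mm_def by (simp add: distrib_left sum.distrib)
lemma mm_diff_left: "mm n (\<lambda>i j. A i j - B i j) C = (\<lambda>i j. mm n A C i j - mm n B C i j :: 'r::ring)"
  unfolding mm_def by (simp add: left_diff_distrib sum_subtractf)
lemma mm_diff_right: "mm n A (\<lambda>i j. B i j - C i j) = (\<lambda>i j. mm n A B i j - mm n A C i j :: 'r::ring)"
  unfolding mm_def by (simp add: right_diff_distrib sum_subtractf)

lemma invp_sym: "invp n P P' \<Longrightarrow> invp n P' P" unfolding invp_def by simp

lemma invp_I: "invp n mI (mI :: _ \<Rightarrow> _ \<Rightarrow> 'r::semiring_1)"
  unfolding invp_def eqm_def by (simp add: mm_I_left)

lemma invp_mm: assumes "invp n P P'" "invp n Q Q'"
  shows "invp n (mm n P Q) (mm n Q' (P'::_\<Rightarrow>_\<Rightarrow>'r::semiring_1))"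
proof -
  have 1: "eqm n n (mm n (mm n P Q) (mm n Q' P')) mI"
  proof -
    have "mm n (mm n P Q) (mm n Q' P') = mm n P (mm n (mm n Q Q') P')" by (simp add: mm_assoc)
    moreover have "eqm n n (mm n P (mm n (mm n Q Q') P')) (mm n P (mm n mI P'))"
      using assms unfolding invp_def by (intro mm_cong mm_cong eqm_refl) auto
    moreover have "eqm n n (mm n P (mm n mI P')) (mm n P P')"
      by (intro mm_cong eqm_refl eqm_I_left)
    ultimately show ?thesis using assms unfolding invp_def by (metis eqm_trans)
  qed
  have 2: "eqm n n (mm n (mm n Q' P') (mm n P Q)) mI"
  proof -
    have "mm n (mm n Q' P') (mm n P Q) = mm n Q' (mm n (mm n P' P) Q)" by (simp add: mm_assoc)
    moreover have "eqm n n (mm n Q' (mm n (mm n P' P) Q)) (mm n Q' (mm n mI Q))"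
      using assms unfolding invp_def by (intro mm_cong mm_cong eqm_refl) auto
    moreover have "eqm n n (mm n Q' (mm n mI Q)) (mm n Q' Q)"
      by (intro mm_cong eqm_refl eqm_I_left)
    ultimately show ?thesis using assms unfolding invp_def by (metis eqm_trans)
  qed
  show ?thesis using 1 2 unfolding invp_def by simp
qed

definition emb :: "(nat \<Rightarrow> nat \<Rightarrow> 'r::{zero,one}) \<Rightarrow> nat \<Rightarrow> nat \<Rightarrow> 'r" where
  "emb A = (\<lambda>i j. if i = 0 then (if j = 0 then 1 else 0) else if j = 0 then 0 else A (i - 1) (j - 1))"

lemma mm_emb: "mm (Suc n) (emb A) (emb B) = emb (mm n A (B::_\<Rightarrow>_\<Rightarrow>'r::semiring_1))"
  unfolding mm_def by (rule ext, rule ext, subst sum.lessThan_Suc_shift) (simp add: emb_def)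

lemma eqm_emb: "eqm m n A B \<Longrightarrow> eqm (Suc m) (Suc n) (emb A) (emb B)"
  unfolding eqm_def emb_def by auto

lemma emb_I: "emb mI = (mI :: _ \<Rightarrow> _ \<Rightarrow> 'r::{zero,one})"
  unfolding emb_def mI_def by (auto intro!: ext)

lemma invp_emb: "invp n P P' \<Longrightarrow> invp (Suc n) (emb P) (emb (P'::_\<Rightarrow>_\<Rightarrow>'r::semiring_1))"
  unfolding invp_def by (metis mm_emb eqm_emb emb_I)

definition tr :: "nat \<Rightarrow> nat \<Rightarrow> nat \<Rightarrow> nat" where
  "tr a b i = (if i = a then b else if i = b then a else i)"

lemma tr_tr[simp]: "tr a b (tr a b i) = i" unfolding tr_def by auto
lemma tr_lt: "a < n \<Longrightarrow> b < n \<Longrightarrow> i < n \<Longrightarrow> tr a b i < n" unfolding tr_def by auto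
lemma tr_eq_iff: "(j = tr a b k) = (k = tr a b j)" unfolding tr_def by auto

definition Sw :: "nat \<Rightarrow> nat \<Rightarrow> nat \<Rightarrow> nat \<Rightarrow> 'r::{zero,one}" where
  "Sw a b = (\<lambda>i k. if k = tr a b i then 1 else 0)"

lemma Sw_left: "a < m \<Longrightarrow> b < m \<Longrightarrow> i < m \<Longrightarrow> mm m (Sw a b) M i j = (M (tr a b i) j :: 'r::semiring_1)"
  unfolding mm_def Sw_def by (simp add: tr_lt)

lemma Sw_right: "a < n \<Longrightarrow> b < n \<Longrightarrow> j < n \<Longrightarrow> mm n M (Sw a b) i j = (M i (tr a b j) :: 'r::semiring_1)"
proof -
  assume as: "a < n" "b < n" "j < n"
  have "mm n M (Sw a b) i j = (\<Sum>k<n. M i k * (if k = tr a b j then 1 else 0))"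
    unfolding mm_def Sw_def by (intro sum.cong refl) (metis tr_eq_iff)
  also have "\<dots> = M i (tr a b j)" using as by (simp add: tr_lt)
  finally show ?thesis .
qed

lemma invp_Sw: "a < n \<Longrightarrow> b < n \<Longrightarrow> invp n (Sw a b) (Sw a b :: _ \<Rightarrow> _ \<Rightarrow> 'r::semiring_1)"
  unfolding invp_def eqm_def by (simp add: Sw_left tr_lt) (simp add: Sw_def mI_def)

context lring begin

lemma GE:
  fixes M :: "nat \<Rightarrow> nat \<Rightarrow> 'r"
  shows "\<exists>k P P' Q Q'. k \<le> m \<and> k \<le> n \<and> invp m P P' \<and> invp n Q Q' \<and>
    (\<forall>i<m. \<forall>j<n. (i < k \<or> j < k \<longrightarrow> mm n (mm m P M) Q i j = mI i j) \<and>
                   (k \<le> i \<and> k \<le> j \<longrightarrow> nu (mm n (mm m P M) Q i j)))"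
proof (induction m arbitrary: n M)
  case 0
  show ?case
    by (rule exI[of _ 0], rule exI[of _ mI], rule exI[of _ mI], rule exI[of _ mI], rule exI[of _ mI])
       (simp add: invp_I)
next
  case (Suc m)
  show ?case
  proof (cases "\<forall>i<Suc m. \<forall>j<n. nu (M i j)")
    case True
    show ?thesis
      by (rule exI[of _ 0], rule exI[of _ mI], rule exI[of _ mI], rule exI[of _ mI], rule exI[of _ mI])
         (simp add: invp_I mm_I_left mm_I_right True)
  next
    case False
    then obtain i0 j0 where ij0: "i0 < Suc m" "j0 < n" "two_sided_unit (M i0 j0)" by blast
    then obtain n' where n: "n = Suc n'" by (cases n) auto
    define S1 :: "nat \<Rightarrow> nat \<Rightarrow> 'r" where "S1 = Sw 0 i0"
    define S2 :: "nat \<Rightarrow> nat \<Rightarrow> 'r" where "S2 = Sw 0 j0"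
    define M1 where "M1 = mm n (mm (Suc m) S1 M) S2"
    have M1: "M1 i j = M (tr 0 i0 i) (tr 0 j0 j)" if "i < Suc m" "j < n" for i j
    proof -
      have "M1 i j = mm (Suc m) S1 M i (tr 0 j0 j)"
        unfolding M1_def S2_def using that ij0 n by (subst Sw_right) auto
      also have "\<dots> = M (tr 0 i0 i) (tr 0 j0 j)"
        unfolding S1_def using that ij0 by (subst Sw_left) auto
      finally show ?thesis .
    qed
    define u where "u = M1 0 0"
    have uu: "two_sided_unit u" unfolding u_def using M1[of 0 0] ij0 n by (simp add: tr_def)
    define w where "w = rinv u"
    have wu: "w * u = 1" "u * w = 1" using rinv[OF uu] unfolding w_def by auto
    define L :: "nat \<Rightarrow> nat \<Rightarrow> 'r" where "L = (\<lambda>i j. if i = 0 then (if j = 0 then w else 0)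
        else if j = 0 then - (M1 i 0 * w) else mI i j)"
    define L' :: "nat \<Rightarrow> nat \<Rightarrow> 'r" where "L' = (\<lambda>i j. if i = 0 then (if j = 0 then u else 0)
        else if j = 0 then M1 i 0 else mI i j)"
    define Rr :: "nat \<Rightarrow> nat \<Rightarrow> 'r" where "Rr = (\<lambda>i j. if i = 0 then (if j = 0 then 1 else - (w * M1 0 j))
        else mI i j)"
    define Rr' :: "nat \<Rightarrow> nat \<Rightarrow> 'r" where "Rr' = (\<lambda>i j. if i = 0 then (if j = 0 then 1 else w * M1 0 j)
        else mI i j)"
    define M' where "M' = (\<lambda>i j. M1 (Suc i) (Suc j) - M1 (Suc i) 0 * w * M1 0 (Suc j))"
    have invL: "invp (Suc m) L L'"
    proof -
      have a: "mm (Suc m) L L' i j = mI i j" if "i < Suc m" "j < Suc m" for i j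
        unfolding mm_def
        apply (subst sum.lessThan_Suc_shift)
        using that wu by (cases i; cases j) (simp_all add: L_def L'_def mI_def mult.assoc)
      have b: "mm (Suc m) L' L i j = mI i j" if "i < Suc m" "j < Suc m" for i j
        unfolding mm_def
        apply (subst sum.lessThan_Suc_shift)
        using that wu by (cases i; cases j) (simp_all add: L_def L'_def mI_def mult.assoc sum_negf)
      show ?thesis unfolding invp_def eqm_def using a b by auto
    qed
    have invR: "invp n Rr Rr'"
    proof -
      have a: "mm n Rr Rr' i j = mI i j" if "i < n" "j < n" for i j
        unfolding mm_def n
        apply (subst sum.lessThan_Suc_shift)
        using that wu n by (cases i; cases j) (simp_all add: Rr_def Rr'_def mI_def)
      have b: "mm n Rr' Rr i j = mI i j" if "i < n" "j < n" for i j
        unfolding mm_def n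
        apply (subst sum.lessThan_Suc_shift)
        using that wu n by (cases i; cases j) (simp_all add: Rr_def Rr'_def mI_def)
      show ?thesis unfolding invp_def eqm_def using a b by auto
    qed
    define LM where "LM = mm (Suc m) L M1"
    have LM0: "LM 0 j = w * M1 0 j" for j
      unfolding LM_def mm_def by (subst sum.lessThan_Suc_shift) (simp add: L_def mI_def)
    have LMS: "LM (Suc i) j = M1 (Suc i) j - M1 (Suc i) 0 * w * M1 0 j" if "i < m" for i j
      unfolding LM_def mm_def using that by (subst sum.lessThan_Suc_shift) (simp add: L_def mI_def)
    have M2: "eqm (Suc m) n (mm n LM Rr) (emb M')"
    proof -
      have "mm n LM Rr i j = emb M' i j" if "i < Suc m" "j < n" for i j
        unfolding mm_def n
        apply (subst sum.lessThan_Suc_shift)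
        using that wu n
        apply (cases i; cases j)
           apply (simp_all add: LM0 LMS Rr_def mI_def emb_def M'_def u_def mult.assoc)
        done
      thus ?thesis unfolding eqm_def by auto
    qed
    obtain k' P1 P1' Q1 Q1' where IH: "k' \<le> m" "k' \<le> n'" "invp m P1 P1'" "invp n' Q1 Q1'"
      "\<forall>i<m. \<forall>j<n'. (i < k' \<or> j < k' \<longrightarrow> mm n' (mm m P1 M') Q1 i j = mI i j) \<and>
                   (k' \<le> i \<and> k' \<le> j \<longrightarrow> nu (mm n' (mm m P1 M') Q1 i j))"
      using Suc.IH[of n' M'] by blast
    define P where "P = mm (Suc m) (emb P1) (mm (Suc m) L S1)"
    define P' where "P' = mm (Suc m) (mm (Suc m) S1 L') (emb P1')"
    define Q where "Q = mm n (mm n S2 Rr) (emb Q1)"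
    define Q' where "Q' = mm n (emb Q1') (mm n Rr' S2)"
    have iS1: "invp (Suc m) S1 S1" unfolding S1_def using ij0 by (intro invp_Sw) auto
    have iS2: "invp n S2 S2" unfolding S2_def using ij0 n by (intro invp_Sw) auto
    have iP: "invp (Suc m) P P'" unfolding P_def P'_def
      by (intro invp_mm invp_emb IH invL iS1)
    have iR': "invp (Suc n') Rr Rr'" "invp (Suc n') S2 S2" using invR iS2 n by auto
    have iQ: "invp n Q Q'" unfolding Q_def Q'_def n
      by (intro invp_mm invp_emb IH iR')
    define X where "X = mm n' (mm m P1 M') Q1"
    have RX: "eqm (Suc m) n (mm n (mm (Suc m) P M) Q) (emb X)"
    proof -
      have "mm n (mm (Suc m) P M) Q = mm n (mm (Suc m) (emb P1) (mm n LM Rr)) (emb Q1)"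
        unfolding P_def Q_def LM_def M1_def by (simp only: mm_assoc)
      moreover have "eqm (Suc m) n (mm n (mm (Suc m) (emb P1) (mm n LM Rr)) (emb Q1))
          (mm n (mm (Suc m) (emb P1) (emb M')) (emb Q1))"
        by (intro mm_cong eqm_refl M2)
      moreover have "mm n (mm (Suc m) (emb P1) (emb M')) (emb Q1) = emb X"
        unfolding X_def n by (simp add: mm_emb)
      ultimately show ?thesis by simp
    qed
    show ?thesis
    proof (intro exI conjI)
      show "Suc k' \<le> Suc m" "Suc k' \<le> n" using IH n by auto
      show "invp (Suc m) P P'" by (rule iP)
      show "invp n Q Q'" by (rule iQ)
      show "\<forall>i<Suc m. \<forall>j<n. (i < Suc k' \<or> j < Suc k' \<longrightarrow> mm n (mm (Suc m) P M) Q i j = mI i j) \<and>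
          (Suc k' \<le> i \<and> Suc k' \<le> j \<longrightarrow> nu (mm n (mm (Suc m) P M) Q i j))"
      proof (intro allI impI)
        fix i j assume ij: "i < Suc m" "j < n"
        have e: "mm n (mm (Suc m) P M) Q i j = emb X i j" using RX ij unfolding eqm_def by auto
        show "(i < Suc k' \<or> j < Suc k' \<longrightarrow> mm n (mm (Suc m) P M) Q i j = mI i j) \<and>
          (Suc k' \<le> i \<and> Suc k' \<le> j \<longrightarrow> nu (mm n (mm (Suc m) P M) Q i j))"
        proof (cases "i = 0 \<or> j = 0")
          case True
          then show ?thesis unfolding e by (auto simp: emb_def mI_def)
        next
          case False
          then obtain i' j' where ij': "i = Suc i'" "j = Suc j'" by (metis not0_implies_Suc)
          have "i' < m" "j' < n'" using ij ij' n by auto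
          then show ?thesis unfolding e using IH(5) ij' unfolding X_def
            by (auto simp: emb_def mI_def)
        qed
      qed
    qed
  qed
qed

end

context lring begin

lemma J_row: "(\<And>k. k < n \<Longrightarrow> nu (M i k :: 'r)) \<Longrightarrow> nu (mm n M N i j)"
  unfolding mm_def by (intro nu_sum nu_mult_left) auto

lemma J_col: "(\<And>k. k < n \<Longrightarrow> nu (N k j :: 'r)) \<Longrightarrow> nu (mm n M N i j)"
  unfolding mm_def by (intro nu_sum nu_mult_right) auto

lemma invp_cong: "eqm n n Q Q2 \<Longrightarrow> invp n Q2 W \<Longrightarrow> invp n Q (W :: _ \<Rightarrow> _ \<Rightarrow> 'r)"
  unfolding invp_def by (meson eqm_trans mm_cong eqm_refl)

lemma row_unit_contra:
  assumes "invp n A (B :: _ \<Rightarrow> _ \<Rightarrow> 'r)" "i < n" "\<And>k. k < n \<Longrightarrow> nu (A i k)"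
  shows False
proof -
  have "mm n A B i i = 1" using assms(1,2) unfolding invp_def eqm_def mI_def by auto
  moreover have "nu (mm n A B i i)" using assms(3) by (rule J_row)
  ultimately show False by simp
qed

lemma near_id_inv:
  assumes "\<And>i j. i < n \<Longrightarrow> j < n \<Longrightarrow> nu (Q i j - mI i j :: 'r)"
  shows "\<exists>W. invp n Q W"
proof -
  obtain k P P' R R' where G: "k \<le> n" "invp n P P'" "invp n R R'"
    "\<forall>i<n. \<forall>j<n. (i < k \<or> j < k \<longrightarrow> mm n (mm n P Q) R i j = mI i j) \<and>
                   (k \<le> i \<and> k \<le> j \<longrightarrow> nu (mm n (mm n P Q) R i j))"
    using GE[of n n Q] by blast
  define N where "N = (\<lambda>i j. Q i j - mI i j)"
  have QN: "Q = (\<lambda>i j. mI i j + N i j)" unfolding N_def by simp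
  have kn: "k = n"
  proof (rule ccontr)
    assume "k \<noteq> n"
    with G(1) have k: "k < n" "n - 1 < n" "k \<le> n - 1" by auto
    have rowJ: "nu (mm n (mm n P mI) R (n - 1) j)" if "j < n" for j
    proof -
      have "mm n (mm n P Q) R (n-1) j = mm n (mm n P mI) R (n-1) j + mm n (mm n P N) R (n-1) j"
        unfolding QN by (simp add: mm_add_right mm_add_left)
      moreover have "nu (mm n (mm n P Q) R (n-1) j)"
      proof (cases "j < k")
        case True
        then have "mm n (mm n P Q) R (n-1) j = mI (n-1) j" using G(4) k that by auto
        then show ?thesis using True k by (simp add: mI_def)
      next
        case False then show ?thesis using G(4) k that by auto
      qed
      moreover have "nu (mm n (mm n P N) R (n-1) j)"
        by (intro J_row J_col) (use assms in \<open>auto simp: N_def\<close>)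
      ultimately show ?thesis by (metis add_diff_cancel_right' nu_diff)
    qed
    have "invp n (mm n (mm n P mI) R) (mm n R' P')"
      using invp_mm[OF G(2) G(3)] by (rule invp_cong[rotated]) (intro mm_cong eqm_refl eqm_I_right)
    from row_unit_contra[OF this k(2) rowJ] show False .
  qed
  have PQR: "eqm n n (mm n (mm n P Q) R) mI" using G(4) kn unfolding eqm_def by auto
  have "eqm n n Q (mm n P' R')"
  proof -
    have "eqm n n Q (mm n (mm n mI Q) mI)" by (meson eqm_I_left eqm_I_right eqm_sym eqm_trans mm_cong eqm_refl)
    moreover have "eqm n n (mm n (mm n mI Q) mI) (mm n (mm n (mm n P' P) Q) (mm n R R'))"
      using G(2,3) unfolding invp_def by (intro mm_cong eqm_refl) (auto simp: eqm_sym)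
    moreover have "mm n (mm n (mm n P' P) Q) (mm n R R') = mm n P' (mm n (mm n (mm n P Q) R) R')"
      by (simp only: mm_assoc)
    moreover have "eqm n n (mm n P' (mm n (mm n (mm n P Q) R) R')) (mm n P' (mm n mI R'))"
      by (intro mm_cong eqm_refl PQR)
    moreover have "eqm n n (mm n P' (mm n mI R')) (mm n P' R')"
      by (intro mm_cong eqm_refl eqm_I_left)
    ultimately show ?thesis by (metis eqm_trans)
  qed
  moreover have "invp n (mm n P' R') (mm n R P)"
    using invp_mm[OF invp_sym[OF G(2)] invp_sym[OF G(3)]] .
  ultimately show ?thesis using invp_cong by blast
qed

lemma idem_J_zero:
  assumes J: "\<And>i j. i < n \<Longrightarrow> j < n \<Longrightarrow> nu (E i j :: 'r)"
    and idem: "eqm n n (mm n E E) E"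
  shows "eqm n n E (\<lambda>i j. 0)"
proof -
  define F where "F = (\<lambda>i j. mI i j - E i j)"
  have "\<exists>W. invp n F W"
    using J by (intro near_id_inv) (simp add: F_def nu_uminus)
  then obtain W where W: "invp n F W" by blast
  have EF: "eqm n n (mm n E F) (\<lambda>i j. 0)"
    using idem unfolding F_def eqm_def by (simp add: mm_diff_right mm_I_right)
  have "eqm n n E (mm n (mm n E F) W)"
  proof -
    have "eqm n n E (mm n E mI)" by (simp add: eqm_I_right eqm_sym)
    moreover have "eqm n n (mm n E mI) (mm n E (mm n F W))"
      using W unfolding invp_def by (intro mm_cong eqm_refl) (auto simp: eqm_sym)
    ultimately show ?thesis by (simp add: mm_assoc eqm_trans)
  qed
  moreover have "eqm n n (mm n (mm n E F) W) (mm n (\<lambda>i j. 0) W)"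
    by (intro mm_cong EF eqm_refl)
  moreover have "mm n (\<lambda>i j. 0) W = (\<lambda>i j. 0)" unfolding mm_def by simp
  ultimately show ?thesis by (metis eqm_trans)
qed

end

locale bictx = A: lring TA + B: lring TB
  for TA :: "'a::ring_1 itself" and TB :: "'b::ring_1 itself" +
  fixes la :: "'a \<Rightarrow> 'x::ab_group_add \<Rightarrow> 'x" and ra :: "'x \<Rightarrow> 'b \<Rightarrow> 'x"
  assumes bm: "bimod la ra"
begin

lemma la_mult: "la (a * a') x = la a (la a' x)" using bm unfolding bimod_def by metis
lemma la_one[simp]: "la 1 x = x" using bm unfolding bimod_def by metis
lemma la_add_l: "la (a + a') x = la a x + la a' x" using bm unfolding bimod_def by metis
lemma la_add_r: "la a (x + y) = la a x + la a y" using bm unfolding bimod_def by metis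
lemma ra_mult: "ra x (b * b') = ra (ra x b) b'" using bm unfolding bimod_def by metis
lemma ra_one[simp]: "ra x 1 = x" using bm unfolding bimod_def by metis
lemma ra_add_r: "ra x (b + b') = ra x b + ra x b'" using bm unfolding bimod_def by metis
lemma ra_add_l: "ra (x + y) b = ra x b + ra y b" using bm unfolding bimod_def by metis
lemma la_ra: "la a (ra x b) = ra (la a x) b" using bm unfolding bimod_def by metis

lemma la_zero_l[simp]: "la 0 x = 0" using la_add_l[of 0 0 x] by simp
lemma la_zero_r[simp]: "la a 0 = 0" using la_add_r[of a 0 0] by simp
lemma ra_zero_l[simp]: "ra 0 b = 0" using ra_add_l[of 0 0 b] by simp
lemma ra_zero_r[simp]: "ra x 0 = 0" using ra_add_r[of x 0 0] by simp
lemma la_neg_l: "la (- a) x = - la a x"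
  by (metis la_add_l[of a "-a" x] add.right_inverse add_eq_0_iff la_zero_l la_zero_r ra_zero_l ra_zero_r)
lemma la_neg_r: "la a (- x) = - la a x"
  by (metis la_add_r[of a x "-x"] add.right_inverse add_eq_0_iff la_zero_l la_zero_r ra_zero_l ra_zero_r)
lemma ra_neg_l: "ra (- x) b = - ra x b"
  by (metis ra_add_l[of x "-x" b] add.right_inverse add_eq_0_iff la_zero_l la_zero_r ra_zero_l ra_zero_r)
lemma ra_neg_r: "ra x (- b) = - ra x b"
  by (metis ra_add_r[of x b "-b"] add.right_inverse add_eq_0_iff la_zero_l la_zero_r ra_zero_l ra_zero_r)
lemma la_diff_l: "la (a - a') x = la a x - la a' x" by (simp only: diff_conv_add_uminus la_add_l la_neg_l)
lemma la_diff_r: "la a (x - y) = la a x - la a y" by (simp only: diff_conv_add_uminus la_add_r la_neg_r)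
lemma ra_diff_l: "ra (x - y) b = ra x b - ra y b" by (simp only: diff_conv_add_uminus ra_add_l ra_neg_l)
lemma ra_diff_r: "ra x (b - b') = ra x b - ra x b'" by (simp only: diff_conv_add_uminus ra_add_r ra_neg_r)

lemma la_sum_l: "la (sum f S) x = (\<Sum>k\<in>S. la (f k) x)"
  using sum_comp_morphism[of "\<lambda>a. la a x" f S] by (simp add: la_add_l o_def)
lemma la_sum_r: "la a (sum f S) = (\<Sum>k\<in>S. la a (f k))"
  using sum_comp_morphism[of "\<lambda>x. la a x" f S] by (simp add: la_add_r o_def)
lemma ra_sum_l: "ra (sum f S) b = (\<Sum>k\<in>S. ra (f k) b)"
  using sum_comp_morphism[of "\<lambda>x. ra x b" f S] by (simp add: ra_add_l o_def)
lemma ra_sum_r: "ra x (sum f S) = (\<Sum>k\<in>S. ra x (f k))"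
  using sum_comp_morphism[of "\<lambda>b. ra x b" f S] by (simp add: ra_add_r o_def)

lemma la_if01[simp]: "la (if P then 1 else 0) x = (if P then x else 0)" by simp
lemma ra_if01[simp]: "ra x (if P then 1 else 0) = (if P then x else 0)" by simp

lemmas lra_simps = la_add_l la_add_r ra_add_l ra_add_r la_sum_l la_sum_r ra_sum_l ra_sum_r
  la_mult ra_mult la_ra la_diff_l la_diff_r ra_diff_l ra_diff_r la_neg_l la_neg_r ra_neg_l ra_neg_r

abbreviation comp where "comp \<equiv> bcomp la ra"

lemma comp_simps:
  "mA (comp p q N M) i j = (\<Sum>k<p. mA N i k * mA M k j)"
  "mX (comp p q N M) i j = (\<Sum>k<p. la (mA N i k) (mX M k j)) + (\<Sum>k<q. ra (mX N i k) (mB M k j))"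
  "mB (comp p q N M) i j = (\<Sum>k<q. mB N i k * mB M k j)"
  unfolding bcomp_def by simp_all

lemma bm_eqI: "mA M = mA N \<Longrightarrow> mX M = mX N \<Longrightarrow> mB M = mB N \<Longrightarrow> (M::('a,'x,'b) bm) = N"
  by (cases M, cases N) simp

lemma comp_assoc: "comp pm qm (comp pn qn N M) L = comp pn qn N (comp pm qm M L)"
proof (rule bm_eqI; rule ext; rule ext)
  fix i j
  show "mA (comp pm qm (comp pn qn N M) L) i j = mA (comp pn qn N (comp pm qm M L)) i j"
    unfolding comp_simps by (simp add: sum_distrib_left sum_distrib_right mult.assoc) (rule sum.swap)
  show "mB (comp pm qm (comp pn qn N M) L) i j = mB (comp pn qn N (comp pm qm M L)) i j"
    unfolding comp_simps by (simp add: sum_distrib_left sum_distrib_right mult.assoc) (rule sum.swap)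
  have 1: "(\<Sum>k<pm. \<Sum>l<pn. la (mA N i l) (la (mA M l k) (mX L k j))) =
           (\<Sum>l<pn. \<Sum>k<pm. la (mA N i l) (la (mA M l k) (mX L k j)))" by (rule sum.swap)
  have 2: "(\<Sum>k<qm. \<Sum>l<pn. ra (la (mA N i l) (mX M l k)) (mB L k j)) =
           (\<Sum>l<pn. \<Sum>k<qm. ra (la (mA N i l) (mX M l k)) (mB L k j))" by (rule sum.swap)
  have 3: "(\<Sum>k<qm. \<Sum>l<qn. ra (ra (mX N i l) (mB M l k)) (mB L k j)) =
           (\<Sum>l<qn. \<Sum>k<qm. ra (ra (mX N i l) (mB M l k)) (mB L k j))" by (rule sum.swap)
  show "mX (comp pm qm (comp pn qn N M) L) i j = mX (comp pn qn N (comp pm qm M L)) i j"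
    unfolding comp_simps by (simp add: lra_simps sum.distrib 1 2 3 add.assoc)
qed


lemma comp_badd_l: "comp p q (badd N N') M = badd (comp p q N M) (comp p q N' M)"
  by (rule bm_eqI; rule ext; rule ext) (simp_all add: comp_simps badd_def lra_simps distrib_right sum.distrib ac_simps)
lemma comp_badd_r: "comp p q N (badd M M') = badd (comp p q N M) (comp p q N M')"
  by (rule bm_eqI; rule ext; rule ext) (simp_all add: comp_simps badd_def lra_simps distrib_left sum.distrib ac_simps)
lemma comp_bsub_l: "comp p q (bsub N N') M = bsub (comp p q N M) (comp p q N' M)"
  by (rule bm_eqI; rule ext; rule ext) (simp_all add: comp_simps bsub_def lra_simps left_diff_distrib sum_subtractf)
lemma comp_bsub_r: "comp p q N (bsub M M') = bsub (comp p q N M) (comp p q N M')"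
  by (rule bm_eqI; rule ext; rule ext) (simp_all add: comp_simps bsub_def lra_simps right_diff_distrib sum_subtractf)
lemma comp_bzero_l[simp]: "comp p q bzero M = bzero"
  by (rule bm_eqI; rule ext; rule ext) (simp_all add: comp_simps bzero_def)
lemma comp_bzero_r[simp]: "comp p q N bzero = bzero"
  by (rule bm_eqI; rule ext; rule ext) (simp_all add: comp_simps bzero_def)

lemma beq_refl[simp]: "beq ps qs pt qt M M" unfolding beq_def by simp
lemma beq_sym: "beq ps qs pt qt M N \<Longrightarrow> beq ps qs pt qt N M" unfolding beq_def by simp
lemma beq_trans: "beq ps qs pt qt M N \<Longrightarrow> beq ps qs pt qt N K \<Longrightarrow> beq ps qs pt qt M K"
  unfolding beq_def by simp
lemma beq_badd: "beq ps qs pt qt M M' \<Longrightarrow> beq ps qs pt qt N N' \<Longrightarrow> beq ps qs pt qt (badd M N) (badd M' N')"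
  unfolding beq_def badd_def by simp
lemma beq_bsub: "beq ps qs pt qt M M' \<Longrightarrow> beq ps qs pt qt N N' \<Longrightarrow> beq ps qs pt qt (bsub M N) (bsub M' N')"
  unfolding beq_def bsub_def by simp

lemma comp_cong: "beq pm qm pt qt N N' \<Longrightarrow> beq ps qs pm qm M M' \<Longrightarrow>
   beq ps qs pt qt (comp pm qm N M) (comp pm qm N' M')"
  unfolding beq_def by (simp add: comp_simps)

lemma comp_bid_l: "beq ps qs pt qt (comp pt qt bid M) M"
  unfolding beq_def by (simp add: comp_simps bid_def)
lemma comp_bid_r: "beq ps qs pt qt (comp ps qs M bid) M"
  unfolding beq_def by (simp add: comp_simps bid_def)

lemma bsub_self: "bsub M M = bzero" unfolding bsub_def bzero_def by simp
lemma bsub_bzero: "bsub M bzero = M" unfolding bsub_def bzero_def by simp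
lemma badd_bzero: "badd M bzero = M" unfolding badd_def bzero_def by simp
lemma bzero_badd: "badd bzero M = M" unfolding badd_def bzero_def by simp

section \<open>Homotopy calculus\<close>

declare beq_trans[trans]

abbreviation chain where "chain \<equiv> chain_map la ra"
abbreviation nhtp where "nhtp \<equiv> nullhtp la ra"

lemma cong_l: "beq ps qs pm qm M M' \<Longrightarrow> beq ps qs pt qt (comp pm qm N M) (comp pm qm N M')"
  by (rule comp_cong[OF beq_refl])
lemma cong_r: "beq pm qm pt qt N N' \<Longrightarrow> beq ps qs pt qt (comp pm qm N M) (comp pm qm N' M)"
  by (rule comp_cong[OF _ beq_refl])

lemma chain_comp:
  assumes f: "chain T U f1 f0" and g: "chain U W g1 g0"
  shows "chain T W (comp (p1 U) (q1 U) g1 f1) (comp (p0 U) (q0 U) g0 f0)"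
proof -
  have f': "beq (p1 T) (q1 T) (p0 U) (q0 U) (comp (p0 T) (q0 T) f0 (dd T)) (comp (p1 U) (q1 U) (dd U) f1)"
    using f unfolding chain_map_def .
  have g': "beq (p1 U) (q1 U) (p0 W) (q0 W) (comp (p0 U) (q0 U) g0 (dd U)) (comp (p1 W) (q1 W) (dd W) g1)"
    using g unfolding chain_map_def .
  have "comp (p0 T) (q0 T) (comp (p0 U) (q0 U) g0 f0) (dd T) = comp (p0 U) (q0 U) g0 (comp (p0 T) (q0 T) f0 (dd T))"
    by (rule comp_assoc)
  also have "beq (p1 T) (q1 T) (p0 W) (q0 W) \<dots> (comp (p0 U) (q0 U) g0 (comp (p1 U) (q1 U) (dd U) f1))"
    by (rule cong_l[OF f'])
  also have "comp (p0 U) (q0 U) g0 (comp (p1 U) (q1 U) (dd U) f1) = comp (p1 U) (q1 U) (comp (p0 U) (q0 U) g0 (dd U)) f1"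
    by (rule comp_assoc[symmetric])
  also have "beq (p1 T) (q1 T) (p0 W) (q0 W) \<dots> (comp (p1 U) (q1 U) (comp (p1 W) (q1 W) (dd W) g1) f1)"
    by (rule cong_r[OF g'])
  also have "comp (p1 U) (q1 U) (comp (p1 W) (q1 W) (dd W) g1) f1 = comp (p1 W) (q1 W) (dd W) (comp (p1 U) (q1 U) g1 f1)"
    by (rule comp_assoc)
  finally show ?thesis unfolding chain_map_def .
qed

lemma nhtpE:
  assumes "nhtp T U f1 f0"
  obtains h where "beq (p1 T) (q1 T) (p1 U) (q1 U) f1 (comp (p0 T) (q0 T) h (dd T))"
    "beq (p0 T) (q0 T) (p0 U) (q0 U) f0 (comp (p1 U) (q1 U) (dd U) h)"
  using assms unfolding nullhtp_def by blast

lemma nhtpI: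
  "beq (p1 T) (q1 T) (p1 U) (q1 U) f1 (comp (p0 T) (q0 T) h (dd T)) \<Longrightarrow>
   beq (p0 T) (q0 T) (p0 U) (q0 U) f0 (comp (p1 U) (q1 U) (dd U) h) \<Longrightarrow> nhtp T U f1 f0"
  unfolding nullhtp_def by blast

lemma nhtp_comp_l:
  assumes n: "nhtp T U f1 f0" and g: "chain U W g1 g0"
  shows "nhtp T W (comp (p1 U) (q1 U) g1 f1) (comp (p0 U) (q0 U) g0 f0)"
proof -
  obtain h where h: "beq (p1 T) (q1 T) (p1 U) (q1 U) f1 (comp (p0 T) (q0 T) h (dd T))"
    "beq (p0 T) (q0 T) (p0 U) (q0 U) f0 (comp (p1 U) (q1 U) (dd U) h)"
    using n by (rule nhtpE)
  have g': "beq (p1 U) (q1 U) (p0 W) (q0 W) (comp (p0 U) (q0 U) g0 (dd U)) (comp (p1 W) (q1 W) (dd W) g1)"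
    using g unfolding chain_map_def .
  have "beq (p1 T) (q1 T) (p1 W) (q1 W) (comp (p1 U) (q1 U) g1 f1) (comp (p1 U) (q1 U) g1 (comp (p0 T) (q0 T) h (dd T)))"
    by (rule cong_l[OF h(1)])
  also have "comp (p1 U) (q1 U) g1 (comp (p0 T) (q0 T) h (dd T)) = comp (p0 T) (q0 T) (comp (p1 U) (q1 U) g1 h) (dd T)"
    by (rule comp_assoc[symmetric])
  finally have 1: "beq (p1 T) (q1 T) (p1 W) (q1 W) (comp (p1 U) (q1 U) g1 f1) (comp (p0 T) (q0 T) (comp (p1 U) (q1 U) g1 h) (dd T))" .
  have "beq (p0 T) (q0 T) (p0 W) (q0 W) (comp (p0 U) (q0 U) g0 f0) (comp (p0 U) (q0 U) g0 (comp (p1 U) (q1 U) (dd U) h))"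
    by (rule cong_l[OF h(2)])
  also have "comp (p0 U) (q0 U) g0 (comp (p1 U) (q1 U) (dd U) h) = comp (p1 U) (q1 U) (comp (p0 U) (q0 U) g0 (dd U)) h"
    by (rule comp_assoc[symmetric])
  also have "beq (p0 T) (q0 T) (p0 W) (q0 W) \<dots> (comp (p1 U) (q1 U) (comp (p1 W) (q1 W) (dd W) g1) h)"
    by (rule cong_r[OF g'])
  also have "comp (p1 U) (q1 U) (comp (p1 W) (q1 W) (dd W) g1) h = comp (p1 W) (q1 W) (dd W) (comp (p1 U) (q1 U) g1 h)"
    by (rule comp_assoc)
  finally have 2: "beq (p0 T) (q0 T) (p0 W) (q0 W) (comp (p0 U) (q0 U) g0 f0) (comp (p1 W) (q1 W) (dd W) (comp (p1 U) (q1 U) g1 h))" .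
  show ?thesis using 1 2 by (rule nhtpI)
qed

lemma nhtp_comp_r:
  assumes n: "nhtp T U f1 f0" and e: "chain S T e1 e0"
  shows "nhtp S U (comp (p1 T) (q1 T) f1 e1) (comp (p0 T) (q0 T) f0 e0)"
proof -
  obtain h where h: "beq (p1 T) (q1 T) (p1 U) (q1 U) f1 (comp (p0 T) (q0 T) h (dd T))"
    "beq (p0 T) (q0 T) (p0 U) (q0 U) f0 (comp (p1 U) (q1 U) (dd U) h)"
    using n by (rule nhtpE)
  have e': "beq (p1 S) (q1 S) (p0 T) (q0 T) (comp (p1 T) (q1 T) (dd T) e1) (comp (p0 S) (q0 S) e0 (dd S))"
    using e unfolding chain_map_def by (rule beq_sym)
  have "beq (p1 S) (q1 S) (p1 U) (q1 U) (comp (p1 T) (q1 T) f1 e1) (comp (p1 T) (q1 T) (comp (p0 T) (q0 T) h (dd T)) e1)"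
    by (rule cong_r[OF h(1)])
  also have "comp (p1 T) (q1 T) (comp (p0 T) (q0 T) h (dd T)) e1 = comp (p0 T) (q0 T) h (comp (p1 T) (q1 T) (dd T) e1)"
    by (rule comp_assoc)
  also have "beq (p1 S) (q1 S) (p1 U) (q1 U) \<dots> (comp (p0 T) (q0 T) h (comp (p0 S) (q0 S) e0 (dd S)))"
    by (rule cong_l[OF e'])
  also have "comp (p0 T) (q0 T) h (comp (p0 S) (q0 S) e0 (dd S)) = comp (p0 S) (q0 S) (comp (p0 T) (q0 T) h e0) (dd S)"
    by (rule comp_assoc[symmetric])
  finally have 1: "beq (p1 S) (q1 S) (p1 U) (q1 U) (comp (p1 T) (q1 T) f1 e1) (comp (p0 S) (q0 S) (comp (p0 T) (q0 T) h e0) (dd S))" .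
  have "beq (p0 S) (q0 S) (p0 U) (q0 U) (comp (p0 T) (q0 T) f0 e0) (comp (p0 T) (q0 T) (comp (p1 U) (q1 U) (dd U) h) e0)"
    by (rule cong_r[OF h(2)])
  also have "comp (p0 T) (q0 T) (comp (p1 U) (q1 U) (dd U) h) e0 = comp (p1 U) (q1 U) (dd U) (comp (p0 T) (q0 T) h e0)"
    by (rule comp_assoc)
  finally have 2: "beq (p0 S) (q0 S) (p0 U) (q0 U) (comp (p0 T) (q0 T) f0 e0) (comp (p1 U) (q1 U) (dd U) (comp (p0 T) (q0 T) h e0))" .
  show ?thesis using 1 2 by (rule nhtpI)
qed

lemma nhtp_beq:
  assumes "nhtp T U f1 f0" "beq (p1 T) (q1 T) (p1 U) (q1 U) f1 g1" "beq (p0 T) (q0 T) (p0 U) (q0 U) f0 g0"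
  shows "nhtp T U g1 g0"
proof -
  obtain h where h: "beq (p1 T) (q1 T) (p1 U) (q1 U) f1 (comp (p0 T) (q0 T) h (dd T))"
    "beq (p0 T) (q0 T) (p0 U) (q0 U) f0 (comp (p1 U) (q1 U) (dd U) h)"
    using assms(1) by (rule nhtpE)
  show ?thesis
    by (rule nhtpI[of _ _ _ h]) (rule beq_trans[OF beq_sym[OF assms(2)] h(1)], rule beq_trans[OF beq_sym[OF assms(3)] h(2)])
qed

lemma nhtp_badd:
  assumes "nhtp T U f1 f0" "nhtp T U g1 g0"
  shows "nhtp T U (badd f1 g1) (badd f0 g0)"
proof -
  obtain h where h: "beq (p1 T) (q1 T) (p1 U) (q1 U) f1 (comp (p0 T) (q0 T) h (dd T))"
    "beq (p0 T) (q0 T) (p0 U) (q0 U) f0 (comp (p1 U) (q1 U) (dd U) h)"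
    using assms(1) by (rule nhtpE)
  obtain h' where h': "beq (p1 T) (q1 T) (p1 U) (q1 U) g1 (comp (p0 T) (q0 T) h' (dd T))"
    "beq (p0 T) (q0 T) (p0 U) (q0 U) g0 (comp (p1 U) (q1 U) (dd U) h')"
    using assms(2) by (rule nhtpE)
  show ?thesis
    by (rule nhtpI[of _ _ _ "badd h h'"]) (simp_all only: comp_badd_l comp_badd_r beq_badd h h')
qed

lemma nhtp_bsub:
  assumes "nhtp T U f1 f0" "nhtp T U g1 g0"
  shows "nhtp T U (bsub f1 g1) (bsub f0 g0)"
proof -
  obtain h where h: "beq (p1 T) (q1 T) (p1 U) (q1 U) f1 (comp (p0 T) (q0 T) h (dd T))"
    "beq (p0 T) (q0 T) (p0 U) (q0 U) f0 (comp (p1 U) (q1 U) (dd U) h)"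
    using assms(1) by (rule nhtpE)
  obtain h' where h': "beq (p1 T) (q1 T) (p1 U) (q1 U) g1 (comp (p0 T) (q0 T) h' (dd T))"
    "beq (p0 T) (q0 T) (p0 U) (q0 U) g0 (comp (p1 U) (q1 U) (dd U) h')"
    using assms(2) by (rule nhtpE)
  show ?thesis
    by (rule nhtpI[of _ _ _ "bsub h h'"]) (simp_all only: comp_bsub_l comp_bsub_r beq_bsub h h')
qed

lemma nhtp_zero: "nhtp T U bzero bzero"
  by (rule nhtpI[of _ _ _ bzero]) simp_all

lemma chain_bid: "chain T T bid bid"
  unfolding chain_map_def by (rule beq_trans[OF comp_bid_l beq_sym[OF comp_bid_r]])

lemma hiso_refl: "hiso la ra T T"
proof -
  have z: "nhtp T T (bsub bid bid) (bsub bid bid)" by (simp only: bsub_self nhtp_zero)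
  have "nhtp T T (bsub (comp (p1 T) (q1 T) bid bid) bid) (bsub (comp (p0 T) (q0 T) bid bid) bid)"
    by (rule nhtp_beq[OF z]) (rule beq_bsub[OF beq_sym[OF comp_bid_l] beq_refl])+
  then show ?thesis unfolding hiso_def using chain_bid by blast
qed

lemma hiso_sym: "hiso la ra T U \<Longrightarrow> hiso la ra U T"
  unfolding hiso_def by blast

end

context bictx begin

abbreviation c1 where "c1 T \<equiv> comp (p1 T) (q1 T)"
abbreviation c0 where "c0 T \<equiv> comp (p0 T) (q0 T)"
abbreviation beq1 where "beq1 T U \<equiv> beq (p1 T) (q1 T) (p1 U) (q1 U)"
abbreviation beq0 where "beq0 T U \<equiv> beq (p0 T) (q0 T) (p0 U) (q0 U)"
abbreviation Z0 :: "('a,'x,'b) cx" where "Z0 \<equiv> zcx"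
abbreviation beqd where "beqd T U \<equiv> beq (p1 T) (q1 T) (p0 U) (q0 U)"

lemma bm_eta[simp]: "\<lparr>mA = mA M, mX = mX M, mB = mB M\<rparr> = M"
  by (cases M) simp

lemma bsub_split: "bsub A C = badd (bsub A B) (bsub B C)"
  unfolding bsub_def badd_def by simp

lemma badd_bsub_id: "M = badd (bsub M N) N"
  unfolding bsub_def badd_def by simp

lemma htp_sandwich:
  assumes X: "nhtp U U (bsub X1 bid) (bsub X0 bid)" and f: "chain T U f1 f0" and g: "chain U S g1 g0"
  shows "nhtp T S (bsub (c1 U g1 (c1 U X1 f1)) (c1 U g1 f1)) (bsub (c0 U g0 (c0 U X0 f0)) (c0 U g0 f0))"
proof -
  have "nhtp T S (c1 U g1 (c1 U (bsub X1 bid) f1)) (c0 U g0 (c0 U (bsub X0 bid) f0))"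
    by (rule nhtp_comp_l[OF nhtp_comp_r[OF X f] g])
  moreover have "beq1 T S (c1 U g1 (c1 U (bsub X1 bid) f1)) (bsub (c1 U g1 (c1 U X1 f1)) (c1 U g1 f1))"
    unfolding comp_bsub_l comp_bsub_r
    by (rule beq_bsub[OF beq_refl cong_l[OF comp_bid_l]])
  moreover have "beq0 T S (c0 U g0 (c0 U (bsub X0 bid) f0)) (bsub (c0 U g0 (c0 U X0 f0)) (c0 U g0 f0))"
    unfolding comp_bsub_l comp_bsub_r
    by (rule beq_bsub[OF beq_refl cong_l[OF comp_bid_l]])
  ultimately show ?thesis by (rule nhtp_beq)
qed

lemma hiso_trans:
  assumes "hiso la ra T U" "hiso la ra U W" shows "hiso la ra T W"
proof -
  obtain f1 f0 g1 g0 where A: "chain T U f1 f0" "chain U T g1 g0"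
    "nhtp T T (bsub (c1 U g1 f1) bid) (bsub (c0 U g0 f0) bid)"
    "nhtp U U (bsub (c1 T f1 g1) bid) (bsub (c0 T f0 g0) bid)"
    using assms(1) unfolding hiso_def by blast
  obtain f1' f0' g1' g0' where B: "chain U W f1' f0'" "chain W U g1' g0'"
    "nhtp U U (bsub (c1 W g1' f1') bid) (bsub (c0 W g0' f0') bid)"
    "nhtp W W (bsub (c1 U f1' g1') bid) (bsub (c0 U f0' g0') bid)"
    using assms(2) unfolding hiso_def by blast
  have C1: "chain T W (c1 U f1' f1) (c0 U f0' f0)" by (rule chain_comp[OF A(1) B(1)])
  have C2: "chain W T (c1 U g1 g1') (c0 U g0 g0')" by (rule chain_comp[OF B(2) A(2)])
  have e1: "c1 W (c1 U g1 g1') (c1 U f1' f1) = c1 U g1 (c1 U (c1 W g1' f1') f1)"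
    by (simp only: comp_assoc)
  have e0: "c0 W (c0 U g0 g0') (c0 U f0' f0) = c0 U g0 (c0 U (c0 W g0' f0') f0)"
    by (simp only: comp_assoc)
  have H1: "nhtp T T (bsub (c1 W (c1 U g1 g1') (c1 U f1' f1)) bid) (bsub (c0 W (c0 U g0 g0') (c0 U f0' f0)) bid)"
    unfolding e1 e0
    by (subst (1 2) bsub_split, rule nhtp_badd[OF htp_sandwich[OF B(3) A(1) A(2)] A(3)])
  have H2: "nhtp W W (bsub (c1 T (c1 U f1' f1) (c1 U g1 g1')) bid) (bsub (c0 T (c0 U f0' f0) (c0 U g0 g0')) bid)"
  proof -
    have x1: "c1 T (c1 U f1' f1) (c1 U g1 g1') = c1 U f1' (c1 U (c1 T f1 g1) g1')" by (simp only: comp_assoc)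
    have x0: "c0 T (c0 U f0' f0) (c0 U g0 g0') = c0 U f0' (c0 U (c0 T f0 g0) g0')" by (simp only: comp_assoc)
    show ?thesis unfolding x1 x0
      by (subst (1 2) bsub_split, rule nhtp_badd[OF htp_sandwich[OF A(4) B(2) B(1)] B(4)])
  qed
  show ?thesis unfolding hiso_def using C1 C2 H1 H2 by blast
qed

lemma hiso_honest:
  assumes ch: "chain T U F E"
    and i1: "beq1 T T (c1 U F' F) bid" "beq1 U U (c1 T F F') bid"
    and i0: "beq0 T T (c0 U E' E) bid" "beq0 U U (c0 T E E') bid"
  shows "hiso la ra T U"
proof -
  have ch': "beqd T U (c0 T E (dd T)) (c1 U (dd U) F)" using ch unfolding chain_map_def .
  have "beqd U T (c0 U E' (dd U)) (c0 U E' (c1 U (dd U) (c1 T F F')))"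
    by (rule cong_l, rule beq_trans[OF beq_sym[OF comp_bid_r]], rule cong_l[OF beq_sym[OF i1(2)]])
  also have "c0 U E' (c1 U (dd U) (c1 T F F')) = c1 T (c0 U E' (c1 U (dd U) F)) F'"
    by (simp only: comp_assoc)
  also have "beqd U T \<dots> (c1 T (c0 U E' (c0 T E (dd T))) F')"
    by (rule cong_r, rule cong_l, rule beq_sym[OF ch'])
  also have "c1 T (c0 U E' (c0 T E (dd T))) F' = c1 T (c0 T (c0 U E' E) (dd T)) F'"
    by (simp only: comp_assoc)
  also have "beqd U T \<dots> (c1 T (c0 T bid (dd T)) F')"
    by (rule cong_r, rule cong_r, rule i0(1))
  also have "beqd U T \<dots> (c1 T (dd T) F')"
    by (rule cong_r, rule comp_bid_l)
  finally have ch2: "chain U T F' E'" unfolding chain_map_def .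
  have z1: "nhtp T T (bsub bid bid) (bsub bid bid)" by (simp only: bsub_self nhtp_zero)
  have n1: "nhtp T T (bsub (c1 U F' F) bid) (bsub (c0 U E' E) bid)"
    by (rule nhtp_beq[OF z1]) (rule beq_bsub[OF beq_sym beq_refl], fact)+
  have z2: "nhtp U U (bsub bid bid) (bsub bid bid)" by (simp only: bsub_self nhtp_zero)
  have n2: "nhtp U U (bsub (c1 T F F') bid) (bsub (c0 T E E') bid)"
    by (rule nhtp_beq[OF z2]) (rule beq_bsub[OF beq_sym beq_refl], fact)+
  show ?thesis unfolding hiso_def using ch ch2 n1 n2 by blast
qed

section \<open>Zero complexes and trivial homotopies\<close>

lemma comp_00: "comp 0 0 N M = bzero"
  by (rule bm_eqI; rule ext; rule ext) (simp_all add: comp_simps bzero_def)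

lemma hiso_zcx_iff: "hiso la ra T zcx \<longleftrightarrow> nhtp T T bid bid"
proof
  assume "hiso la ra T zcx"
  then obtain f1 f0 g1 g0 where "nhtp T T (bsub (c1 Z0 g1 f1) bid) (bsub (c0 Z0 g0 f0) bid)"
    unfolding hiso_def by blast
  then have "nhtp T T (bsub bzero bid) (bsub bzero bid)" by (simp add: zcx_def comp_00)
  from nhtp_bsub[OF nhtp_zero this] show "nhtp T T bid bid"
    by (simp add: bsub_def bzero_def)
next
  assume a: "nhtp T T bid bid"
  have c1: "chain T Z0 bzero bzero" unfolding chain_map_def beq_def by (simp add: zcx_def)
  have c2: "chain Z0 T bzero bzero" unfolding chain_map_def beq_def by (simp add: zcx_def)
  have n1: "nhtp T T (bsub (c1 Z0 bzero bzero) bid) (bsub (c0 Z0 bzero bzero) bid)"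
    using nhtp_bsub[OF nhtp_zero a] by (simp add: zcx_def comp_00)
  have n2: "nhtp Z0 Z0 (bsub (c1 T bzero bzero) bid) (bsub (c0 T bzero bzero) bid)"
    unfolding nullhtp_def beq_def by (simp add: zcx_def)
  show "hiso la ra T zcx" unfolding hiso_def using c1 c2 n1 n2 by blast
qed

definition triv :: "('a,'x,'b) cx \<Rightarrow> bool" where
  "triv T \<longleftrightarrow> (p1 T = 0 \<or> p0 T = 0) \<and> (q1 T = 0 \<or> q0 T = 0) \<and> (p1 T = 0 \<or> q0 T = 0)"

lemma triv_hd: "triv T \<Longrightarrow> beq1 T T (c0 T h (dd T)) bzero"
  unfolding triv_def beq_def by (auto simp: comp_simps bzero_def)

lemma triv_dh: "triv T \<Longrightarrow> beq0 T T (c1 T (dd T) h) bzero"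
  unfolding triv_def beq_def by (auto simp: comp_simps bzero_def)

lemma triv_nhtp: assumes "triv T" "nhtp T T f1 f0" shows "beq1 T T f1 bzero" "beq0 T T f0 bzero"
proof -
  obtain h where h: "beq1 T T f1 (c0 T h (dd T))" "beq0 T T f0 (c1 T (dd T) h)"
    using assms(2) by (rule nhtpE)
  show "beq1 T T f1 bzero" using h(1) triv_hd[OF assms(1)] by (rule beq_trans)
  show "beq0 T T f0 bzero" using h(2) triv_dh[OF assms(1)] by (rule beq_trans)
qed

lemma triv_zcx: assumes "triv T" "hiso la ra T zcx"
  shows "p1 T = 0" "q1 T = 0" "p0 T = 0" "q0 T = 0"
proof -
  have n: "nhtp T T bid bid" using assms(2) hiso_zcx_iff by blast
  note a = triv_nhtp[OF assms(1) n]
  show "p1 T = 0"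
  proof (rule ccontr)
    assume "p1 T \<noteq> 0" then have "mA (bid::('a,'x,'b) bm) 0 0 = mA (bzero::('a,'x,'b) bm) 0 0" using a(1) unfolding beq_def by auto
    thus False by (simp add: bid_def bzero_def)
  qed
  show "q1 T = 0"
  proof (rule ccontr)
    assume "q1 T \<noteq> 0" then have "mB (bid::('a,'x,'b) bm) 0 0 = mB (bzero::('a,'x,'b) bm) 0 0" using a(1) unfolding beq_def by auto
    thus False by (simp add: bid_def bzero_def)
  qed
  show "p0 T = 0"
  proof (rule ccontr)
    assume "p0 T \<noteq> 0" then have "mA (bid::('a,'x,'b) bm) 0 0 = mA (bzero::('a,'x,'b) bm) 0 0" using a(2) unfolding beq_def by auto
    thus False by (simp add: bid_def bzero_def)
  qed
  show "q0 T = 0"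
  proof (rule ccontr)
    assume "q0 T \<noteq> 0" then have "mB (bid::('a,'x,'b) bm) 0 0 = mB (bzero::('a,'x,'b) bm) 0 0" using a(2) unfolding beq_def by auto
    thus False by (simp add: bid_def bzero_def)
  qed
qed

end

context bictx begin

definition Zh where "Zh T U \<phi> \<longleftrightarrow> (\<exists>a b. beqd T U \<phi> (badd (c1 U (dd U) a) (c0 T b (dd T))))"

lemma hom1_Zh: "hom1_zero la ra T U \<longleftrightarrow> (\<forall>\<phi>. Zh T U \<phi>)"
  unfolding hom1_zero_def Zh_def ..

lemma Z_beq: "Zh T U \<phi> \<Longrightarrow> beqd T U \<phi> \<psi> \<Longrightarrow> Zh T U \<psi>"
  unfolding Zh_def by (meson beq_sym beq_trans)

lemma badd_swap4: "badd (badd A B) (badd C D) = badd (badd A C) (badd B D)"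
  unfolding badd_def by (simp add: ac_simps)
lemma bsub_swap4: "bsub (badd A B) (badd C D) = badd (bsub A C) (bsub B D)"
  unfolding badd_def bsub_def by (simp add: algebra_simps)

lemma Z_badd: "Zh T U \<phi> \<Longrightarrow> Zh T U \<psi> \<Longrightarrow> Zh T U (badd \<phi> \<psi>)"
  unfolding Zh_def
proof (elim exE)
  fix a b a' b'
  assume 1: "beqd T U \<phi> (badd (c1 U (dd U) a) (c0 T b (dd T)))"
     and 2: "beqd T U \<psi> (badd (c1 U (dd U) a') (c0 T b' (dd T)))"
  have "beqd T U (badd \<phi> \<psi>) (badd (c1 U (dd U) (badd a a')) (c0 T (badd b b') (dd T)))"
    unfolding comp_badd_l comp_badd_r badd_swap4[symmetric] by (rule beq_badd[OF 1 2])
  thus "\<exists>a b. beqd T U (badd \<phi> \<psi>) (badd (c1 U (dd U) a) (c0 T b (dd T)))" by blast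
qed

lemma Z_bsub: "Zh T U \<phi> \<Longrightarrow> Zh T U \<psi> \<Longrightarrow> Zh T U (bsub \<phi> \<psi>)"
  unfolding Zh_def
proof (elim exE)
  fix a b a' b'
  assume 1: "beqd T U \<phi> (badd (c1 U (dd U) a) (c0 T b (dd T)))"
     and 2: "beqd T U \<psi> (badd (c1 U (dd U) a') (c0 T b' (dd T)))"
  have "beqd T U (bsub \<phi> \<psi>) (badd (c1 U (dd U) (bsub a a')) (c0 T (bsub b b') (dd T)))"
    unfolding comp_bsub_l comp_bsub_r bsub_swap4[symmetric] by (rule beq_bsub[OF 1 2])
  thus "\<exists>a b. beqd T U (bsub \<phi> \<psi>) (badd (c1 U (dd U) a) (c0 T b (dd T)))" by blast
qed

lemma Z_dl: "Zh T U (c1 U (dd U) a)"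
  unfolding Zh_def by (rule exI[of _ a], rule exI[of _ bzero]) (simp add: badd_bzero)

lemma Z_dr: "Zh T U (c0 T b (dd T))"
  unfolding Zh_def by (rule exI[of _ bzero], rule exI[of _ b]) (simp add: bzero_badd)

lemma Z_left:
  assumes H: "beq0 U U (bsub M bid) (c1 U (dd U) H)" and Z: "Zh T U (c0 U M \<phi>)"
  shows "Zh T U \<phi>"
proof -
  have "c0 U M \<phi> = badd (c0 U (bsub M bid) \<phi>) (c0 U bid \<phi>)"
    by (subst badd_bsub_id[of M bid]) (simp only: comp_badd_l)
  also have "beqd T U \<dots> (badd (c0 U (c1 U (dd U) H) \<phi>) \<phi>)"
    by (rule beq_badd[OF cong_r[OF H] comp_bid_l])
  also have "badd (c0 U (c1 U (dd U) H) \<phi>) \<phi> = badd (c1 U (dd U) (c0 U H \<phi>)) \<phi>"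
    by (simp only: comp_assoc)
  finally have e: "beqd T U (c0 U M \<phi>) (badd (c1 U (dd U) (c0 U H \<phi>)) \<phi>)" .
  have "Zh T U (bsub (c0 U M \<phi>) (c1 U (dd U) (c0 U H \<phi>)))" by (rule Z_bsub[OF Z Z_dl])
  moreover have "beqd T U (bsub (c0 U M \<phi>) (c1 U (dd U) (c0 U H \<phi>))) \<phi>"
    using e unfolding beq_def bsub_def badd_def by simp
  ultimately show ?thesis by (rule Z_beq)
qed

lemma Z_right:
  assumes H: "beq1 T T (bsub N bid) (c0 T H (dd T))" and Z: "Zh T U (c1 T \<phi> N)"
  shows "Zh T U \<phi>"
proof -
  have "c1 T \<phi> N = badd (c1 T \<phi> (bsub N bid)) (c1 T \<phi> bid)"
    by (subst badd_bsub_id[of N bid]) (simp only: comp_badd_r)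
  also have "beqd T U \<dots> (badd (c1 T \<phi> (c0 T H (dd T))) \<phi>)"
    by (rule beq_badd[OF cong_l[OF H] comp_bid_r])
  also have "badd (c1 T \<phi> (c0 T H (dd T))) \<phi> = badd (c0 T (c1 T \<phi> H) (dd T)) \<phi>"
    by (simp only: comp_assoc)
  finally have e: "beqd T U (c1 T \<phi> N) (badd (c0 T (c1 T \<phi> H) (dd T)) \<phi>)" .
  have "Zh T U (bsub (c1 T \<phi> N) (c0 T (c1 T \<phi> H) (dd T)))" by (rule Z_bsub[OF Z Z_dr])
  moreover have "beqd T U (bsub (c1 T \<phi> N) (c0 T (c1 T \<phi> H) (dd T))) \<phi>"
    using e unfolding beq_def bsub_def badd_def by simp
  ultimately show ?thesis by (rule Z_beq)
qed

lemma Z_sand: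
  assumes Z: "Zh T U \<phi>" and f: "chain U U' f1 f0" and g: "chain T' T g1 g0"
  shows "Zh T' U' (c0 U f0 (c1 T \<phi> g1))"
proof -
  obtain a b where ab: "beqd T U \<phi> (badd (c1 U (dd U) a) (c0 T b (dd T)))"
    using Z unfolding Zh_def by blast
  have f': "beq (p1 U) (q1 U) (p0 U') (q0 U') (c0 U f0 (dd U)) (c1 U' (dd U') f1)"
    using f unfolding chain_map_def .
  have g': "beq (p1 T') (q1 T') (p0 T) (q0 T) (c1 T (dd T) g1) (c0 T' g0 (dd T'))"
    using g unfolding chain_map_def by (rule beq_sym)
  have "beqd T' U' (c0 U f0 (c1 T \<phi> g1)) (c0 U f0 (c1 T (badd (c1 U (dd U) a) (c0 T b (dd T))) g1))"
    by (rule cong_l, rule cong_r, rule ab)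
  also have "c0 U f0 (c1 T (badd (c1 U (dd U) a) (c0 T b (dd T))) g1) =
     badd (c1 U (c0 U f0 (dd U)) (c1 T a g1)) (c0 U f0 (c0 T b (c1 T (dd T) g1)))"
    by (simp only: comp_badd_l comp_badd_r comp_assoc)
  also have "beqd T' U' \<dots> (badd (c1 U (c1 U' (dd U') f1) (c1 T a g1)) (c0 U f0 (c0 T b (c0 T' g0 (dd T')))))"
    by (rule beq_badd, rule cong_r[OF f'], rule cong_l, rule cong_l, rule g')
  also have "badd (c1 U (c1 U' (dd U') f1) (c1 T a g1)) (c0 U f0 (c0 T b (c0 T' g0 (dd T')))) =
     badd (c1 U' (dd U') (c1 U f1 (c1 T a g1))) (c0 T' (c0 U f0 (c0 T b g0)) (dd T'))"
    by (simp only: comp_assoc)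
  finally show ?thesis unfolding Zh_def by blast
qed

lemma hom1_hiso:
  assumes Z: "hom1_zero la ra T U" and TT: "hiso la ra T T'" and UU: "hiso la ra U U'"
  shows "hom1_zero la ra T' U'"
proof -
  obtain f1 f0 g1 g0 where A: "chain T T' f1 f0" "chain T' T g1 g0"
    "nhtp T' T' (bsub (c1 T f1 g1) bid) (bsub (c0 T f0 g0) bid)"
    using TT unfolding hiso_def by blast
  obtain f1' f0' g1' g0' where B: "chain U U' f1' f0'" "chain U' U g1' g0'"
    "nhtp U' U' (bsub (c1 U f1' g1') bid) (bsub (c0 U f0' g0') bid)"
    using UU unfolding hiso_def by blast
  obtain H where H: "beq1 T' T' (bsub (c1 T f1 g1) bid) (c0 T' H (dd T'))" using A(3) by (rule nhtpE)
  obtain H' where H': "beq0 U' U' (bsub (c0 U f0' g0') bid) (c1 U' (dd U') H')" using B(3) by (rule nhtpE)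
  show ?thesis unfolding hom1_Zh
  proof
    fix \<phi>
    have "Zh T U (c0 U' g0' (c1 T' \<phi> f1))" using Z unfolding hom1_Zh by blast
    from Z_sand[OF this B(1) A(2)]
    have "Zh T' U' (c0 U f0' (c1 T (c0 U' g0' (c1 T' \<phi> f1)) g1))" .
    moreover have "c0 U f0' (c1 T (c0 U' g0' (c1 T' \<phi> f1)) g1) = c0 U' (c0 U f0' g0') (c1 T' \<phi> (c1 T f1 g1))"
      by (simp only: comp_assoc)
    ultimately have "Zh T' U' (c0 U' (c0 U f0' g0') (c1 T' \<phi> (c1 T f1 g1)))" by simp
    from Z_left[OF H' this] have "Zh T' U' (c1 T' \<phi> (c1 T f1 g1))" .
    from Z_right[OF H this] show "Zh T' U' \<phi>" .
  qed
qed

lemma indec_hiso: "indec la ra T \<Longrightarrow> hiso la ra T T' \<Longrightarrow> indec la ra T'"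
  unfolding indec_def by (meson hiso_sym hiso_trans)

end

lemma sum_delta_shift: "(\<Sum>k<(n::nat). if i = k + c then f k else 0) = (if c \<le> i \<and> i < n + c then f (i - c) else (0::'a::comm_monoid_add))"
proof -
  have e: "(i = k + c) = (k = i - c \<and> c \<le> i)" for k by arith
  have "(\<Sum>k<n. if i = k + c then f k else 0) = (\<Sum>k<n. if k = i - c then (if c \<le> i then f k else 0) else 0)"
    unfolding e by (rule sum.cong) auto
  also have "\<dots> = (if c \<le> i \<and> i < n + c then f (i - c) else 0)" by (subst sum.delta, simp, auto)
  finally show ?thesis .
qed

lemma sum_delta_shift': "(\<Sum>k<(n::nat). if k = j + c then f k else 0) = (if j + c < n then f (j + c) else (0::'a::comm_monoid_add))"
  by (subst sum.delta, simp, simp)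

context bictx begin

definition shin :: "nat \<Rightarrow> nat \<Rightarrow> ('a,'x,'b) bm" where
  "shin p q = \<lparr>mA = (\<lambda>i j. if i = j + p then 1 else 0), mX = (\<lambda>i j. 0), mB = (\<lambda>i j. if i = j + q then 1 else 0)\<rparr>"
definition shout :: "nat \<Rightarrow> nat \<Rightarrow> ('a,'x,'b) bm" where
  "shout p q = \<lparr>mA = (\<lambda>i j. if j = i + p then 1 else 0), mX = (\<lambda>i j. 0), mB = (\<lambda>i j. if j = i + q then 1 else 0)\<rparr>"

lemmas blk_simps = comp_simps dsum_def bdiag_def bid_def shin_def shout_def beq_def chain_map_def
  sum_delta_shift

lemma chain_iU: "chain U (dsum U W) bid bid"
  by (simp add: blk_simps)

lemma chain_pU: "chain (dsum U W) U bid bid"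
  by (simp add: blk_simps)

lemma chain_iW: "chain W (dsum U W) (shin (p1 U) (q1 U)) (shin (p0 U) (q0 U))"
  by (simp add: blk_simps)

lemma chain_pW: "chain (dsum U W) W (shout (p1 U) (q1 U)) (shout (p0 U) (q0 U))"
  by (simp add: blk_simps)

lemma pi_U: "beq1 U U (c1 (dsum U W) bid bid) bid" "beq0 U U (c0 (dsum U W) bid bid) bid"
  by (simp_all add: blk_simps)

lemma pi_W: "beq1 W W (c1 (dsum U W) (shout (p1 U) (q1 U)) (shin (p1 U) (q1 U))) bid"
  "beq0 W W (c0 (dsum U W) (shout (p0 U) (q0 U)) (shin (p0 U) (q0 U))) bid"
  by (simp_all add: blk_simps)

lemma ip_sum: "beq1 (dsum U W) (dsum U W) (badd (c1 U bid bid) (c1 W (shin (p1 U) (q1 U)) (shout (p1 U) (q1 U)))) bid"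
  "beq0 (dsum U W) (dsum U W) (badd (c0 U bid bid) (c0 W (shin (p0 U) (q0 U)) (shout (p0 U) (q0 U)))) bid"
  by (auto simp add: blk_simps badd_def)

end

context bictx begin

lemma beq_bsub_zero: "beq ps qs pt qt (bsub M N) bzero \<Longrightarrow> beq ps qs pt qt M N"
  unfolding beq_def bsub_def bzero_def by simp

lemma beq_zero_bsub: "beq ps qs pt qt M N \<Longrightarrow> beq ps qs pt qt bzero (bsub M N)"
  unfolding beq_def bsub_def bzero_def by simp

lemma retract:
  assumes tT: "triv T"
    and f: "chain T S f1 f0" and g: "chain S T g1 g0"
    and fg: "nhtp S S (bsub (c1 T f1 g1) bid) (bsub (c0 T f0 g0) bid)"
    and i: "chain V S i1 i0" and p: "chain S V PR1 PR0"
    and pi1: "beq1 V V (c1 S PR1 i1) bid" and pi0: "beq0 V V (c0 S PR0 i0) bid"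
  shows "chain T T (c1 V (c1 S g1 i1) (c1 S PR1 f1)) (c0 V (c0 S g0 i0) (c0 S PR0 f0))"
    and "beq1 T T (c1 T (c1 V (c1 S g1 i1) (c1 S PR1 f1)) (c1 V (c1 S g1 i1) (c1 S PR1 f1))) (c1 V (c1 S g1 i1) (c1 S PR1 f1))"
    and "beq0 T T (c0 T (c0 V (c0 S g0 i0) (c0 S PR0 f0)) (c0 V (c0 S g0 i0) (c0 S PR0 f0))) (c0 V (c0 S g0 i0) (c0 S PR0 f0))"
    and "beq1 T T (c1 V (c1 S g1 i1) (c1 S PR1 f1)) bzero \<Longrightarrow> beq0 T T (c0 V (c0 S g0 i0) (c0 S PR0 f0)) bzero
         \<Longrightarrow> hiso la ra V zcx"
proof -
  define fV1 where "fV1 = c1 S PR1 f1"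
  define fV0 where "fV0 = c0 S PR0 f0"
  define gV1 where "gV1 = c1 S g1 i1"
  define gV0 where "gV0 = c0 S g0 i0"
  have cf: "chain T V fV1 fV0" unfolding fV1_def fV0_def by (rule chain_comp[OF f p])
  have cg: "chain V T gV1 gV0" unfolding gV1_def gV0_def by (rule chain_comp[OF i g])
  show ce: "chain T T (c1 V (c1 S g1 i1) (c1 S PR1 f1)) (c0 V (c0 S g0 i0) (c0 S PR0 f0))"
    using chain_comp[OF cf cg] unfolding fV1_def fV0_def gV1_def gV0_def .
  define P1 where "P1 = c1 T fV1 gV1"
  define P0 where "P0 = c0 T fV0 gV0"
  have cP: "chain V V P1 P0" unfolding P1_def P0_def by (rule chain_comp[OF cg cf])
  have K: "nhtp V V (bsub P1 bid) (bsub P0 bid)"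
  proof -
    have a: "nhtp V V (bsub (c1 S PR1 (c1 S (c1 T f1 g1) i1)) (c1 S PR1 i1)) (bsub (c0 S PR0 (c0 S (c0 T f0 g0) i0)) (c0 S PR0 i0))"
      by (rule htp_sandwich[OF fg i p])
    have z: "nhtp V V (bsub (c1 S PR1 i1) bid) (bsub (c0 S PR0 i0) bid)"
      by (rule nhtp_beq[OF nhtp_zero]) (rule beq_zero_bsub, fact)+
    have e1: "P1 = c1 S PR1 (c1 S (c1 T f1 g1) i1)" unfolding P1_def fV1_def gV1_def by (simp only: comp_assoc)
    have e0: "P0 = c0 S PR0 (c0 S (c0 T f0 g0) i0)" unfolding P0_def fV0_def gV0_def by (simp only: comp_assoc)
    show ?thesis unfolding e1 e0 by (subst (1 2) bsub_split, rule nhtp_badd[OF a z])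
  qed
  have E1: "c1 V (c1 S g1 i1) (c1 S PR1 f1) = c1 V gV1 fV1" unfolding gV1_def fV1_def ..
  have E0: "c0 V (c0 S g0 i0) (c0 S PR0 f0) = c0 V gV0 fV0" unfolding gV0_def fV0_def ..
  have GKF: "beq1 T T (c1 V gV1 (c1 V (bsub P1 bid) fV1)) bzero" "beq0 T T (c0 V gV0 (c0 V (bsub P0 bid) fV0)) bzero"
    using triv_nhtp[OF tT nhtp_comp_l[OF nhtp_comp_r[OF K cf] cg]] by auto
  have "c1 T (c1 V gV1 fV1) (c1 V gV1 fV1) = c1 V gV1 (c1 V P1 fV1)" unfolding P1_def by (simp only: comp_assoc)
  also have "\<dots> = badd (c1 V gV1 (c1 V (bsub P1 bid) fV1)) (c1 V gV1 (c1 V bid fV1))"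
    by (subst badd_bsub_id[of P1 bid]) (simp only: comp_badd_l comp_badd_r)
  also have "beq1 T T \<dots> (badd bzero (c1 V gV1 fV1))"
    by (rule beq_badd[OF GKF(1)], rule cong_l, rule comp_bid_l)
  finally show "beq1 T T (c1 T (c1 V (c1 S g1 i1) (c1 S PR1 f1)) (c1 V (c1 S g1 i1) (c1 S PR1 f1))) (c1 V (c1 S g1 i1) (c1 S PR1 f1))"
    unfolding E1 bzero_badd .
  have "c0 T (c0 V gV0 fV0) (c0 V gV0 fV0) = c0 V gV0 (c0 V P0 fV0)" unfolding P0_def by (simp only: comp_assoc)
  also have "\<dots> = badd (c0 V gV0 (c0 V (bsub P0 bid) fV0)) (c0 V gV0 (c0 V bid fV0))"
    by (subst badd_bsub_id[of P0 bid]) (simp only: comp_badd_l comp_badd_r)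
  also have "beq0 T T \<dots> (badd bzero (c0 V gV0 fV0))"
    by (rule beq_badd[OF GKF(2)], rule cong_l, rule comp_bid_l)
  finally show "beq0 T T (c0 T (c0 V (c0 S g0 i0) (c0 S PR0 f0)) (c0 V (c0 S g0 i0) (c0 S PR0 f0))) (c0 V (c0 S g0 i0) (c0 S PR0 f0))"
    unfolding E0 bzero_badd .
  assume z1: "beq1 T T (c1 V (c1 S g1 i1) (c1 S PR1 f1)) bzero" and z0: "beq0 T T (c0 V (c0 S g0 i0) (c0 S PR0 f0)) bzero"
  have PP1: "beq1 V V (c1 V P1 P1) bzero"
  proof -
    have "c1 V P1 P1 = c1 T fV1 (c1 T (c1 V gV1 fV1) gV1)" unfolding P1_def by (simp only: comp_assoc)
    also have "beq1 V V \<dots> (c1 T fV1 (c1 T bzero gV1))"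
      by (rule cong_l, rule cong_r, rule z1[unfolded E1])
    finally show ?thesis by simp
  qed
  have PP0: "beq0 V V (c0 V P0 P0) bzero"
  proof -
    have "c0 V P0 P0 = c0 T fV0 (c0 T (c0 V gV0 fV0) gV0)" unfolding P0_def by (simp only: comp_assoc)
    also have "beq0 V V \<dots> (c0 T fV0 (c0 T bzero gV0))"
      by (rule cong_l, rule cong_r, rule z0[unfolded E0])
    finally show ?thesis by simp
  qed
  have n1: "nhtp V V (c1 V P1 (bsub P1 bid)) (c0 V P0 (bsub P0 bid))"
    by (rule nhtp_comp_l[OF K cP])
  have n2: "nhtp V V (bsub (c1 V P1 bid) bid) (bsub (c0 V P0 bid) bid)"
    by (rule nhtp_beq[OF K]) (rule beq_bsub[OF beq_sym[OF comp_bid_r] beq_refl])+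
  have n3: "nhtp V V (bsub (c1 V P1 P1) bid) (bsub (c0 V P0 P0) bid)"
    using nhtp_badd[OF n1 n2] by (simp only: comp_bsub_r bsub_split[symmetric])
  have n4: "nhtp V V (bsub bzero bid) (bsub bzero bid)"
    by (rule nhtp_beq[OF n3]) (rule beq_bsub[OF _ beq_refl], fact)+
  have "nhtp V V bid bid"
    using nhtp_bsub[OF nhtp_zero n4] by (simp add: bsub_def bzero_def)
  then show "hiso la ra V zcx" by (simp add: hiso_zcx_iff)
qed


lemma indec_crit:
  assumes tT: "triv T" and nz: "\<not> hiso la ra T zcx"
    and E: "\<And>e1 e0. chain T T e1 e0 \<Longrightarrow> beq1 T T (c1 T e1 e1) e1 \<Longrightarrow> beq0 T T (c0 T e0 e0) e0 \<Longrightarrow>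
       (beq1 T T e1 bzero \<and> beq0 T T e0 bzero) \<or> (beq1 T T e1 bid \<and> beq0 T T e0 bid)"
  shows "indec la ra T"
  unfolding indec_def
proof (intro conjI allI impI nz)
  fix U W :: "('a,'x,'b) cx"
  assume "hiso la ra T (dsum U W)"
  then obtain f1 f0 g1 g0 where A: "chain T (dsum U W) f1 f0" "chain (dsum U W) T g1 g0"
    "nhtp T T (bsub (c1 (dsum U W) g1 f1) bid) (bsub (c0 (dsum U W) g0 f0) bid)"
    "nhtp (dsum U W) (dsum U W) (bsub (c1 T f1 g1) bid) (bsub (c0 T f0 g0) bid)"
    unfolding hiso_def by blast
  define S where "S = dsum U W"
  note RU = retract[OF tT A(1) A(2) A(4) chain_iU chain_pU pi_U]
  note RW = retract[OF tT A(1) A(2) A(4) chain_iW chain_pW pi_W]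
  define eU1 where "eU1 = c1 U (c1 S g1 bid) (c1 S bid f1)"
  define eU0 where "eU0 = c0 U (c0 S g0 bid) (c0 S bid f0)"
  define eW1 where "eW1 = c1 W (c1 S g1 (shin (p1 U) (q1 U))) (c1 S (shout (p1 U) (q1 U)) f1)"
  define eW0 where "eW0 = c0 W (c0 S g0 (shin (p0 U) (q0 U))) (c0 S (shout (p0 U) (q0 U)) f0)"
  have gf: "beq1 T T (c1 S g1 f1) bid" "beq0 T T (c0 S g0 f0) bid"
    using triv_nhtp[OF tT A(3)] unfolding S_def by (auto intro: beq_bsub_zero)
  have sum1: "beq1 T T (badd eU1 eW1) bid"
  proof -
    have "badd eU1 eW1 = c1 S g1 (c1 S (badd (c1 U bid bid) (c1 W (shin (p1 U) (q1 U)) (shout (p1 U) (q1 U)))) f1)"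
      unfolding eU1_def eW1_def by (simp only: comp_badd_l comp_badd_r comp_assoc)
    also have "beq1 T T \<dots> (c1 S g1 (c1 S bid f1))"
      unfolding S_def by (rule cong_l, rule cong_r, rule ip_sum)
    also have "beq1 T T \<dots> (c1 S g1 f1)" by (rule cong_l, rule comp_bid_l)
    also have "beq1 T T \<dots> bid" by (rule gf)
    finally show ?thesis .
  qed
  have sum0: "beq0 T T (badd eU0 eW0) bid"
  proof -
    have "badd eU0 eW0 = c0 S g0 (c0 S (badd (c0 U bid bid) (c0 W (shin (p0 U) (q0 U)) (shout (p0 U) (q0 U)))) f0)"
      unfolding eU0_def eW0_def by (simp only: comp_badd_l comp_badd_r comp_assoc)
    also have "beq0 T T \<dots> (c0 S g0 (c0 S bid f0))"
      unfolding S_def by (rule cong_l, rule cong_r, rule ip_sum)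
    also have "beq0 T T \<dots> (c0 S g0 f0)" by (rule cong_l, rule comp_bid_l)
    also have "beq0 T T \<dots> bid" by (rule gf)
    finally show ?thesis .
  qed
  have EU: "(beq1 T T eU1 bzero \<and> beq0 T T eU0 bzero) \<or> (beq1 T T eU1 bid \<and> beq0 T T eU0 bid)"
    unfolding eU1_def eU0_def S_def using RU(1-3) by (rule E)
  show "hiso la ra U zcx \<or> hiso la ra W zcx"
  proof (cases "beq1 T T eU1 bzero \<and> beq0 T T eU0 bzero")
    case True
    then show ?thesis using RU(4) unfolding eU1_def eU0_def S_def by blast
  next
    case False
    with EU have i: "beq1 T T eU1 bid" "beq0 T T eU0 bid" by auto
    have "beq1 T T eW1 bzero" using sum1 i(1) unfolding beq_def badd_def bzero_def by auto
    moreover have "beq0 T T eW0 bzero" using sum0 i(2) unfolding beq_def badd_def bzero_def by auto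
    ultimately show ?thesis using RW(4) unfolding eW1_def eW0_def S_def by blast
  qed
qed

end

context bictx begin

definition ptype :: "('a,'x,'b) cx \<Rightarrow> bool" where "ptype T \<longleftrightarrow> p1 T = 0 \<and> q0 T = 0"

lemma ptype_triv: "ptype T \<Longrightarrow> triv T" unfolding ptype_def triv_def by simp

lemma chain_ptype:
  assumes "ptype T" "ptype U"
  shows "chain T U f1 f0 \<longleftrightarrow> (\<forall>i<p0 U. \<forall>j<q1 T.
     (\<Sum>k<p0 T. la (mA f0 i k) (mX (dd T) k j)) = (\<Sum>k<q1 U. ra (mX (dd U) i k) (mB f1 k j)))"
  using assms unfolding ptype_def chain_map_def beq_def by (simp add: comp_simps)

lemma beq1_ptype: "ptype T \<Longrightarrow> beq1 T T X Y \<longleftrightarrow> eqm (q1 T) (q1 T) (mB X) (mB Y)"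
  unfolding ptype_def beq_def eqm_def by simp

lemma beq0_ptype: "ptype T \<Longrightarrow> beq0 T T X Y \<longleftrightarrow> eqm (p0 T) (p0 T) (mA X) (mA Y)"
  unfolding ptype_def beq_def eqm_def by simp

lemma mB_c1: "mB (c1 U g f) = mm (q1 U) (mB g) (mB f)" unfolding mm_def by (intro ext) (simp add: comp_simps)
lemma mA_c0: "mA (c0 U g f) = mm (p0 U) (mA g) (mA f)" unfolding mm_def by (intro ext) (simp add: comp_simps)

lemma mI_bid_A: "mA bid = mI" unfolding bid_def mI_def by simp
lemma mI_bid_B: "mB bid = mI" unfolding bid_def mI_def by simp

definition mkAB :: "(nat \<Rightarrow> nat \<Rightarrow> 'a) \<Rightarrow> (nat \<Rightarrow> nat \<Rightarrow> 'b) \<Rightarrow> ('a,'x,'b) bm" where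
  "mkAB E F = \<lparr>mA = E, mX = (\<lambda>i j. 0), mB = F\<rparr>"

lemma mkAB_simps[simp]: "mA (mkAB E F) = E" "mX (mkAB E F) = (\<lambda>i j. 0)" "mB (mkAB E F) = F"
  unfolding mkAB_def by simp_all

lemma hiso_ptype:
  assumes pT: "ptype T" and pU: "ptype U" and ch: "chain T U f1 f0"
    and F: "eqm (q1 T) (q1 T) (mm (q1 U) F' (mB f1)) mI" "eqm (q1 U) (q1 U) (mm (q1 T) (mB f1) F') mI"
    and E: "eqm (p0 T) (p0 T) (mm (p0 U) E' (mA f0)) mI" "eqm (p0 U) (p0 U) (mm (p0 T) (mA f0) E') mI"
  shows "hiso la ra T U"
proof (rule hiso_honest[OF ch, of "mkAB (\<lambda>i j. 0) F'" "mkAB E' (\<lambda>i j. 0)"])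
  show "beq1 T T (c1 U (mkAB (\<lambda>i j. 0) F') f1) bid" unfolding beq1_ptype[OF pT] mB_c1 mI_bid_B using F(1) by simp
  show "beq1 U U (c1 T f1 (mkAB (\<lambda>i j. 0) F')) bid" unfolding beq1_ptype[OF pU] mB_c1 mI_bid_B using F(2) by simp
  show "beq0 T T (c0 U (mkAB E' (\<lambda>i j. 0)) f0) bid" unfolding beq0_ptype[OF pT] mA_c0 mI_bid_A using E(1) by simp
  show "beq0 U U (c0 T f0 (mkAB E' (\<lambda>i j. 0))) bid" unfolding beq0_ptype[OF pU] mA_c0 mI_bid_A using E(2) by simp
qed

lemma hiso_cxeq:
  assumes "p1 T = p1 U" "q1 T = q1 U" "p0 T = p0 U" "q0 T = q0 U" "beqd T T (dd T) (dd U)"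
  shows "hiso la ra T U"
proof (rule hiso_honest[of T U bid bid bid bid])
  show "chain T U bid bid" unfolding chain_map_def
    using assms by (metis beq_sym beq_trans comp_bid_l comp_bid_r)
qed (use assms in \<open>simp_all add: comp_bid_l\<close>)

lemma hiso_zcx_sizes: "triv T \<Longrightarrow> hiso la ra T zcx \<longleftrightarrow> p1 T = 0 \<and> q1 T = 0 \<and> p0 T = 0 \<and> q0 T = 0"
  using triv_zcx[of T] hiso_cxeq[of T Z0] by (auto simp: zcx_def beq_def)

lemma noniso1:
  assumes "hiso la ra T U" "p0 U = 0" "q0 U = 0" "p1 T = 0" "p0 T > 0"
  shows False
proof -
  obtain f1 f0 g1 g0 where "nhtp T T (bsub (c1 U g1 f1) bid) (bsub (c0 U g0 f0) bid)"
    using assms(1) unfolding hiso_def by blast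
  then obtain h where h: "beq0 T T (bsub (c0 U g0 f0) bid) (c1 T (dd T) h)" by (rule nhtpE)
  have "mA (bsub (c0 U g0 f0) bid) 0 0 = mA (c1 T (dd T) h) 0 0" using h assms(5) unfolding beq_def by auto
  then show False using assms(2,3,4) by (simp add: comp_simps bsub_def bid_def)
qed

lemma noniso2:
  assumes "hiso la ra T U" "p1 T = 0" "q1 T = 0" "q0 U = 0" "q1 U > 0"
  shows False
proof -
  obtain f1 f0 g1 g0 where "nhtp U U (bsub (c1 T f1 g1) bid) (bsub (c0 T f0 g0) bid)"
    using assms(1) unfolding hiso_def by blast
  then obtain h where h: "beq1 U U (bsub (c1 T f1 g1) bid) (c0 U h (dd U))" by (rule nhtpE)
  have "mB (bsub (c1 T f1 g1) bid) 0 0 = mB (c0 U h (dd U)) 0 0" using h assms(5) unfolding beq_def by auto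
  then show False using assms(2,3,4) by (simp add: comp_simps bsub_def bid_def)
qed

lemma hom1_retract:
  assumes S: "hom1_zero la ra S S"
    and iT: "chain T S iT1 iT0" and pT: "chain S T pT1 pT0" and piT: "beq1 T T (c1 S pT1 iT1) bid"
    and iU: "chain U S iU1 iU0" and pU: "chain S U pU1 pU0" and piU: "beq0 U U (c0 S pU0 iU0) bid"
  shows "hom1_zero la ra T U"
  unfolding hom1_Zh
proof
  fix \<phi>
  have "Zh S S (c0 U iU0 (c1 T \<phi> pT1))" using S unfolding hom1_Zh by blast
  from Z_sand[OF this pU iT] have "Zh T U (c0 S pU0 (c1 S (c0 U iU0 (c1 T \<phi> pT1)) iT1))" .
  moreover have "c0 S pU0 (c1 S (c0 U iU0 (c1 T \<phi> pT1)) iT1) = c0 U (c0 S pU0 iU0) (c1 T \<phi> (c1 S pT1 iT1))"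
    by (simp only: comp_assoc)
  moreover have "beqd T U (c0 U (c0 S pU0 iU0) (c1 T \<phi> (c1 S pT1 iT1))) (c0 U bid (c1 T \<phi> bid))"
    by (rule comp_cong[OF piU cong_l[OF piT]])
  moreover have "beqd T U (c0 U bid (c1 T \<phi> bid)) \<phi>"
    by (rule beq_trans[OF comp_bid_l comp_bid_r])
  ultimately show "Zh T U \<phi>" by (metis Z_beq beq_trans)
qed

lemma hom1_dsum:
  assumes "hom1_zero la ra (dsum T U) (dsum T U)"
  shows "hom1_zero la ra T T" "hom1_zero la ra U T" "hom1_zero la ra U U" "hom1_zero la ra T U"
  using hom1_retract[OF assms chain_iU chain_pU pi_U(1) chain_iU chain_pU pi_U(2)]
    hom1_retract[OF assms chain_iW chain_pW pi_W(1) chain_iU chain_pU pi_U(2)]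
    hom1_retract[OF assms chain_iW chain_pW pi_W(1) chain_iW chain_pW pi_W(2)]
    hom1_retract[OF assms chain_iU chain_pU pi_U(1) chain_iW chain_pW pi_W(2)]
  by auto

lemma dsum_zcx: "hiso la ra (dsum T Z0) T"
  by (rule hiso_cxeq) (auto simp: dsum_def zcx_def beq_def bdiag_def)

lemma presilting2:
  assumes "presilting la ra (dsum_list [T, U])"
  shows "hom1_zero la ra T T" "hom1_zero la ra U T" "hom1_zero la ra U U" "hom1_zero la ra T U"
proof -
  have h: "hom1_zero la ra (dsum T (dsum U Z0)) (dsum T (dsum U Z0))"
    using assms unfolding presilting_def dsum_list_def by simp
  note H = hom1_dsum[OF h]
  show "hom1_zero la ra T T" by (rule H(1))
  show "hom1_zero la ra U T" by (rule hom1_hiso[OF H(2) dsum_zcx hiso_refl])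
  show "hom1_zero la ra U U" by (rule hom1_hiso[OF H(3) dsum_zcx dsum_zcx])
  show "hom1_zero la ra T U" by (rule hom1_hiso[OF H(4) hiso_refl dsum_zcx])
qed

end

definition sk :: "nat \<Rightarrow> nat \<Rightarrow> nat" where "sk i k = (if k < i then k else Suc k)"

lemma sum_remove_sk:
  assumes "i < n"
  shows "(\<Sum>k<n. f k) = f i + (\<Sum>k<n - 1. f (sk i k))"
proof -
  have img: "sk i ` {..<n - 1} = {..<n} - {i}"
  proof
    show "sk i ` {..<n - 1} \<subseteq> {..<n} - {i}" using assms by (auto simp: sk_def)
    show "{..<n} - {i} \<subseteq> sk i ` {..<n - 1}"
    proof
      fix k assume k: "k \<in> {..<n} - {i}"
      show "k \<in> sk i ` {..<n - 1}"
      proof (cases "k < i")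
        case True then show ?thesis using k assms by (intro image_eqI[of _ _ k]) (auto simp: sk_def)
      next
        case False then show ?thesis using k assms by (intro image_eqI[of _ _ "k - 1"]) (auto simp: sk_def)
      qed
    qed
  qed
  have inj: "inj_on (sk i) {..<n - 1}" unfolding inj_on_def sk_def by auto
  have "(\<Sum>k<n. f k) = f i + (\<Sum>k\<in>{..<n} - {i}. f k)"
    using assms by (subst sum.remove[of _ i]) auto
  also have "(\<Sum>k\<in>{..<n} - {i}. f k) = (\<Sum>k<n - 1. f (sk i k))"
    unfolding img[symmetric] by (subst sum.reindex[OF inj]) simp
  finally show ?thesis .
qed

context bictx begin

lemma fin_gen:
  assumes fd: "fin_dim_k (\<lambda>c x. la (\<iota> c) x)" and ce: "\<forall>c x. la (\<iota> c) x = ra x (\<iota>' c)"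
  shows "\<exists>g n. right_gen ra g n" "\<exists>h n. left_gen la h n"
proof -
  obtain S where S: "finite S" "\<forall>v. \<exists>c. v = (\<Sum>s\<in>S. la (\<iota> (c s)) s)"
    using fd unfolding fin_dim_k_def by blast
  obtain e where e: "bij_betw e {0..<card S} S" using ex_bij_betw_nat_finite[OF S(1)] by blast
  have re: "(\<Sum>s\<in>S. F s) = (\<Sum>k<card S. F (e k))" for F :: "'x \<Rightarrow> 'x"
    using sum.reindex_bij_betw[OF e, of F] by (simp add: atLeast0LessThan)
  show "\<exists>h n. left_gen la h n"
  proof (intro exI)
    show "left_gen la e (card S)" unfolding left_gen_def
    proof
      fix x obtain c where "x = (\<Sum>s\<in>S. la (\<iota> (c s)) s)" using S(2) by blast
      then have "x = (\<Sum>k<card S. la (\<iota> (c (e k))) (e k))" by (simp add: re)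
      then show "\<exists>a. x = (\<Sum>i<card S. la (a i) (e i))" by (intro exI[of _ "\<lambda>k. \<iota> (c (e k))"])
    qed
  qed
  show "\<exists>g n. right_gen ra g n"
  proof (intro exI)
    show "right_gen ra e (card S)" unfolding right_gen_def
    proof
      fix x obtain c where "x = (\<Sum>s\<in>S. la (\<iota> (c s)) s)" using S(2) by blast
      then have "x = (\<Sum>k<card S. ra (e k) (\<iota>' (c (e k))))" by (simp add: re ce)
      then show "\<exists>b. x = (\<Sum>i<card S. ra (e i) (b i))" by (intro exI[of _ "\<lambda>k. \<iota>' (c (e k))"])
    qed
  qed
qed

lemma M1r:
  assumes g: "right_gen ra g r" and r: "r = rgen_num ra"
    and Q: "\<forall>j<m. (\<Sum>k<r. ra (g k) (Q k j)) = 0" and ij: "i < r" "j < m"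
  shows "nu (Q i j)"
proof
  assume u: "two_sided_unit (Q i j)"
  define w where "w = B.rinv (Q i j)"
  have w: "Q i j * w = 1" using B.rinv[OF u] unfolding w_def by auto
  have s0: "(\<Sum>k<r. ra (g k) (Q k j)) = 0" using Q ij by auto
  have gi: "g i = - (\<Sum>k<r - 1. ra (g (sk i k)) (Q (sk i k) j * w))"
  proof -
    have "ra (g i) (Q i j) + (\<Sum>k<r - 1. ra (g (sk i k)) (Q (sk i k) j)) = 0"
      using s0 sum_remove_sk[OF ij(1), of "\<lambda>k. ra (g k) (Q k j)"] by simp
    then have "ra (g i) (Q i j) = - (\<Sum>k<r - 1. ra (g (sk i k)) (Q (sk i k) j))"
      by (simp add: eq_neg_iff_add_eq_0)
    then have "ra (ra (g i) (Q i j)) w = ra (- (\<Sum>k<r - 1. ra (g (sk i k)) (Q (sk i k) j))) w" by simp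
    then show ?thesis by (simp add: ra_mult[symmetric] w ra_neg_l ra_sum_l)
  qed
  have "right_gen ra (\<lambda>k. g (sk i k)) (r - 1)" unfolding right_gen_def
  proof
    fix x
    obtain b where b: "x = (\<Sum>k<r. ra (g k) (b k))" using g unfolding right_gen_def by blast
    have "x = ra (g i) (b i) + (\<Sum>k<r - 1. ra (g (sk i k)) (b (sk i k)))"
      using b sum_remove_sk[OF ij(1), of "\<lambda>k. ra (g k) (b k)"] by simp
    also have "\<dots> = (\<Sum>k<r - 1. ra (g (sk i k)) (b (sk i k) - Q (sk i k) j * w * b i))"
      unfolding gi by (simp add: ra_neg_l ra_sum_l ra_diff_r ra_mult sum_subtractf)
    finally show "\<exists>b. x = (\<Sum>k<r - 1. ra (g (sk i k)) (b k))" by (intro exI[of _ "\<lambda>k. b (sk i k) - Q (sk i k) j * w * b i"])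
  qed
  then have "rgen_num ra \<le> r - 1" unfolding rgen_num_def by (intro Least_le) blast
  with r ij show False by simp
qed

lemma M1l:
  assumes h: "left_gen la h l" and l: "l = lgen_num la"
    and Q: "\<forall>j<m. (\<Sum>k<l. la (Q j k) (h k)) = 0" and ij: "i < l" "j < m"
  shows "nu (Q j i)"
proof
  assume u: "two_sided_unit (Q j i)"
  define w where "w = A.rinv (Q j i)"
  have w: "w * Q j i = 1" using A.rinv[OF u] unfolding w_def by auto
  have s0: "(\<Sum>k<l. la (Q j k) (h k)) = 0" using Q ij by auto
  have hi: "h i = - (\<Sum>k<l - 1. la (w * Q j (sk i k)) (h (sk i k)))"
  proof -
    have "la (Q j i) (h i) + (\<Sum>k<l - 1. la (Q j (sk i k)) (h (sk i k))) = 0"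
      using s0 sum_remove_sk[OF ij(1), of "\<lambda>k. la (Q j k) (h k)"] by simp
    then have "la (Q j i) (h i) = - (\<Sum>k<l - 1. la (Q j (sk i k)) (h (sk i k)))"
      by (simp add: eq_neg_iff_add_eq_0)
    then have "la w (la (Q j i) (h i)) = la w (- (\<Sum>k<l - 1. la (Q j (sk i k)) (h (sk i k))))" by simp
    then show ?thesis by (simp add: la_mult[symmetric] w la_neg_r la_sum_r)
  qed
  have "left_gen la (\<lambda>k. h (sk i k)) (l - 1)" unfolding left_gen_def
  proof
    fix x
    obtain a where a: "x = (\<Sum>k<l. la (a k) (h k))" using h unfolding left_gen_def by blast
    have "x = la (a i) (h i) + (\<Sum>k<l - 1. la (a (sk i k)) (h (sk i k)))"
      using a sum_remove_sk[OF ij(1), of "\<lambda>k. la (a k) (h k)"] by simp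
    also have "\<dots> = (\<Sum>k<l - 1. la (a (sk i k) - a i * w * Q j (sk i k)) (h (sk i k)))"
      unfolding hi by (simp add: la_neg_r la_sum_r la_diff_l la_mult sum_subtractf mult.assoc)
    finally show "\<exists>a. x = (\<Sum>k<l - 1. la (a k) (h (sk i k)))" by (intro exI[of _ "\<lambda>k. a (sk i k) - a i * w * Q j (sk i k)"])
  qed
  then have "lgen_num la \<le> l - 1" unfolding lgen_num_def by (intro Least_le) blast
  with l ij show False by simp
qed

end

context lring begin
lemma idem_compl:
  assumes "eqm n n (mm n E E) (E :: _ \<Rightarrow> _ \<Rightarrow> 'r)"
  shows "eqm n n (mm n (\<lambda>i j. mI i j - E i j) (\<lambda>i j. mI i j - E i j)) (\<lambda>i j. mI i j - E i j)"
  using assms unfolding eqm_def by (simp add: mm_diff_left mm_diff_right mm_I_left mm_I_right)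
end

lemma Px_simps[simp]: "p1 (Px s t x) = 0" "q1 (Px s t x) = t" "p0 (Px s t x) = s" "q0 (Px s t x) = 0"
  "mX (dd (Px s t x)) = x"
  unfolding Px_def by simp_all

lemma P_simps[simp]: "p1 P1sh = 1" "q1 P1sh = 0" "p0 P1sh = 0" "q0 P1sh = 0"
  "p1 P2sh = 0" "q1 P2sh = 1" "p0 P2sh = 0" "q0 P2sh = 0"
  "p1 P1cx = 0" "q1 P1cx = 0" "p0 P1cx = 1" "q0 P1cx = 0"
  "p1 P2cx = 0" "q1 P2cx = 0" "p0 P2cx = 0" "q0 P2cx = 1"
  "p1 zcx = 0" "q1 zcx = 0" "p0 zcx = 0" "q0 zcx = 0"
  unfolding P1sh_def P2sh_def P1cx_def P2cx_def zcx_def by simp_all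

lemma dsum_simps[simp]: "p1 (dsum T U) = p1 T + p1 U" "q1 (dsum T U) = q1 T + q1 U"
  "p0 (dsum T U) = p0 T + p0 U" "q0 (dsum T U) = q0 T + q0 U"
  unfolding dsum_def by simp_all

context bictx begin

abbreviation S1 :: "('a,'x,'b) cx" where "S1 \<equiv> P1sh"
abbreviation S2 :: "('a,'x,'b) cx" where "S2 \<equiv> P2sh"
abbreviation C1 :: "('a,'x,'b) cx" where "C1 \<equiv> P1cx"
abbreviation C2 :: "('a,'x,'b) cx" where "C2 \<equiv> P2cx"

lemma ptype_Px[simp]: "ptype (Px s t x)" unfolding ptype_def by simp
lemma ptype_P2sh[simp]: "ptype S2" unfolding ptype_def by simp
lemma ptype_P1cx[simp]: "ptype C1" unfolding ptype_def by simp

lemma sum_ra_mI: "j < r \<Longrightarrow> (\<Sum>k<r. ra (g k) (mI k j)) = g j"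
  unfolding mI_def by simp
lemma sum_la_mI: "i < l \<Longrightarrow> (\<Sum>k<l. la (mI i k) (h k)) = h i"
  unfolding mI_def by simp

lemma indec_Pg:
  assumes g: "right_gen ra g r" and r: "r = rgen_num ra"
  shows "indec la ra (Px 1 r (\<lambda>i j. g j))"
proof (rule indec_crit)
  let ?T = "Px 1 r (\<lambda>i j. g j) :: ('a,'x,'b) cx"
  show "triv ?T" by (simp add: ptype_triv)
  show "\<not> hiso la ra ?T zcx" by (simp add: hiso_zcx_sizes ptype_triv)
  fix e1 e0
  assume ch: "chain ?T ?T e1 e0" and i1: "beq1 ?T ?T (c1 ?T e1 e1) e1" and i0: "beq0 ?T ?T (c0 ?T e0 e0) e0"
  have C: "\<forall>j<r. la (mA e0 0 0) (g j) = (\<Sum>k<r. ra (g k) (mB e1 k j))"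
    using ch unfolding chain_ptype[OF ptype_Px ptype_Px] by simp
  have a: "mA e0 0 0 * mA e0 0 0 = mA e0 0 0"
    using i0 unfolding beq0_ptype[OF ptype_Px] mA_c0 eqm_def mm_def by simp
  have bi: "eqm r r (mm r (mB e1) (mB e1)) (mB e1)"
    using i1 unfolding beq1_ptype[OF ptype_Px] mB_c1 by simp
  show "(beq1 ?T ?T e1 bzero \<and> beq0 ?T ?T e0 bzero) \<or> (beq1 ?T ?T e1 bid \<and> beq0 ?T ?T e0 bid)"
  proof (cases "mA e0 0 0 = 0")
    case True
    have "\<forall>j<r. (\<Sum>k<r. ra (g k) (mB e1 k j)) = 0" using C True by simp
    then have "nu (mB e1 i j)" if "i < r" "j < r" for i j using M1r[OF g r] that by blast
    then have "eqm r r (mB e1) (\<lambda>i j. 0)" using B.idem_J_zero[OF _ bi] by blast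
    then have "beq1 ?T ?T e1 bzero" "beq0 ?T ?T e0 bzero"
      unfolding beq1_ptype[OF ptype_Px] beq0_ptype[OF ptype_Px] using True
      by (simp_all add: bzero_def eqm_def)
    then show ?thesis by blast
  next
    case False
    then have a1: "mA e0 0 0 = 1" using A.idem_01[OF a] by blast
    define b' where "b' = (\<lambda>i j. mI i j - mB e1 i j)"
    have "\<forall>j<r. (\<Sum>k<r. ra (g k) (b' k j)) = 0"
      using C a1 by (simp add: b'_def ra_diff_r sum_subtractf sum_ra_mI)
    then have "nu (b' i j)" if "i < r" "j < r" for i j using M1r[OF g r] that by blast
    then have "eqm r r b' (\<lambda>i j. 0)" using B.idem_J_zero[OF _ B.idem_compl[OF bi]] unfolding b'_def by blast
    then have "beq1 ?T ?T e1 bid" "beq0 ?T ?T e0 bid"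
      unfolding beq1_ptype[OF ptype_Px] beq0_ptype[OF ptype_Px] using a1
      by (simp_all add: bid_def eqm_def b'_def mI_def)
    then show ?thesis by blast
  qed
qed

lemma indec_Ph:
  assumes h: "left_gen la h l" and l: "l = lgen_num la"
  shows "indec la ra (Px l 1 (\<lambda>i j. h i))"
proof (rule indec_crit)
  let ?T = "Px l 1 (\<lambda>i j. h i) :: ('a,'x,'b) cx"
  show "triv ?T" by (simp add: ptype_triv)
  show "\<not> hiso la ra ?T zcx" by (simp add: hiso_zcx_sizes ptype_triv)
  fix e1 e0
  assume ch: "chain ?T ?T e1 e0" and i1: "beq1 ?T ?T (c1 ?T e1 e1) e1" and i0: "beq0 ?T ?T (c0 ?T e0 e0) e0"
  have C: "\<forall>i<l. (\<Sum>k<l. la (mA e0 i k) (h k)) = ra (h i) (mB e1 0 0)"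
    using ch unfolding chain_ptype[OF ptype_Px ptype_Px] by simp
  have b: "mB e1 0 0 * mB e1 0 0 = mB e1 0 0"
    using i1 unfolding beq1_ptype[OF ptype_Px] mB_c1 eqm_def mm_def by simp
  have ai: "eqm l l (mm l (mA e0) (mA e0)) (mA e0)"
    using i0 unfolding beq0_ptype[OF ptype_Px] mA_c0 by simp
  show "(beq1 ?T ?T e1 bzero \<and> beq0 ?T ?T e0 bzero) \<or> (beq1 ?T ?T e1 bid \<and> beq0 ?T ?T e0 bid)"
  proof (cases "mB e1 0 0 = 0")
    case True
    have "\<forall>j<l. (\<Sum>k<l. la (mA e0 j k) (h k)) = 0" using C True by simp
    then have "nu (mA e0 j i)" if "i < l" "j < l" for i j using M1l[OF h l] that by blast
    then have "eqm l l (mA e0) (\<lambda>i j. 0)" using A.idem_J_zero[OF _ ai] by blast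
    then have "beq1 ?T ?T e1 bzero" "beq0 ?T ?T e0 bzero"
      unfolding beq1_ptype[OF ptype_Px] beq0_ptype[OF ptype_Px] using True
      by (simp_all add: bzero_def eqm_def)
    then show ?thesis by blast
  next
    case False
    then have b1: "mB e1 0 0 = 1" using B.idem_01[OF b] by blast
    define a' where "a' = (\<lambda>i j. mI i j - mA e0 i j)"
    have "\<forall>j<l. (\<Sum>k<l. la (a' j k) (h k)) = 0"
      using C b1 by (simp add: a'_def la_diff_l sum_subtractf sum_la_mI)
    then have "nu (a' j i)" if "i < l" "j < l" for i j using M1l[OF h l] that by blast
    then have "eqm l l a' (\<lambda>i j. 0)" using A.idem_J_zero[OF _ A.idem_compl[OF ai]] unfolding a'_def by blast
    then have "beq1 ?T ?T e1 bid" "beq0 ?T ?T e0 bid"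
      unfolding beq1_ptype[OF ptype_Px] beq0_ptype[OF ptype_Px] using b1
      by (simp_all add: bid_def eqm_def a'_def mI_def)
    then show ?thesis by blast
  qed
qed

lemma indec_S2: "indec la ra S2"
proof (rule indec_crit)
  show "triv S2" by (simp add: ptype_triv)
  show "\<not> hiso la ra S2 zcx" by (simp add: hiso_zcx_sizes ptype_triv)
  fix e1 e0
  assume ch: "chain S2 S2 e1 e0" and i1: "beq1 S2 S2 (c1 S2 e1 e1) e1" and i0: "beq0 S2 S2 (c0 S2 e0 e0) e0"
  have b: "mB e1 0 0 * mB e1 0 0 = mB e1 0 0"
    using i1 unfolding beq1_ptype[OF ptype_P2sh] mB_c1 eqm_def mm_def by simp
  show "(beq1 S2 S2 e1 bzero \<and> beq0 S2 S2 e0 bzero) \<or> (beq1 S2 S2 e1 bid \<and> beq0 S2 S2 e0 bid)"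
    using B.idem_01[OF b] unfolding beq1_ptype[OF ptype_P2sh] beq0_ptype[OF ptype_P2sh]
    by (auto simp: eqm_def bzero_def bid_def)
qed

lemma indec_C1: "indec la ra C1"
proof (rule indec_crit)
  show "triv C1" by (simp add: ptype_triv)
  show "\<not> hiso la ra C1 zcx" by (simp add: hiso_zcx_sizes ptype_triv)
  fix e1 e0
  assume ch: "chain C1 C1 e1 e0" and i1: "beq1 C1 C1 (c1 C1 e1 e1) e1" and i0: "beq0 C1 C1 (c0 C1 e0 e0) e0"
  have a: "mA e0 0 0 * mA e0 0 0 = mA e0 0 0"
    using i0 unfolding beq0_ptype[OF ptype_P1cx] mA_c0 eqm_def mm_def by simp
  show "(beq1 C1 C1 e1 bzero \<and> beq0 C1 C1 e0 bzero) \<or> (beq1 C1 C1 e1 bid \<and> beq0 C1 C1 e0 bid)"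
    using A.idem_01[OF a] unfolding beq1_ptype[OF ptype_P1cx] beq0_ptype[OF ptype_P1cx]
    by (auto simp: eqm_def bzero_def bid_def)
qed

end

context bictx begin

lemma hom1_ptype:
  assumes pS: "ptype S"
    and H: "\<And>\<phi>. \<exists>\<beta> \<alpha>. \<forall>i<p0 S. \<forall>j<q1 S. \<phi> i j =
       (\<Sum>k<q1 S. ra (mX (dd S) i k) (\<beta> k j)) + (\<Sum>k<p0 S. la (\<alpha> i k) (mX (dd S) k j))"
  shows "hom1_zero la ra S S"
  unfolding hom1_zero_def
proof
  fix \<Phi> :: "('a,'x,'b) bm"
  obtain \<beta> \<alpha> where ba: "\<forall>i<p0 S. \<forall>j<q1 S. mX \<Phi> i j =
       (\<Sum>k<q1 S. ra (mX (dd S) i k) (\<beta> k j)) + (\<Sum>k<p0 S. la (\<alpha> i k) (mX (dd S) k j))"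
    using H by blast
  show "\<exists>a b. beqd S S \<Phi> (badd (c1 S (dd S) a) (c0 S b (dd S)))"
    by (rule exI[of _ "mkAB (\<lambda>i j. 0) \<beta>"], rule exI[of _ "mkAB \<alpha> (\<lambda>i j. 0)"])
       (use pS ba in \<open>simp add: beq_def ptype_def comp_simps badd_def\<close>)
qed

lemma presilting_g:
  assumes g: "right_gen ra g r"
  shows "presilting la ra (dsum_list [Px 1 r (\<lambda>i j. g j), S2])"
proof -
  obtain B where B: "\<forall>x. x = (\<Sum>i<r. ra (g i) (B x i))"
    using g unfolding right_gen_def by metis
  define S where "S = dsum (Px 1 r (\<lambda>i j. g j)) (dsum S2 Z0)"
  have pS: "ptype S" unfolding ptype_def S_def by simp
  have sz: "p0 S = 1" "q1 S = Suc r" unfolding S_def by simp_all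
  have xi: "mX (dd S) 0 k = (if k < r then g k else 0)" for k
    unfolding S_def by (simp add: dsum_def bdiag_def)
  have "hom1_zero la ra S S"
  proof (rule hom1_ptype[OF pS])
    fix \<phi> :: "nat \<Rightarrow> nat \<Rightarrow> 'x"
    show "\<exists>\<beta> \<alpha>. \<forall>i<p0 S. \<forall>j<q1 S. \<phi> i j =
       (\<Sum>k<q1 S. ra (mX (dd S) i k) (\<beta> k j)) + (\<Sum>k<p0 S. la (\<alpha> i k) (mX (dd S) k j))"
    proof (intro exI allI impI)
      fix i j assume i: "i < p0 S" and "j < q1 S"
      then have i0: "i = 0" using sz by simp
      have "(\<Sum>k<q1 S. ra (mX (dd S) i k) ((\<lambda>k j. if k < r then B (\<phi> 0 j) k else 0) k j))
         = (\<Sum>k<r. ra (g k) (B (\<phi> 0 j) k))"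
        unfolding sz i0 by (simp add: xi)
      also have "\<dots> = \<phi> 0 j" using B by metis
      finally show "\<phi> i j = (\<Sum>k<q1 S. ra (mX (dd S) i k) ((\<lambda>k j. if k < r then B (\<phi> 0 j) k else 0) k j))
          + (\<Sum>k<p0 S. la ((\<lambda>i k. 0) i k) (mX (dd S) k j))"
        unfolding i0 by simp
    qed
  qed
  then show ?thesis unfolding presilting_def dsum_list_def S_def by simp
qed

lemma presilting_h:
  assumes h: "left_gen la h l"
  shows "presilting la ra (dsum_list [C1, Px l 1 (\<lambda>i j. h i)])"
proof -
  obtain A where A: "\<forall>x. x = (\<Sum>i<l. la (A x i) (h i))"
    using h unfolding left_gen_def by metis
  define S where "S = dsum C1 (dsum (Px l 1 (\<lambda>i j. h i)) Z0)"
  have pS: "ptype S" unfolding ptype_def S_def by simp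
  have sz: "p0 S = Suc l" "q1 S = 1" unfolding S_def by simp_all
  have xiS: "mX (dd S) (Suc k) 0 = (if k < l then h k else 0)" for k
    unfolding S_def by (simp add: dsum_def bdiag_def)
  have "hom1_zero la ra S S"
  proof (rule hom1_ptype[OF pS])
    fix \<phi> :: "nat \<Rightarrow> nat \<Rightarrow> 'x"
    show "\<exists>\<beta> \<alpha>. \<forall>i<p0 S. \<forall>j<q1 S. \<phi> i j =
       (\<Sum>k<q1 S. ra (mX (dd S) i k) (\<beta> k j)) + (\<Sum>k<p0 S. la (\<alpha> i k) (mX (dd S) k j))"
    proof (intro exI allI impI)
      fix i j assume "i < p0 S" and j: "j < q1 S"
      then have j0: "j = 0" using sz by simp
      have "(\<Sum>k<p0 S. la ((\<lambda>i k. if k = 0 then 0 else A (\<phi> i 0) (k - 1)) i k) (mX (dd S) k 0))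
          = (\<Sum>k<l. la (A (\<phi> i 0) k) (h k))"
        unfolding sz by (subst sum.lessThan_Suc_shift) (simp add: xiS)
      also have "\<dots> = \<phi> i 0" using A by metis
      finally show "\<phi> i j = (\<Sum>k<q1 S. ra (mX (dd S) i k) ((\<lambda>k j. 0) k j))
          + (\<Sum>k<p0 S. la ((\<lambda>i k. if k = 0 then 0 else A (\<phi> i 0) (k - 1)) i k) (mX (dd S) k j))"
        unfolding j0 by simp
    qed
  qed
  then show ?thesis unfolding presilting_def dsum_list_def S_def by simp
qed

lemma deg1only:
  assumes "p0 T = 0" "q0 T = 0" "indec la ra T"
  shows "hiso la ra T S1 \<or> hiso la ra T S2"
proof -
  have tr: "triv W" if "p0 W = 0" "q0 W = 0" for W :: "('a,'x,'b) cx" using that by (simp add: triv_def)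
  have nz: "\<not> hiso la ra T zcx" using assms(3) unfolding indec_def by blast
  show ?thesis
  proof (cases "p1 T")
    case 0
    show ?thesis
    proof (cases "q1 T")
      case 0
      then have "hiso la ra T zcx" using \<open>p1 T = 0\<close> assms by (simp add: hiso_zcx_sizes tr)
      with nz show ?thesis by blast
    next
      case (Suc n)
      define W :: "('a,'x,'b) cx" where "W = \<lparr>p1 = 0, q1 = n, p0 = 0, q0 = 0, dd = bzero\<rparr>"
      have "hiso la ra T (dsum S2 W)"
        by (rule hiso_cxeq) (use assms \<open>p1 T = 0\<close> Suc in \<open>simp_all add: W_def beq_def\<close>)
      then have "hiso la ra S2 zcx \<or> hiso la ra W zcx" using assms(3) unfolding indec_def by blast
      then have "n = 0" by (auto simp: hiso_zcx_sizes tr W_def)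
      then have "hiso la ra T S2"
        by (intro hiso_cxeq) (use assms \<open>p1 T = 0\<close> Suc in \<open>simp_all add: beq_def\<close>)
      then show ?thesis by blast
    qed
  next
    case (Suc n)
    define W :: "('a,'x,'b) cx" where "W = \<lparr>p1 = n, q1 = q1 T, p0 = 0, q0 = 0, dd = bzero\<rparr>"
    have "hiso la ra T (dsum S1 W)"
      by (rule hiso_cxeq) (use assms Suc in \<open>simp_all add: W_def beq_def\<close>)
    then have "hiso la ra S1 zcx \<or> hiso la ra W zcx" using assms(3) unfolding indec_def by blast
    then have "n = 0 \<and> q1 T = 0" by (auto simp: hiso_zcx_sizes tr W_def)
    then have "hiso la ra T S1"
      by (intro hiso_cxeq) (use assms Suc in \<open>simp_all add: beq_def\<close>)
    then show ?thesis by blast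
  qed
qed

lemma deg0only:
  assumes "p1 T = 0" "q1 T = 0" "indec la ra T"
  shows "hiso la ra T C1 \<or> hiso la ra T C2"
proof -
  have tr: "triv W" if "p1 W = 0" "q1 W = 0" for W :: "('a,'x,'b) cx" using that by (simp add: triv_def)
  have nz: "\<not> hiso la ra T zcx" using assms(3) unfolding indec_def by blast
  show ?thesis
  proof (cases "p0 T")
    case 0
    show ?thesis
    proof (cases "q0 T")
      case 0
      then have "hiso la ra T zcx" using \<open>p0 T = 0\<close> assms by (simp add: hiso_zcx_sizes tr)
      with nz show ?thesis by blast
    next
      case (Suc n)
      define W :: "('a,'x,'b) cx" where "W = \<lparr>p1 = 0, q1 = 0, p0 = 0, q0 = n, dd = bzero\<rparr>"
      have "hiso la ra T (dsum C2 W)"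
        by (rule hiso_cxeq) (use assms \<open>p0 T = 0\<close> Suc in \<open>simp_all add: W_def beq_def\<close>)
      then have "hiso la ra C2 zcx \<or> hiso la ra W zcx" using assms(3) unfolding indec_def by blast
      then have "n = 0" by (auto simp: hiso_zcx_sizes tr W_def)
      then have "hiso la ra T C2"
        by (intro hiso_cxeq) (use assms \<open>p0 T = 0\<close> Suc in \<open>simp_all add: beq_def\<close>)
      then show ?thesis by blast
    qed
  next
    case (Suc n)
    define W :: "('a,'x,'b) cx" where "W = \<lparr>p1 = 0, q1 = 0, p0 = n, q0 = q0 T, dd = bzero\<rparr>"
    have "hiso la ra T (dsum C1 W)"
      by (rule hiso_cxeq) (use assms Suc in \<open>simp_all add: W_def beq_def\<close>)
    then have "hiso la ra C1 zcx \<or> hiso la ra W zcx" using assms(3) unfolding indec_def by blast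
    then have "n = 0 \<and> q0 T = 0" by (auto simp: hiso_zcx_sizes tr W_def)
    then have "hiso la ra T C1"
      by (intro hiso_cxeq) (use assms Suc in \<open>simp_all add: beq_def\<close>)
    then show ?thesis by blast
  qed
qed

end

context bictx begin

lemma hiso_conj:
  assumes F: "beq1 V V (c1 V F F') bid" "beq1 V V (c1 V F' F) bid"
    and E: "beq0 V V (c0 V E E') bid" "beq0 V V (c0 V E' E) bid"
  shows "hiso la ra V (V\<lparr>dd := c1 V (c0 V E (dd V)) F\<rparr>)"
proof -
  let ?V = "V\<lparr>dd := c1 V (c0 V E (dd V)) F\<rparr>"
  have ch: "chain V ?V F' E" unfolding chain_map_def
  proof -
    have "c1 ?V (dd ?V) F' = c0 V E (c1 V (dd V) (c1 V F F'))" by (simp add: comp_assoc)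
    also have "beqd V V \<dots> (c0 V E (c1 V (dd V) bid))" by (rule cong_l, rule cong_l, rule F(1))
    also have "beqd V V \<dots> (c0 V E (dd V))" by (rule cong_l, rule comp_bid_r)
    finally show "beqd V ?V (c0 V E (dd V)) (c1 ?V (dd ?V) F')" by (simp add: beq_sym)
  qed
  show ?thesis by (rule hiso_honest[OF ch]) (use F E in simp_all)
qed

lemma comp_mkAB: "comp p q (mkAB E F) (mkAB E' F') = mkAB (mm p E E') (mm q F F')"
  unfolding mkAB_def mm_def by (rule bm_eqI; rule ext; rule ext) (simp_all add: comp_simps)

lemma beq_mkAB: "eqm pt ps E mI \<Longrightarrow> eqm qt qs F mI \<Longrightarrow> beq ps qs pt qt (mkAB E F) bid"
  unfolding beq_def eqm_def bid_def mI_def by simp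

lemma beq_neg_aux:
  assumes a: "beq ps qs pt qt X X'" and b: "beq ps qs pt qt (badd X' Y) Z"
  shows "beq ps qs pt qt (bsub bzero X) (bsub Y Z)"
proof -
  have e: "bsub Y (badd X' Y) = bsub bzero X'" unfolding bsub_def badd_def bzero_def by (simp add: algebra_simps)
  have "beq ps qs pt qt (bsub bzero X) (bsub bzero X')" by (rule beq_bsub[OF beq_refl a])
  also have "bsub bzero X' = bsub Y (badd X' Y)" by (rule e[symmetric])
  also have "beq ps qs pt qt \<dots> (bsub Y Z)" by (rule beq_bsub[OF beq_refl b])
  finally show ?thesis .
qed

lemma hiso_contract:
  assumes U0: "hiso la ra U zcx"
  shows "hiso la ra (dsum U W) W"
proof -
  let ?S = "dsum U W"
  have nU: "nhtp U U bid bid" using U0 hiso_zcx_iff by blast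
  have n1: "nhtp ?S ?S (c1 U bid (c1 U bid bid)) (c0 U bid (c0 U bid bid))"
    by (rule nhtp_comp_l[OF nhtp_comp_r[OF nU chain_pU] chain_iU])
  have n2: "nhtp ?S ?S (bsub bzero (c1 U bid (c1 U bid bid))) (bsub bzero (c0 U bid (c0 U bid bid)))"
    by (rule nhtp_bsub[OF nhtp_zero n1])
  have n3: "nhtp ?S ?S (bsub (c1 W (shin (p1 U) (q1 U)) (shout (p1 U) (q1 U))) bid)
      (bsub (c0 W (shin (p0 U) (q0 U)) (shout (p0 U) (q0 U))) bid)"
    by (rule nhtp_beq[OF n2]; rule beq_neg_aux[OF cong_l[OF comp_bid_l] ip_sum(1)] beq_neg_aux[OF cong_l[OF comp_bid_l] ip_sum(2)])
  have n4: "nhtp W W (bsub (c1 ?S (shout (p1 U) (q1 U)) (shin (p1 U) (q1 U))) bid)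
      (bsub (c0 ?S (shout (p0 U) (q0 U)) (shin (p0 U) (q0 U))) bid)"
    by (rule nhtp_beq[OF nhtp_zero]) (rule beq_zero_bsub, rule pi_W)+
  show ?thesis unfolding hiso_def using chain_pW chain_iW n3 n4 by blast
qed


lemma mA_comp: "mA (comp p q N M) = mm p (mA N) (mA M)" unfolding mm_def by (intro ext) (simp add: comp_simps)
lemma mB_comp: "mB (comp p q N M) = mm q (mB N) (mB M)" unfolding mm_def by (intro ext) (simp add: comp_simps)

lemma contractible: "hiso la ra \<lparr>p1 = kA, q1 = kB, p0 = kA, q0 = kB, dd = bid\<rparr> zcx"
  unfolding hiso_zcx_iff
  by (rule nhtpI[of _ _ _ bid]) (simp_all add: beq_sym comp_bid_l comp_bid_r)

lemma minimal_form:
  "\<exists>Vm. hiso la ra V Vm \<and> (\<forall>i<p0 Vm. \<forall>j<p1 Vm. nu (mA (dd Vm) i j)) \<and> (\<forall>i<q0 Vm. \<forall>j<q1 Vm. nu (mB (dd Vm) i j))"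
proof -
  let ?p1 = "p1 V" and ?q1 = "q1 V" and ?p0 = "p0 V" and ?q0 = "q0 V"
  obtain kA PA PA' QA QA' where GA: "kA \<le> ?p0" "kA \<le> ?p1" "invp ?p0 PA PA'" "invp ?p1 QA QA'"
    "\<forall>i<?p0. \<forall>j<?p1. (i < kA \<or> j < kA \<longrightarrow> mm ?p1 (mm ?p0 PA (mA (dd V))) QA i j = mI i j) \<and>
         (kA \<le> i \<and> kA \<le> j \<longrightarrow> nu (mm ?p1 (mm ?p0 PA (mA (dd V))) QA i j))"
    using A.GE[of ?p0 ?p1 "mA (dd V)"] by blast
  obtain kB PB PB' QB QB' where GB: "kB \<le> ?q0" "kB \<le> ?q1" "invp ?q0 PB PB'" "invp ?q1 QB QB'"
    "\<forall>i<?q0. \<forall>j<?q1. (i < kB \<or> j < kB \<longrightarrow> mm ?q1 (mm ?q0 PB (mB (dd V))) QB i j = mI i j) \<and>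
         (kB \<le> i \<and> kB \<le> j \<longrightarrow> nu (mm ?q1 (mm ?q0 PB (mB (dd V))) QB i j))"
    using B.GE[of ?q0 ?q1 "mB (dd V)"] by blast
  define RA where "RA = mm ?p1 (mm ?p0 PA (mA (dd V))) QA"
  define RB where "RB = mm ?q1 (mm ?q0 PB (mB (dd V))) QB"
  define V1 where "V1 = V\<lparr>dd := c1 V (c0 V (mkAB PA PB) (dd V)) (mkAB QA QB)\<rparr>"
  have h1: "hiso la ra V V1" unfolding V1_def
    by (rule hiso_conj[of _ _ "mkAB QA' QB'" _ "mkAB PA' PB'"])
       (use GA GB in \<open>simp_all add: comp_mkAB beq_mkAB invp_def\<close>)
  define d1 where "d1 = dd V1"
  have d1A: "mA d1 = RA" unfolding d1_def V1_def RA_def by (simp add: mA_comp)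
  have d1B: "mB d1 = RB" unfolding d1_def V1_def RB_def by (simp add: mB_comp)
  define x where "x = (\<lambda>i l. if i < kA then mX d1 i l else 0)"
  define F1 :: "('a,'x,'b) bm" where "F1 = \<lparr>mA = mI, mX = (\<lambda>i j. - x i j), mB = mI\<rparr>"
  define F1' :: "('a,'x,'b) bm" where "F1' = \<lparr>mA = mI, mX = x, mB = mI\<rparr>"
  define V2 where "V2 = V1\<lparr>dd := c1 V1 (c0 V1 bid d1) F1\<rparr>"
  have h2: "hiso la ra V1 V2" unfolding V2_def d1_def
    by (rule hiso_conj[of _ _ F1' _ bid]) (simp_all add: F1_def F1'_def beq_def comp_simps mI_def bid_def)
  define d2 where "d2 = dd V2"
  have sz1: "p1 V1 = ?p1" "q1 V1 = ?q1" "p0 V1 = ?p0" "q0 V1 = ?q0" unfolding V1_def by simp_all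
  have RAd: "RA i k = mI i k" if "i < ?p0" "k < ?p1" "i < kA \<or> k < kA" for i k
    using GA(5) that unfolding RA_def by blast
  have RBd: "RB i k = mI i k" if "i < ?q0" "k < ?q1" "i < kB \<or> k < kB" for i k
    using GB(5) that unfolding RB_def by blast
  have d2A: "mA d2 i j = RA i j" if "i < ?p0" "j < ?p1" for i j
    using that unfolding d2_def V2_def by (simp add: comp_simps sz1 F1_def bid_def d1A mI_def)
  have d2B: "mB d2 i j = RB i j" if "i < ?q0" "j < ?q1" for i j
    using that unfolding d2_def V2_def by (simp add: comp_simps sz1 F1_def bid_def d1B mI_def)
  have d2X: "mX d2 i j = (if i < kA then 0 else mX d1 i j)" if "i < ?p0" "j < ?q1" for i j
  proof -
    have "mX d2 i j = - (\<Sum>k<?p1. la (RA i k) (x k j)) + mX d1 i j"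
      using that unfolding d2_def V2_def by (simp add: comp_simps sz1 F1_def bid_def d1A mI_def la_neg_r sum_negf)
    also have "(\<Sum>k<?p1. la (RA i k) (x k j)) = (\<Sum>k<?p1. if k = i then (if i < kA then mX d1 i j else 0) else 0)"
      by (rule sum.cong) (use that in \<open>auto simp: x_def RAd mI_def\<close>)
    also have "\<dots> = (if i < kA then mX d1 i j else 0)" using GA(2) by (subst sum.delta) auto
    finally show ?thesis by simp
  qed
  define y where "y = (\<lambda>i l. if l < kB then mX d2 i l else 0)"
  define E2 :: "('a,'x,'b) bm" where "E2 = \<lparr>mA = mI, mX = (\<lambda>i j. - y i j), mB = mI\<rparr>"
  define E2' :: "('a,'x,'b) bm" where "E2' = \<lparr>mA = mI, mX = y, mB = mI\<rparr>"
  define V3 where "V3 = V2\<lparr>dd := c1 V2 (c0 V2 E2 d2) bid\<rparr>"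
  have h3: "hiso la ra V2 V3" unfolding V3_def d2_def
    by (rule hiso_conj[of _ bid bid _ E2']) (simp_all add: E2_def E2'_def beq_def comp_simps mI_def bid_def)
  define d3 where "d3 = dd V3"
  have sz2: "p1 V2 = ?p1" "q1 V2 = ?q1" "p0 V2 = ?p0" "q0 V2 = ?q0" using sz1 unfolding V2_def by simp_all
  have d3A: "mA d3 i j = RA i j" if "i < ?p0" "j < ?p1" for i j
    using that d2A unfolding d3_def V3_def by (simp add: comp_simps sz2 E2_def bid_def mI_def)
  have d3B: "mB d3 i j = RB i j" if "i < ?q0" "j < ?q1" for i j
    using that d2B unfolding d3_def V3_def by (simp add: comp_simps sz2 E2_def bid_def mI_def)
  have d3X: "mX d3 i j = (if i < kA \<or> j < kB then 0 else mX d1 i j)" if "i < ?p0" "j < ?q1" for i j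
  proof -
    have "mX d3 i j = mX d2 i j - (\<Sum>k<?q0. ra (y i k) (mB d2 k j))"
      using that unfolding d3_def V3_def by (simp add: comp_simps sz2 E2_def bid_def mI_def ra_neg_l sum_negf)
    also have "(\<Sum>k<?q0. ra (y i k) (mB d2 k j)) = (\<Sum>k<?q0. if k = j then (if j < kB then mX d2 i j else 0) else 0)"
      by (rule sum.cong) (use that GB(1) in \<open>auto simp: y_def d2B RBd mI_def\<close>)
    also have "\<dots> = (if j < kB then mX d2 i j else 0)" using GB(1) by (subst sum.delta) auto
    finally show ?thesis using that d2X by simp
  qed
  define Vm :: "('a,'x,'b) cx" where "Vm = \<lparr>p1 = ?p1 - kA, q1 = ?q1 - kB, p0 = ?p0 - kA, q0 = ?q0 - kB,
      dd = \<lparr>mA = (\<lambda>i j. mA d3 (i + kA) (j + kA)), mX = (\<lambda>i j. mX d3 (i + kA) (j + kB)),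
            mB = (\<lambda>i j. mB d3 (i + kB) (j + kB))\<rparr>\<rparr>"
  define C :: "('a,'x,'b) cx" where "C = \<lparr>p1 = kA, q1 = kB, p0 = kA, q0 = kB, dd = bid\<rparr>"
  have sz3: "p1 V3 = ?p1" "q1 V3 = ?q1" "p0 V3 = ?p0" "q0 V3 = ?q0" using sz2 unfolding V3_def by simp_all
  have h4: "hiso la ra V3 (dsum C Vm)"
  proof (rule hiso_cxeq)
    show "p1 V3 = p1 (dsum C Vm)" "q1 V3 = q1 (dsum C Vm)" "p0 V3 = p0 (dsum C Vm)" "q0 V3 = q0 (dsum C Vm)"
      using GA GB by (simp_all add: sz3 C_def Vm_def)
    show "beqd V3 V3 (dd V3) (dd (dsum C Vm))"
      unfolding beq_def sz3 d3_def[symmetric]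
      using GA(1,2) GB(1,2)
      by (auto simp: dsum_def bdiag_def C_def Vm_def bid_def d3A d3B d3X RAd RBd mI_def)
  qed
  have h5: "hiso la ra (dsum C Vm) Vm" unfolding C_def by (rule hiso_contract[OF contractible])
  have hV: "hiso la ra V Vm" using h1 h2 h3 h4 h5 by (meson hiso_trans)
  have nA: "\<forall>i<p0 Vm. \<forall>j<p1 Vm. nu (mA (dd Vm) i j)"
    using GA(5) by (auto simp: Vm_def d3A RA_def)
  have nB: "\<forall>i<q0 Vm. \<forall>j<q1 Vm. nu (mB (dd Vm) i j)"
    using GB(5) by (auto simp: Vm_def d3B RB_def)
  show ?thesis using hV nA nB by blast
qed

end

context bictx begin

definition xm :: "nat \<Rightarrow> (nat \<Rightarrow> nat \<Rightarrow> 'x) \<Rightarrow> (nat \<Rightarrow> nat \<Rightarrow> 'b) \<Rightarrow> nat \<Rightarrow> nat \<Rightarrow> 'x" where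
  "xm n x M = (\<lambda>i j. \<Sum>k<n. ra (x i k) (M k j))"
definition mx :: "nat \<Rightarrow> (nat \<Rightarrow> nat \<Rightarrow> 'a) \<Rightarrow> (nat \<Rightarrow> nat \<Rightarrow> 'x) \<Rightarrow> nat \<Rightarrow> nat \<Rightarrow> 'x" where
  "mx n E x = (\<lambda>i j. \<Sum>k<n. la (E i k) (x k j))"

lemma xm_assoc: "xm n (xm m x M) N = xm m x (mm n M N)"
  unfolding xm_def mm_def by (intro ext) (simp add: lra_simps, rule sum.swap)

lemma mx_assoc: "mx n E (mx m E' x) = mx m (mm n E E') x"
  unfolding mx_def mm_def by (intro ext) (simp add: lra_simps, rule sum.swap)

lemma mx_xm: "mx n E (xm m x M) = xm m (mx n E x) M"
  unfolding mx_def xm_def by (intro ext) (simp add: lra_simps, rule sum.swap)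

lemma xm_cong: "(\<And>k. k < n \<Longrightarrow> x i k = x' i k) \<Longrightarrow> (\<And>k. k < n \<Longrightarrow> M k j = M' k j) \<Longrightarrow> xm n x M i j = xm n x' M' i j"
  unfolding xm_def by simp

lemma mx_cong: "(\<And>k. k < n \<Longrightarrow> E i k = E' i k) \<Longrightarrow> (\<And>k. k < n \<Longrightarrow> x k j = x' k j) \<Longrightarrow> mx n E x i j = mx n E' x' i j"
  unfolding mx_def by simp

lemma xm_I: "j < n \<Longrightarrow> xm n x mI i j = x i j"
  unfolding xm_def mI_def by simp

lemma mx_I: "i < n \<Longrightarrow> mx n mI x i j = x i j"
  unfolding mx_def mI_def by simp

lemma chain_ptype_xm:
  assumes "ptype T" "ptype U"
  shows "chain T U f1 f0 \<longleftrightarrow> (\<forall>i<p0 U. \<forall>j<q1 T. mx (p0 T) (mA f0) (mX (dd T)) i j = xm (q1 U) (mX (dd U)) (mB f1) i j)"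
  unfolding chain_ptype[OF assms] mx_def xm_def ..

lemma hiso_Px:
  assumes E: "invp s E E'" and F: "invp t F F'"
    and ch: "\<forall>i<s. \<forall>j<t. mx s E x i j = xm t y F i j"
  shows "hiso la ra (Px s t x :: ('a,'x,'b) cx) (Px s t y)"
proof (rule hiso_ptype[of _ _ "mkAB (\<lambda>i j. 0) F" "mkAB E (\<lambda>i j. 0)" F' E'])
  show "chain (Px s t x) (Px s t y) (mkAB (\<lambda>i j. 0) F) (mkAB E (\<lambda>i j. 0))"
    unfolding chain_ptype_xm[OF ptype_Px ptype_Px] using ch by simp
qed (use E F in \<open>simp_all add: invp_def\<close>)

lemma hiso_Px_cxeq: "ptype V \<Longrightarrow> hiso la ra V (Px (p0 V) (q1 V) (mX (dd V)))"
  by (rule hiso_cxeq) (auto simp: ptype_def beq_def)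

end

context bictx begin

declare eqm_trans[trans]

lemma sum_if_lt: "(r::nat) \<le> b \<Longrightarrow> (\<Sum>l<b. if l < r then f l else 0) = (\<Sum>l<r. f l)"
  by (subst sum_split'[of r b]) auto

lemma core_c:
  assumes g: "right_gen ra g r" and r: "r = rgen_num ra"
    and c1: "1 \<le> c"
    and gen: "\<forall>\<psi>::nat\<Rightarrow>'x. \<exists>\<eta>. \<forall>i<c. \<psi> i = (\<Sum>k<b. ra (\<xi> i k) (\<eta> k))"
    and ind: "indec la ra (Px c b \<xi> :: ('a,'x,'b) cx)"
  shows "hiso la ra (Px c b \<xi> :: ('a,'x,'b) cx) (Px 1 r (\<lambda>i j. g j))"
proof -
  define G :: "nat \<Rightarrow> nat \<Rightarrow> 'x" where "G = (\<lambda>i k. g k)"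
  obtain Fc where Fc: "\<forall>x. x = (\<Sum>k<r. ra (g k) (Fc x k))" using g unfolding right_gen_def by metis
  define F where "F = (\<lambda>k j. Fc (\<xi> 0 j) k)"
  have Fp: "xm r G F 0 j = \<xi> 0 j" for j unfolding xm_def G_def F_def using Fc by metis
  have "\<forall>k. \<exists>\<eta>. \<forall>i<c. (if i = 0 then g k else 0) = (\<Sum>l<b. ra (\<xi> i l) (\<eta> l))"
  proof
    fix k show "\<exists>\<eta>. \<forall>i<c. (if i = 0 then g k else 0) = (\<Sum>l<b. ra (\<xi> i l) (\<eta> l))"
      using spec[OF gen, of "\<lambda>i. if i = 0 then g k else 0"] by simp
  qed
  then have "\<exists>H. \<forall>k. \<forall>i<c. (if i = 0 then g k else 0) = (\<Sum>l<b. ra (\<xi> i l) (H k l))" by (rule choice)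
  then obtain H where H: "\<forall>k. \<forall>i<c. (if i = 0 then g k else 0) = (\<Sum>l<b. ra (\<xi> i l) (H k l))" by blast
  define F' where "F' = (\<lambda>l k. H k l)"
  have F'p: "xm b \<xi> F' i k = (if i = 0 then g k else 0)" if "i < c" for i k
    unfolding xm_def F'_def by (subst H[rule_format, OF that]) simp
  define Q0 where "Q0 = mm b F F'"
  have gQ0: "xm r G Q0 0 j = g j" for j
  proof -
    have "xm r G Q0 0 j = xm b (xm r G F) F' 0 j" unfolding Q0_def by (simp add: xm_assoc)
    also have "\<dots> = xm b \<xi> F' 0 j" by (rule xm_cong) (simp_all add: Fp)
    also have "\<dots> = g j" using F'p[of 0 j] c1 by simp
    finally show ?thesis .
  qed
  have "nu (Q0 i j - mI i j)" if "i < r" "j < r" for i j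
  proof (rule M1r[OF g r _ that])
    show "\<forall>j<r. (\<Sum>k<r. ra (g k) (Q0 k j - mI k j)) = 0"
    proof (intro allI impI)
      fix j assume j: "j < r"
      have e1: "xm r G mI 0 j = g j" using j by (simp add: xm_I G_def)
      have "(\<Sum>k<r. ra (g k) (Q0 k j - mI k j)) = xm r G Q0 0 j - xm r G mI 0 j"
        unfolding xm_def G_def by (simp add: ra_diff_r sum_subtractf)
      then show "(\<Sum>k<r. ra (g k) (Q0 k j - mI k j)) = 0" using e1 gQ0[of j] by simp
    qed
  qed
  then obtain W where W: "invp r Q0 W" using B.near_id_inv by blast
  obtain k P P' Q Q' where GE: "k \<le> r" "k \<le> b" "invp r P P'" "invp b Q Q'"
    "\<forall>i<r. \<forall>j<b. (i < k \<or> j < k \<longrightarrow> mm b (mm r P F) Q i j = mI i j) \<and>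
         (k \<le> i \<and> k \<le> j \<longrightarrow> nu (mm b (mm r P F) Q i j))"
    using B.GE[of r b F] by blast
  define R where "R = mm b (mm r P F) Q"
  have QQ': "eqm b b (mm b Q Q') mI" "eqm b b (mm b Q' Q) mI" using GE(4) unfolding invp_def by auto
  have PP': "eqm r r (mm r P P') mI" "eqm r r (mm r P' P) mI" using GE(3) unfolding invp_def by auto
  have kr: "k = r"
  proof (rule ccontr)
    assume "k \<noteq> r"
    with GE(1) have k: "k < r" by simp
    have eqX: "eqm r r (mm b R (mm r (mm b Q' F') P')) (mm r (mm r P Q0) P')"
    proof -
      have "eqm r r (mm b R (mm r (mm b Q' F') P')) (mm r P (mm b F (mm b (mm b Q Q') (mm r F' P'))))"
        unfolding R_def by (simp only: mm_assoc eqm_refl)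
      also have "eqm r r \<dots> (mm r P (mm b F (mm b mI (mm r F' P'))))"
        by (intro mm_cong eqm_refl QQ')
      also have "eqm r r \<dots> (mm r P (mm b F (mm r F' P')))"
        by (intro mm_cong eqm_refl eqm_I_left)
      also have "eqm r r (mm r P (mm b F (mm r F' P'))) (mm r (mm r P Q0) P')"
        unfolding Q0_def by (simp only: mm_assoc eqm_refl)
      finally show ?thesis .
    qed
    have inv: "invp r (mm r (mm r P Q0) P') (mm r P (mm r W P'))"
      by (rule invp_mm[OF invp_mm[OF GE(3) W] invp_sym[OF GE(3)]])
    have "nu (mm r (mm r P Q0) P' (r - 1) l)" if "l < r" for l
    proof -
      have "nu (mm b R (mm r (mm b Q' F') P') (r - 1) l)"
      proof (rule B.J_row)
        fix m assume m: "m < b"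
        show "nu (R (r - 1) m)"
        proof (cases "m < k")
          case True
          then have "R (r - 1) m = mI (r - 1) m" using GE(5) k m unfolding R_def by auto
          then show ?thesis using True k by (simp add: mI_def)
        next
          case False
          then show ?thesis using GE(5) k m unfolding R_def by auto
        qed
      qed
      then show ?thesis using eqX that k unfolding eqm_def by auto
    qed
    from B.row_unit_contra[OF inv _ this] k show False by auto
  qed
  have Rid: "R i j = mI i j" if "i < r" "j < b" for i j using GE(5) kr that unfolding R_def by auto
  have FQ: "mm b F Q i j = (if j < r then P' i j else 0)" if "i < r" "j < b" for i j
  proof -
    have "eqm r b (mm b F Q) (mm r (mm r P' P) (mm b F Q))"
      by (rule eqm_trans[OF eqm_sym[OF eqm_I_left]], rule mm_cong[OF eqm_sym[OF PP'(2)] eqm_refl])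
    then have "mm b F Q i j = mm r P' R i j" using that unfolding R_def eqm_def by (simp add: mm_assoc)
    also have "\<dots> = mm r P' mI i j" by (rule mm_cong_pt) (use that Rid in auto)
    also have "\<dots> = (if j < r then P' i j else 0)" by (simp add: mm_def mI_def)
    finally show ?thesis .
  qed
  define \<xi>' where "\<xi>' = xm b \<xi> Q"
  have h1: "hiso la ra (Px c b \<xi> :: ('a,'x,'b) cx) (Px c b \<xi>')"
  proof (rule hiso_Px[OF invp_I invp_sym[OF GE(4)]])
    show "\<forall>i<c. \<forall>j<b. mx c mI \<xi> i j = xm b \<xi>' Q' i j"
    proof (intro allI impI)
      fix i j assume ij: "i < c" "j < b"
      have "xm b \<xi>' Q' i j = xm b \<xi> (mm b Q Q') i j" unfolding \<xi>'_def by (simp add: xm_assoc)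
      also have "\<dots> = xm b \<xi> mI i j" by (rule xm_cong) (use QQ' ij in \<open>auto simp: eqm_def\<close>)
      finally show "mx c mI \<xi> i j = xm b \<xi>' Q' i j" using ij by (simp add: xm_I mx_I)
    qed
  qed
  define gt where "gt = (\<lambda>j. \<Sum>k<r. ra (g k) (P' k j))"
  have row0: "\<xi>' 0 j = (if j < r then gt j else 0)" if "j < b" for j
  proof -
    have "\<xi>' 0 j = xm b (xm r G F) Q 0 j" unfolding \<xi>'_def by (rule xm_cong) (simp_all add: Fp)
    also have "\<dots> = (\<Sum>k<r. ra (g k) (mm b F Q k j))" by (simp only: xm_assoc) (simp add: xm_def G_def)
    also have "\<dots> = (\<Sum>k<r. ra (g k) (if j < r then P' k j else 0))" by (rule sum.cong) (simp_all add: FQ that)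
    finally show ?thesis by (simp add: gt_def)
  qed
  define S where "S = mm b Q' F'"
  have xiS: "xm b \<xi>' S i l = (if i = 0 then g l else 0)" if "i < c" "l < r" for i l
  proof -
    have "xm b \<xi>' S i l = xm b \<xi> (mm b (mm b Q Q') F') i l" unfolding \<xi>'_def S_def by (simp add: xm_assoc mm_assoc)
    also have "\<dots> = xm b \<xi> (mm b mI F') i l" by (rule xm_cong, simp, rule mm_cong_pt) (use QQ' in \<open>auto simp: eqm_def\<close>)
    also have "\<dots> = xm b \<xi> F' i l" by (rule xm_cong) (simp_all add: mm_I_left)
    finally show ?thesis using F'p that by simp
  qed
  have rb: "r \<le> b" using GE(2) kr by simp
  have PS: "eqm r r (mm r P' S) Q0"
  proof -
    have "eqm r r (mm b (mm b F Q) S) (mm b F (mm b (mm b Q Q') F'))" unfolding S_def by (simp only: mm_assoc eqm_refl)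
    also have "eqm r r \<dots> (mm b F (mm b mI F'))" by (intro mm_cong eqm_refl QQ')
    also have "eqm r r \<dots> Q0" unfolding Q0_def by (intro mm_cong eqm_refl eqm_I_left)
    finally have a: "eqm r r (mm b (mm b F Q) S) Q0" .
    have "mm b (mm b F Q) S i l = mm r P' S i l" if "i < r" "l < r" for i l
    proof -
      have "mm b (mm b F Q) S i l = (\<Sum>m<b. if m < r then P' i m * S m l else 0)"
        unfolding mm_def[of b "mm b F Q"] by (rule sum.cong) (use FQ that in auto)
      also have "\<dots> = mm r P' S i l" using rb by (simp add: sum_if_lt mm_def)
      finally show ?thesis .
    qed
    with a show ?thesis unfolding eqm_def by auto
  qed
  have S1: "eqm r r S (mm r P Q0)"
  proof -
    have "eqm r r S (mm r (mm r P P') S)" by (rule eqm_trans[OF eqm_sym[OF eqm_I_left]], rule mm_cong[OF eqm_sym[OF PP'(1)] eqm_refl])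
    also have "eqm r r (mm r (mm r P P') S) (mm r P (mm r P' S))" by (simp only: mm_assoc eqm_refl)
    also have "eqm r r \<dots> (mm r P Q0)" by (intro mm_cong eqm_refl PS)
    finally show ?thesis .
  qed
  have S1W: "eqm r r (mm r S (mm r W P')) mI"
  proof -
    have "eqm r r (mm r S (mm r W P')) (mm r (mm r P Q0) (mm r W P'))" by (intro mm_cong eqm_refl S1)
    also have "eqm r r (mm r (mm r P Q0) (mm r W P')) (mm r P (mm r (mm r Q0 W) P'))" by (simp only: mm_assoc eqm_refl)
    also have "eqm r r \<dots> (mm r P (mm r mI P'))" using W unfolding invp_def by (intro mm_cong eqm_refl) auto
    also have "eqm r r \<dots> (mm r P P')" by (intro mm_cong eqm_refl eqm_I_left)
    also have "eqm r r \<dots> mI" by (rule PP'(1))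
    finally show ?thesis .
  qed
  define T where "T = mm r (\<lambda>m k. S (r + m) k) (mm r W P')"
  define N :: "nat \<Rightarrow> nat \<Rightarrow> 'b" where "N = (\<lambda>i j. if r \<le> i \<and> j < r then T (i - r) j else 0)"
  define C where "C = (\<lambda>i j. mI i j + N i j)"
  define C' where "C' = (\<lambda>i j. mI i j - N i j)"
  have NN: "mm b N N = (\<lambda>i j. 0)" unfolding mm_def N_def by (intro ext sum.neutral) auto
  have invC: "invp b C C'"
  proof -
    have "mm b C C' i j = mI i j \<and> mm b C' C i j = mI i j" if "i < b" "j < b" for i j
      using that unfolding C_def C'_def
      by (simp add: mm_add_left mm_add_right mm_diff_left mm_diff_right mm_I_left mm_I_right NN)
    then show ?thesis unfolding invp_def eqm_def by auto
  qed
  define \<xi>'' where "\<xi>'' = xm b \<xi>' C"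
  have h2: "hiso la ra (Px c b \<xi>' :: ('a,'x,'b) cx) (Px c b \<xi>'')"
  proof (rule hiso_Px[OF invp_I invp_sym[OF invC]])
    show "\<forall>i<c. \<forall>j<b. mx c mI \<xi>' i j = xm b \<xi>'' C' i j"
    proof (intro allI impI)
      fix i j assume ij: "i < c" "j < b"
      have "xm b \<xi>'' C' i j = xm b \<xi>' (mm b C C') i j" unfolding \<xi>''_def by (simp add: xm_assoc)
      also have "\<dots> = xm b \<xi>' mI i j" by (rule xm_cong) (use invC ij in \<open>auto simp: invp_def eqm_def\<close>)
      finally show "mx c mI \<xi>' i j = xm b \<xi>'' C' i j" using ij by (simp add: xm_I mx_I)
    qed
  qed
  have xiN: "xm b \<xi>' N i j = (if j < r then (\<Sum>m<b - r. ra (\<xi>' i (r + m)) (T m j)) else 0)" for i j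
    unfolding xm_def by (subst sum_split'[OF rb]) (simp add: N_def)
  have xi2: "\<xi>'' i j = (if i = 0 then (if j < r then gt j else 0) else if j < r then 0 else \<xi>' i j)"
    if ij: "i < c" "j < b" for i j
  proof -
    have e: "\<xi>'' i j = \<xi>' i j + xm b \<xi>' N i j"
      unfolding \<xi>''_def C_def xm_def using ij by (simp add: ra_add_r sum.distrib mI_def)
    show ?thesis
    proof (cases "j < r")
      case False
      then show ?thesis using e row0 ij by (simp add: xiN)
    next
      case jr: True
      define x2 where "x2 = (\<lambda>i m. \<xi>' i (r + m))"
      have "(\<Sum>m<b - r. ra (\<xi>' i (r + m)) (T m j)) = xm r (xm (b - r) x2 (\<lambda>m k. S (r + m) k)) (mm r W P') i j"
        unfolding T_def by (simp only: xm_assoc) (simp add: xm_def x2_def)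
      also have "xm (b - r) x2 (\<lambda>m k. S (r + m) k) i l = xm b \<xi>' S i l - xm r \<xi>' S i l" for l
        unfolding xm_def x2_def by (simp add: sum_split'[OF rb, of "\<lambda>k. ra (\<xi>' i k) (S k l)"])
      then have "xm r (xm (b - r) x2 (\<lambda>m k. S (r + m) k)) (mm r W P') i j =
          xm r (\<lambda>i l. xm b \<xi>' S i l - xm r \<xi>' S i l) (mm r W P') i j"
        by (intro xm_cong) auto
      finally have s: "(\<Sum>m<b - r. ra (\<xi>' i (r + m)) (T m j)) =
          xm r (\<lambda>i l. xm b \<xi>' S i l - xm r \<xi>' S i l) (mm r W P') i j" .
      show ?thesis
      proof (cases "i = 0")
        case True
        have "\<xi>' 0 (r + m) = 0" if "m < b - r" for m using row0[of "r + m"] that rb by simp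
        then have "(\<Sum>m<b - r. ra (\<xi>' i (r + m)) (T m j)) = 0" using True by simp
        then show ?thesis using e True jr row0 ij by (simp add: xiN)
      next
        case False
        have "xm r (\<lambda>i l. xm b \<xi>' S i l - xm r \<xi>' S i l) (mm r W P') i j =
            xm r (\<lambda>i l. - xm r \<xi>' S i l) (mm r W P') i j"
          by (rule xm_cong) (use xiS ij False in auto)
        also have "\<dots> = - xm r (xm r \<xi>' S) (mm r W P') i j"
          unfolding xm_def by (simp add: ra_neg_l sum_negf)
        also have "xm r (xm r \<xi>' S) (mm r W P') i j = xm r \<xi>' (mm r S (mm r W P')) i j"
          by (simp add: xm_assoc)
        also have "\<dots> = xm r \<xi>' mI i j" by (rule xm_cong) (use S1W jr in \<open>auto simp: eqm_def\<close>)
        also have "\<dots> = \<xi>' i j" using jr by (simp add: xm_I)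
        finally show ?thesis using e s False jr by (simp add: xiN)
      qed
    qed
  qed
  define Z where "Z = (\<lambda>i j. \<xi>' (Suc i) (r + j))"
  have h3: "hiso la ra (Px c b \<xi>'' :: ('a,'x,'b) cx) (dsum (Px 1 r (\<lambda>i j. gt j)) (Px (c - 1) (b - r) Z))"
  proof (rule hiso_cxeq)
    show "beqd (Px c b \<xi>'') (Px c b \<xi>'') (dd (Px c b \<xi>'')) (dd (dsum (Px 1 r (\<lambda>i j. gt j)) (Px (c - 1) (b - r) Z)))"
      unfolding beq_def using c1 rb by (auto simp: xi2 dsum_def bdiag_def Z_def)
  qed (use c1 rb in simp_all)
  have hh: "hiso la ra (Px c b \<xi> :: ('a,'x,'b) cx) (dsum (Px 1 r (\<lambda>i j. gt j)) (Px (c - 1) (b - r) Z))"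
    using h1 h2 h3 by (meson hiso_trans)
  then have "hiso la ra (Px 1 r (\<lambda>i j. gt j) :: ('a,'x,'b) cx) zcx \<or> hiso la ra (Px (c - 1) (b - r) Z :: ('a,'x,'b) cx) zcx"
    using ind unfolding indec_def by blast
  then have cb: "c = 1" "b = r" using c1 rb by (auto simp: hiso_zcx_sizes ptype_triv)
  have h4: "hiso la ra (Px c b \<xi>'' :: ('a,'x,'b) cx) (Px 1 r (\<lambda>i j. gt j))"
    by (rule hiso_cxeq) (use cb in \<open>auto simp: beq_def xi2\<close>)
  have h5: "hiso la ra (Px 1 r (\<lambda>i j. gt j) :: ('a,'x,'b) cx) (Px 1 r (\<lambda>i j. g j))"
    by (rule hiso_Px[OF invp_I invp_sym[OF GE(3)]]) (simp add: mx_I xm_def gt_def)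
  show ?thesis using h1 h2 h4 h5 by (meson hiso_trans)
qed

end

context lring begin
lemma col_unit_contra:
  assumes "invp n A (B :: _ \<Rightarrow> _ \<Rightarrow> 'r)" "j < n" "\<And>k. k < n \<Longrightarrow> nu (B k j)"
  shows False
proof -
  have "mm n A B j j = 1" using assms(1,2) unfolding invp_def eqm_def mI_def by auto
  moreover have "nu (mm n A B j j)" using assms(3) by (rule J_col)
  ultimately show False by simp
qed
end

context bictx begin

lemma sum_if_lt': "(r::nat) \<le> b \<Longrightarrow> (\<Sum>l<b. if l < r then f l else 0) = (\<Sum>l<r. f l)"
  by (subst sum_split'[of r b]) auto

lemma core_d:
  assumes h: "left_gen la h l" and l: "l = lgen_num la"
    and b1: "1 \<le> b"
    and gen: "\<forall>\<psi>::nat\<Rightarrow>'x. \<exists>\<eta>. \<forall>j<b. \<psi> j = (\<Sum>k<c. la (\<eta> k) (\<xi> k j))"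
    and ind: "indec la ra (Px c b \<xi> :: ('a,'x,'b) cx)"
  shows "hiso la ra (Px c b \<xi> :: ('a,'x,'b) cx) (Px l 1 (\<lambda>i j. h i))"
proof -
  define Hm :: "nat \<Rightarrow> nat \<Rightarrow> 'x" where "Hm = (\<lambda>k j. h k)"
  obtain Ac where Ac: "\<forall>x. x = (\<Sum>k<l. la (Ac x k) (h k))" using h unfolding left_gen_def by metis
  define F where "F = (\<lambda>i k. Ac (\<xi> i 0) k)"
  have Fp: "mx l F Hm i 0 = \<xi> i 0" for i unfolding mx_def Hm_def F_def using Ac by metis
  have "\<forall>k. \<exists>\<eta>. \<forall>j<b. (if j = 0 then h k else 0) = (\<Sum>i<c. la (\<eta> i) (\<xi> i j))"
  proof
    fix k show "\<exists>\<eta>. \<forall>j<b. (if j = 0 then h k else 0) = (\<Sum>i<c. la (\<eta> i) (\<xi> i j))"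
      using spec[OF gen, of "\<lambda>j. if j = 0 then h k else 0"] by simp
  qed
  then have "\<exists>H. \<forall>k. \<forall>j<b. (if j = 0 then h k else 0) = (\<Sum>i<c. la (H k i) (\<xi> i j))" by (rule choice)
  then obtain H where H: "\<forall>k. \<forall>j<b. (if j = 0 then h k else 0) = (\<Sum>i<c. la (H k i) (\<xi> i j))" by blast
  define F' where "F' = H"
  have F'p: "mx c F' \<xi> k j = (if j = 0 then h k else 0)" if "j < b" for k j
    unfolding mx_def F'_def by (subst H[rule_format, OF that]) simp
  define Q0 where "Q0 = mm c F' F"
  have Q0h: "mx l Q0 Hm k 0 = h k" for k
  proof -
    have "mx l Q0 Hm k 0 = mx c F' (mx l F Hm) k 0" unfolding Q0_def by (simp add: mx_assoc)
    also have "\<dots> = mx c F' \<xi> k 0" by (rule mx_cong) (simp_all add: Fp)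
    also have "\<dots> = h k" using F'p[of 0 k] b1 by simp
    finally show ?thesis .
  qed
  have "nu (Q0 j i - mI j i)" if "i < l" "j < l" for i j
  proof (rule M1l[OF h l _ that])
    show "\<forall>j<l. (\<Sum>k<l. la (Q0 j k - mI j k) (h k)) = 0"
    proof (intro allI impI)
      fix j assume j: "j < l"
      have e1: "mx l mI Hm j 0 = h j" using j by (simp add: mx_I Hm_def)
      have "(\<Sum>k<l. la (Q0 j k - mI j k) (h k)) = mx l Q0 Hm j 0 - mx l mI Hm j 0"
        unfolding mx_def Hm_def by (simp add: la_diff_l sum_subtractf)
      then show "(\<Sum>k<l. la (Q0 j k - mI j k) (h k)) = 0" using e1 Q0h[of j] by simp
    qed
  qed
  then obtain W where W: "invp l Q0 W" using A.near_id_inv by blast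
  obtain k P P' Q Q' where GE: "k \<le> c" "k \<le> l" "invp c P P'" "invp l Q Q'"
    "\<forall>i<c. \<forall>j<l. (i < k \<or> j < k \<longrightarrow> mm l (mm c P F) Q i j = mI i j) \<and>
         (k \<le> i \<and> k \<le> j \<longrightarrow> nu (mm l (mm c P F) Q i j))"
    using A.GE[of c l F] by blast
  define R where "R = mm l (mm c P F) Q"
  have QQ': "eqm l l (mm l Q Q') mI" "eqm l l (mm l Q' Q) mI" using GE(4) unfolding invp_def by auto
  have PP': "eqm c c (mm c P P') mI" "eqm c c (mm c P' P) mI" using GE(3) unfolding invp_def by auto
  have kl: "k = l"
  proof (rule ccontr)
    assume "k \<noteq> l"
    with GE(2) have k: "k < l" by simp
    have eqX: "eqm l l (mm c (mm c (mm l Q' F') P') R) (mm l Q' (mm l Q0 Q))"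
    proof -
      have "eqm l l (mm c (mm c (mm l Q' F') P') R) (mm l Q' (mm c F' (mm c (mm c P' P) (mm l F Q))))"
        unfolding R_def by (simp only: mm_assoc eqm_refl)
      also have "eqm l l \<dots> (mm l Q' (mm c F' (mm c mI (mm l F Q))))"
        by (intro mm_cong eqm_refl PP')
      also have "eqm l l \<dots> (mm l Q' (mm c F' (mm l F Q)))"
        by (intro mm_cong eqm_refl eqm_I_left)
      also have "eqm l l \<dots> (mm l Q' (mm l Q0 Q))"
        unfolding Q0_def by (simp only: mm_assoc eqm_refl)
      finally show ?thesis .
    qed
    have inv: "invp l (mm l (mm l Q' W) Q) (mm l Q' (mm l Q0 Q))"
      by (rule invp_mm[OF invp_mm[OF invp_sym[OF GE(4)] invp_sym[OF W]] GE(4)])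
    have "nu (mm l Q' (mm l Q0 Q) m (l - 1))" if "m < l" for m
    proof -
      have "nu (mm c (mm c (mm l Q' F') P') R m (l - 1))"
      proof (rule A.J_col)
        fix i assume i: "i < c"
        show "nu (R i (l - 1))"
        proof (cases "i < k")
          case True
          then have "R i (l - 1) = mI i (l - 1)" using GE(5) k i unfolding R_def by auto
          then show ?thesis using True k by (simp add: mI_def)
        next
          case False
          then show ?thesis using GE(5) k i unfolding R_def by auto
        qed
      qed
      then show ?thesis using eqX that k unfolding eqm_def by auto
    qed
    from A.col_unit_contra[OF inv _ this] k show False by auto
  qed
  have Rid: "R i j = mI i j" if "i < c" "j < l" for i j using GE(5) kl that unfolding R_def by auto
  have PF: "mm c P F i j = (if i < l then Q' i j else 0)" if "i < c" "j < l" for i j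
  proof -
    have "eqm c l (mm c P F) (mm l (mm c P F) (mm l Q Q'))"
      by (rule eqm_trans[OF eqm_sym[OF eqm_I_right]], rule mm_cong[OF eqm_refl eqm_sym[OF QQ'(1)]])
    then have "mm c P F i j = mm l R Q' i j" using that unfolding R_def eqm_def by (simp add: mm_assoc)
    also have "\<dots> = mm l mI Q' i j" by (rule mm_cong_pt) (use that Rid in auto)
    also have "\<dots> = (if i < l then Q' i j else 0)" by (simp add: mm_def mI_def)
    finally show ?thesis .
  qed
  define \<xi>' where "\<xi>' = mx c P \<xi>"
  have h1: "hiso la ra (Px c b \<xi> :: ('a,'x,'b) cx) (Px c b \<xi>')"
    by (rule hiso_Px[OF GE(3) invp_I]) (simp add: \<xi>'_def xm_I)
  define ht where "ht = (\<lambda>i. \<Sum>m<l. la (Q' i m) (h m))"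
  have col0: "\<xi>' i 0 = (if i < l then ht i else 0)" if "i < c" for i
  proof -
    have "\<xi>' i 0 = mx c P (mx l F Hm) i 0" unfolding \<xi>'_def by (rule mx_cong) (simp_all add: Fp)
    also have "\<dots> = (\<Sum>m<l. la (mm c P F i m) (h m))" by (simp only: mx_assoc) (simp add: mx_def Hm_def)
    also have "\<dots> = (\<Sum>m<l. la (if i < l then Q' i m else 0) (h m))" by (rule sum.cong) (simp_all add: PF that)
    finally show ?thesis by (simp add: ht_def)
  qed
  define S where "S = mm c F' P'"
  have Sxi: "mx c S \<xi>' k j = (if j = 0 then h k else 0)" if "k < l" "j < b" for k j
  proof -
    have "mx c S \<xi>' k j = mx c (mm c F' (mm c P' P)) \<xi> k j" unfolding \<xi>'_def S_def by (simp add: mx_assoc mm_assoc)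
    also have "\<dots> = mx c (mm c F' mI) \<xi> k j" by (rule mx_cong, rule mm_cong_pt, simp) (use PP' in \<open>auto simp: eqm_def\<close>)
    also have "\<dots> = mx c F' \<xi> k j" by (rule mx_cong) (simp_all add: mm_I_right)
    finally show ?thesis using F'p that by simp
  qed
  have lc: "l \<le> c" using GE(1) kl by simp
  have SQ: "eqm l l (mm l S Q') Q0"
  proof -
    have "eqm l l (mm c S (mm c P F)) (mm c F' (mm c (mm c P' P) F))" unfolding S_def by (simp only: mm_assoc eqm_refl)
    also have "eqm l l \<dots> (mm c F' (mm c mI F))" by (intro mm_cong eqm_refl PP')
    also have "eqm l l \<dots> Q0" unfolding Q0_def by (intro mm_cong eqm_refl eqm_I_left)
    finally have a: "eqm l l (mm c S (mm c P F)) Q0" .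
    have "mm c S (mm c P F) i j = mm l S Q' i j" if "i < l" "j < l" for i j
    proof -
      have "mm c S (mm c P F) i j = (\<Sum>m<c. if m < l then S i m * Q' m j else 0)"
        unfolding mm_def[of c S] by (rule sum.cong) (use PF that in auto)
      also have "\<dots> = mm l S Q' i j" using lc by (simp add: sum_if_lt' mm_def)
      finally show ?thesis .
    qed
    with a show ?thesis unfolding eqm_def by auto
  qed
  have S1: "eqm l l S (mm l Q0 Q)"
  proof -
    have "eqm l l S (mm l S (mm l Q' Q))" by (rule eqm_trans[OF eqm_sym[OF eqm_I_right]], rule mm_cong[OF eqm_refl eqm_sym[OF QQ'(2)]])
    also have "eqm l l (mm l S (mm l Q' Q)) (mm l (mm l S Q') Q)" by (simp only: mm_assoc eqm_refl)
    also have "eqm l l \<dots> (mm l Q0 Q)" by (intro mm_cong eqm_refl SQ)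
    finally show ?thesis .
  qed
  have WS1: "eqm l l (mm l (mm l Q' W) S) mI"
  proof -
    have "eqm l l (mm l (mm l Q' W) S) (mm l (mm l Q' W) (mm l Q0 Q))" by (intro mm_cong eqm_refl S1)
    also have "eqm l l (mm l (mm l Q' W) (mm l Q0 Q)) (mm l Q' (mm l (mm l W Q0) Q))" by (simp only: mm_assoc eqm_refl)
    also have "eqm l l \<dots> (mm l Q' (mm l mI Q))" using W unfolding invp_def by (intro mm_cong eqm_refl) auto
    also have "eqm l l \<dots> (mm l Q' Q)" by (intro mm_cong eqm_refl eqm_I_left)
    also have "eqm l l \<dots> mI" by (rule QQ'(2))
    finally show ?thesis .
  qed
  define T where "T = mm l (mm l Q' W) (\<lambda>k m. S k (l + m))"
  define N :: "nat \<Rightarrow> nat \<Rightarrow> 'a" where "N = (\<lambda>i j. if i < l \<and> l \<le> j then T i (j - l) else 0)"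
  define Cm where "Cm = (\<lambda>i j. mI i j + N i j)"
  define Cm' where "Cm' = (\<lambda>i j. mI i j - N i j)"
  have NN: "mm c N N = (\<lambda>i j. 0)" unfolding mm_def N_def by (intro ext sum.neutral) auto
  have invC: "invp c Cm Cm'"
  proof -
    have "mm c Cm Cm' i j = mI i j \<and> mm c Cm' Cm i j = mI i j" if "i < c" "j < c" for i j
      using that unfolding Cm_def Cm'_def
      by (simp add: mm_add_left mm_add_right mm_diff_left mm_diff_right mm_I_left mm_I_right NN)
    then show ?thesis unfolding invp_def eqm_def by auto
  qed
  define \<xi>'' where "\<xi>'' = mx c Cm \<xi>'"
  have h2: "hiso la ra (Px c b \<xi>' :: ('a,'x,'b) cx) (Px c b \<xi>'')"
    by (rule hiso_Px[OF invC invp_I]) (simp add: \<xi>''_def xm_I)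
  have xiN: "mx c N \<xi>' i j = (if i < l then (\<Sum>m<c - l. la (T i m) (\<xi>' (l + m) j)) else 0)" for i j
    unfolding mx_def by (subst sum_split'[OF lc]) (simp add: N_def)
  have xi2: "\<xi>'' i j = (if j = 0 then (if i < l then ht i else 0) else if i < l then 0 else \<xi>' i j)"
    if ij: "i < c" "j < b" for i j
  proof -
    have e: "\<xi>'' i j = \<xi>' i j + mx c N \<xi>' i j"
      unfolding \<xi>''_def Cm_def mx_def using ij by (simp add: la_add_l sum.distrib mI_def)
    show ?thesis
    proof (cases "i < l")
      case False
      then show ?thesis using e col0 ij by (simp add: xiN)
    next
      case il: True
      define x2 where "x2 = (\<lambda>m j. \<xi>' (l + m) j)"
      have "(\<Sum>m<c - l. la (T i m) (\<xi>' (l + m) j)) = mx l (mm l Q' W) (mx (c - l) (\<lambda>k m. S k (l + m)) x2) i j"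
        unfolding T_def by (simp only: mx_assoc) (simp add: mx_def x2_def)
      also have "mx (c - l) (\<lambda>k m. S k (l + m)) x2 k j = mx c S \<xi>' k j - mx l S \<xi>' k j" for k
        unfolding mx_def x2_def by (simp add: sum_split'[OF lc, of "\<lambda>m. la (S k m) (\<xi>' m j)"])
      then have "mx l (mm l Q' W) (mx (c - l) (\<lambda>k m. S k (l + m)) x2) i j =
          mx l (mm l Q' W) (\<lambda>k j. mx c S \<xi>' k j - mx l S \<xi>' k j) i j"
        by (intro mx_cong) auto
      finally have s: "(\<Sum>m<c - l. la (T i m) (\<xi>' (l + m) j)) =
          mx l (mm l Q' W) (\<lambda>k j. mx c S \<xi>' k j - mx l S \<xi>' k j) i j" .
      show ?thesis
      proof (cases "j = 0")
        case True
        have "\<xi>' (l + m) 0 = 0" if "m < c - l" for m using col0[of "l + m"] that lc by simp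
        then have "(\<Sum>m<c - l. la (T i m) (\<xi>' (l + m) j)) = 0" using True by simp
        then show ?thesis using e True il col0 ij by (simp add: xiN)
      next
        case False
        have "mx l (mm l Q' W) (\<lambda>k j. mx c S \<xi>' k j - mx l S \<xi>' k j) i j =
            mx l (mm l Q' W) (\<lambda>k j. - mx l S \<xi>' k j) i j"
          by (rule mx_cong) (use Sxi ij False in auto)
        also have "\<dots> = - mx l (mm l Q' W) (mx l S \<xi>') i j"
          unfolding mx_def by (simp add: la_neg_r sum_negf)
        also have "mx l (mm l Q' W) (mx l S \<xi>') i j = mx l (mm l (mm l Q' W) S) \<xi>' i j"
          by (simp add: mx_assoc)
        also have "\<dots> = mx l mI \<xi>' i j" by (rule mx_cong) (use WS1 il in \<open>auto simp: eqm_def\<close>)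
        also have "\<dots> = \<xi>' i j" using il by (simp add: mx_I)
        finally show ?thesis using e s False il by (simp add: xiN)
      qed
    qed
  qed
  define Z where "Z = (\<lambda>i j. \<xi>' (l + i) (Suc j))"
  have h3: "hiso la ra (Px c b \<xi>'' :: ('a,'x,'b) cx) (dsum (Px l 1 (\<lambda>i j. ht i)) (Px (c - l) (b - 1) Z))"
  proof (rule hiso_cxeq)
    show "beqd (Px c b \<xi>'') (Px c b \<xi>'') (dd (Px c b \<xi>'')) (dd (dsum (Px l 1 (\<lambda>i j. ht i)) (Px (c - l) (b - 1) Z)))"
      unfolding beq_def using b1 lc by (auto simp: xi2 dsum_def bdiag_def Z_def)
  qed (use b1 lc in simp_all)
  have hh: "hiso la ra (Px c b \<xi> :: ('a,'x,'b) cx) (dsum (Px l 1 (\<lambda>i j. ht i)) (Px (c - l) (b - 1) Z))"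
    using h1 h2 h3 by (meson hiso_trans)
  then have "hiso la ra (Px l 1 (\<lambda>i j. ht i) :: ('a,'x,'b) cx) zcx \<or> hiso la ra (Px (c - l) (b - 1) Z :: ('a,'x,'b) cx) zcx"
    using ind unfolding indec_def by blast
  then have cb: "c = l" "b = 1" using b1 lc by (auto simp: hiso_zcx_sizes ptype_triv)
  have h4: "hiso la ra (Px c b \<xi>'' :: ('a,'x,'b) cx) (Px l 1 (\<lambda>i j. ht i))"
    by (rule hiso_cxeq) (use cb in \<open>auto simp: beq_def xi2\<close>)
  have h5: "hiso la ra (Px l 1 (\<lambda>i j. ht i) :: ('a,'x,'b) cx) (Px l 1 (\<lambda>i j. h i))"
  proof (rule hiso_Px[OF GE(4) invp_I])
    show "\<forall>i<l. \<forall>j<1. mx l Q (\<lambda>i j. ht i) i j = xm 1 (\<lambda>i j. h i) mI i j"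
    proof (intro allI impI)
      fix i j :: nat assume ij: "i < l" "j < 1"
      have "mx l Q (\<lambda>i j. ht i) i j = mx l Q (mx l Q' Hm) i j" unfolding ht_def mx_def Hm_def by simp
      also have "\<dots> = mx l (mm l Q Q') Hm i j" by (simp add: mx_assoc)
      also have "\<dots> = mx l mI Hm i j" by (rule mx_cong) (use QQ' ij in \<open>auto simp: eqm_def\<close>)
      also have "\<dots> = h i" using ij by (simp add: mx_I Hm_def)
      finally show "mx l Q (\<lambda>i j. ht i) i j = xm 1 (\<lambda>i j. h i) mI i j" using ij by (simp add: xm_I)
    qed
  qed
  show ?thesis using h1 h2 h4 h5 by (meson hiso_trans)
qed

end

context bictx begin

lemma uniq_c:
  assumes g: "right_gen ra g r" and r: "r = rgen_num ra"
    and s: "silting2 la ra V S2" and n1: "\<not> hiso la ra V S1"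
  shows "hiso la ra V (Px 1 r (\<lambda>i j. g j))"
proof -
  have bp: "basic_presilting la ra [V, S2]" using s unfolding silting2_def .
  have indV: "indec la ra V" using bp unfolding basic_presilting_def by simp
  have "\<forall>i<length [V, S2]. \<forall>j<length [V, S2]. i \<noteq> j \<longrightarrow> \<not> hiso la ra ([V, S2] ! i) ([V, S2] ! j)"
    using bp unfolding basic_presilting_def by blast
  from this[rule_format, of 0 1] have n2: "\<not> hiso la ra V S2" by simp
  have ps: "presilting la ra (dsum_list [V, S2])" using bp unfolding basic_presilting_def by simp
  note H = presilting2[OF ps]
  obtain Vm where Vm: "hiso la ra V Vm" "\<forall>i<p0 Vm. \<forall>j<p1 Vm. nu (mA (dd Vm) i j)"
    "\<forall>i<q0 Vm. \<forall>j<q1 Vm. nu (mB (dd Vm) i j)" using minimal_form[of V] by blast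
  have HVV: "hom1_zero la ra Vm Vm" by (rule hom1_hiso[OF H(1) Vm(1) Vm(1)])
  have HSV: "hom1_zero la ra S2 Vm" by (rule hom1_hiso[OF H(2) hiso_refl Vm(1)])
  have indm: "indec la ra Vm" by (rule indec_hiso[OF indV Vm(1)])
  have m1: "\<not> hiso la ra Vm S1" using n1 hiso_trans[OF Vm(1)] by blast
  have m2: "\<not> hiso la ra Vm S2" using n2 hiso_trans[OF Vm(1)] by blast
  have q0: "q0 Vm = 0"
  proof (rule ccontr)
    assume "q0 Vm \<noteq> 0"
    obtain a b where ab: "beqd S2 Vm \<lparr>mA = (\<lambda>i j. 0), mX = (\<lambda>i j. 0), mB = (\<lambda>i j. 1)\<rparr>
        (badd (c1 Vm (dd Vm) a) (c0 S2 b (dd S2)))"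
      using HSV unfolding hom1_zero_def by blast
    then have "1 = mB (badd (c1 Vm (dd Vm) a) (c0 S2 b (dd S2))) 0 0"
      using \<open>q0 Vm \<noteq> 0\<close> unfolding beq_def by auto
    then have "(1::'b) = (\<Sum>k<q1 Vm. mB (dd Vm) 0 k * mB a k 0)" by (simp add: badd_def comp_simps)
    moreover have "nu (\<Sum>k<q1 Vm. mB (dd Vm) 0 k * mB a k 0)"
      using Vm(3) \<open>q0 Vm \<noteq> 0\<close> by (intro B.nu_sum B.nu_mult_left) auto
    ultimately show False by simp
  qed
  have p10: "p1 Vm = 0 \<or> p0 Vm = 0"
  proof (rule ccontr)
    assume "\<not> (p1 Vm = 0 \<or> p0 Vm = 0)"
    then have pp: "0 < p1 Vm" "0 < p0 Vm" by auto
    obtain a b where ab: "beqd Vm Vm \<lparr>mA = (\<lambda>i j. 1), mX = (\<lambda>i j. 0), mB = (\<lambda>i j. 0)\<rparr>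
        (badd (c1 Vm (dd Vm) a) (c0 Vm b (dd Vm)))"
      using HVV unfolding hom1_zero_def by blast
    then have "1 = mA (badd (c1 Vm (dd Vm) a) (c0 Vm b (dd Vm))) 0 0"
      using pp unfolding beq_def by auto
    then have "(1::'a) = (\<Sum>k<p1 Vm. mA (dd Vm) 0 k * mA a k 0) + (\<Sum>k<p0 Vm. mA b 0 k * mA (dd Vm) k 0)"
      by (simp add: badd_def comp_simps)
    moreover have "nu ((\<Sum>k<p1 Vm. mA (dd Vm) 0 k * mA a k 0) + (\<Sum>k<p0 Vm. mA b 0 k * mA (dd Vm) k 0))"
      using Vm(2) pp by (intro A.nu_add A.nu_sum A.nu_mult_left A.nu_mult_right) auto
    ultimately show False by simp
  qed
  show ?thesis
  proof (cases "p0 Vm = 0")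
    case True
    from deg1only[OF True q0 indm] m1 m2 show ?thesis by blast
  next
    case False
    then have p1: "p1 Vm = 0" and c1: "1 \<le> p0 Vm" using p10 by auto
    have pV: "ptype Vm" using p1 q0 unfolding ptype_def by simp
    have hP: "hiso la ra Vm (Px (p0 Vm) (q1 Vm) (mX (dd Vm)))" by (rule hiso_Px_cxeq[OF pV])
    have gen: "\<forall>\<psi>::nat\<Rightarrow>'x. \<exists>\<eta>. \<forall>i<p0 Vm. \<psi> i = (\<Sum>k<q1 Vm. ra (mX (dd Vm) i k) (\<eta> k))"
    proof
      fix \<psi> :: "nat \<Rightarrow> 'x"
      obtain a b where ab: "beqd S2 Vm \<lparr>mA = (\<lambda>i j. 0), mX = (\<lambda>i j. \<psi> i), mB = (\<lambda>i j. 0)\<rparr>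
          (badd (c1 Vm (dd Vm) a) (c0 S2 b (dd S2)))"
        using HSV unfolding hom1_zero_def by blast
      have "\<psi> i = (\<Sum>k<q1 Vm. ra (mX (dd Vm) i k) (mB a k 0))" if "i < p0 Vm" for i
      proof -
        have "\<psi> i = mX (badd (c1 Vm (dd Vm) a) (c0 S2 b (dd S2))) i 0" using ab that unfolding beq_def by auto
        then show ?thesis using p1 by (simp add: badd_def comp_simps)
      qed
      then show "\<exists>\<eta>. \<forall>i<p0 Vm. \<psi> i = (\<Sum>k<q1 Vm. ra (mX (dd Vm) i k) (\<eta> k))"
        by (intro exI[of _ "\<lambda>k. mB a k 0"]) blast
    qed
    have indP: "indec la ra (Px (p0 Vm) (q1 Vm) (mX (dd Vm)) :: ('a,'x,'b) cx)" by (rule indec_hiso[OF indm hP])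
    have "hiso la ra (Px (p0 Vm) (q1 Vm) (mX (dd Vm)) :: ('a,'x,'b) cx) (Px 1 r (\<lambda>i j. g j))"
      by (rule core_c[OF g r c1 gen indP])
    then show ?thesis by (rule hiso_trans[OF hiso_trans[OF Vm(1) hP]])
  qed
qed

lemma uniq_d:
  assumes h: "left_gen la h l" and l: "l = lgen_num la"
    and s: "silting2 la ra C1 V" and n1: "\<not> hiso la ra V C2"
  shows "hiso la ra V (Px l 1 (\<lambda>i j. h i))"
proof -
  have bp: "basic_presilting la ra [C1, V]" using s unfolding silting2_def .
  have indV: "indec la ra V" using bp unfolding basic_presilting_def by simp
  have "\<forall>i<length [C1, V]. \<forall>j<length [C1, V]. i \<noteq> j \<longrightarrow> \<not> hiso la ra ([C1, V] ! i) ([C1, V] ! j)"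
    using bp unfolding basic_presilting_def by blast
  from this[rule_format, of 0 1] have n2: "\<not> hiso la ra C1 V" by simp
  have ps: "presilting la ra (dsum_list [C1, V])" using bp unfolding basic_presilting_def by simp
  note H = presilting2[OF ps]
  obtain Vm where Vm: "hiso la ra V Vm" "\<forall>i<p0 Vm. \<forall>j<p1 Vm. nu (mA (dd Vm) i j)"
    "\<forall>i<q0 Vm. \<forall>j<q1 Vm. nu (mB (dd Vm) i j)" using minimal_form[of V] by blast
  have HVV: "hom1_zero la ra Vm Vm" by (rule hom1_hiso[OF H(3) Vm(1) Vm(1)])
  have HVC: "hom1_zero la ra Vm C1" by (rule hom1_hiso[OF H(2) Vm(1) hiso_refl])
  have indm: "indec la ra Vm" by (rule indec_hiso[OF indV Vm(1)])
  have m1: "\<not> hiso la ra Vm C2" using n1 hiso_trans[OF Vm(1)] by blast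
  have m2: "\<not> hiso la ra Vm C1" using n2 hiso_sym[OF hiso_trans[OF Vm(1)]] by blast
  have p1: "p1 Vm = 0"
  proof (rule ccontr)
    assume "p1 Vm \<noteq> 0"
    obtain a b where ab: "beqd Vm C1 \<lparr>mA = (\<lambda>i j. 1), mX = (\<lambda>i j. 0), mB = (\<lambda>i j. 0)\<rparr>
        (badd (c1 C1 (dd C1) a) (c0 Vm b (dd Vm)))"
      using HVC unfolding hom1_zero_def by blast
    then have "1 = mA (badd (c1 C1 (dd C1) a) (c0 Vm b (dd Vm))) 0 0"
      using \<open>p1 Vm \<noteq> 0\<close> unfolding beq_def by auto
    then have "(1::'a) = (\<Sum>k<p0 Vm. mA b 0 k * mA (dd Vm) k 0)" by (simp add: badd_def comp_simps)
    moreover have "nu (\<Sum>k<p0 Vm. mA b 0 k * mA (dd Vm) k 0)"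
      using Vm(2) \<open>p1 Vm \<noteq> 0\<close> by (intro A.nu_sum A.nu_mult_right) auto
    ultimately show False by simp
  qed
  have q10: "q1 Vm = 0 \<or> q0 Vm = 0"
  proof (rule ccontr)
    assume "\<not> (q1 Vm = 0 \<or> q0 Vm = 0)"
    then have pp: "0 < q1 Vm" "0 < q0 Vm" by auto
    obtain a b where ab: "beqd Vm Vm \<lparr>mA = (\<lambda>i j. 0), mX = (\<lambda>i j. 0), mB = (\<lambda>i j. 1)\<rparr>
        (badd (c1 Vm (dd Vm) a) (c0 Vm b (dd Vm)))"
      using HVV unfolding hom1_zero_def by blast
    then have "1 = mB (badd (c1 Vm (dd Vm) a) (c0 Vm b (dd Vm))) 0 0"
      using pp unfolding beq_def by auto
    then have "(1::'b) = (\<Sum>k<q1 Vm. mB (dd Vm) 0 k * mB a k 0) + (\<Sum>k<q0 Vm. mB b 0 k * mB (dd Vm) k 0)"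
      by (simp add: badd_def comp_simps)
    moreover have "nu ((\<Sum>k<q1 Vm. mB (dd Vm) 0 k * mB a k 0) + (\<Sum>k<q0 Vm. mB b 0 k * mB (dd Vm) k 0))"
      using Vm(3) pp by (intro B.nu_add B.nu_sum B.nu_mult_left B.nu_mult_right) auto
    ultimately show False by simp
  qed
  show ?thesis
  proof (cases "q1 Vm = 0")
    case True
    from deg0only[OF p1 True indm] m1 m2 show ?thesis by blast
  next
    case False
    then have q0: "q0 Vm = 0" and b1: "1 \<le> q1 Vm" using q10 by auto
    have pV: "ptype Vm" using p1 q0 unfolding ptype_def by simp
    have hP: "hiso la ra Vm (Px (p0 Vm) (q1 Vm) (mX (dd Vm)))" by (rule hiso_Px_cxeq[OF pV])
    have gen: "\<forall>\<psi>::nat\<Rightarrow>'x. \<exists>\<eta>. \<forall>j<q1 Vm. \<psi> j = (\<Sum>k<p0 Vm. la (\<eta> k) (mX (dd Vm) k j))"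
    proof
      fix \<psi> :: "nat \<Rightarrow> 'x"
      obtain a b where ab: "beqd Vm C1 \<lparr>mA = (\<lambda>i j. 0), mX = (\<lambda>i j. \<psi> j), mB = (\<lambda>i j. 0)\<rparr>
          (badd (c1 C1 (dd C1) a) (c0 Vm b (dd Vm)))"
        using HVC unfolding hom1_zero_def by blast
      have "\<psi> j = (\<Sum>k<p0 Vm. la (mA b 0 k) (mX (dd Vm) k j))" if "j < q1 Vm" for j
      proof -
        have "\<psi> j = mX (badd (c1 C1 (dd C1) a) (c0 Vm b (dd Vm))) 0 j" using ab that unfolding beq_def by auto
        then show ?thesis using q0 by (simp add: badd_def comp_simps)
      qed
      then show "\<exists>\<eta>. \<forall>j<q1 Vm. \<psi> j = (\<Sum>k<p0 Vm. la (\<eta> k) (mX (dd Vm) k j))"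
        by (intro exI[of _ "\<lambda>k. mA b 0 k"]) blast
    qed
    have indP: "indec la ra (Px (p0 Vm) (q1 Vm) (mX (dd Vm)) :: ('a,'x,'b) cx)" by (rule indec_hiso[OF indm hP])
    have "hiso la ra (Px (p0 Vm) (q1 Vm) (mX (dd Vm)) :: ('a,'x,'b) cx) (Px l 1 (\<lambda>i j. h i))"
      by (rule core_d[OF h l b1 gen indP])
    then show ?thesis by (rule hiso_trans[OF hiso_trans[OF Vm(1) hP]])
  qed
qed

end

context bictx begin

lemma silt_g:
  assumes g: "right_gen ra g r" and r: "r = rgen_num ra"
  shows "silting2 la ra (Px 1 r (\<lambda>i j. g j)) S2"
proof -
  have n1: "\<not> hiso la ra (Px 1 r (\<lambda>i j. g j)) S2"
  proof
    assume "hiso la ra (Px 1 r (\<lambda>i j. g j)) S2"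
    from noniso1[OF this] show False by simp
  qed
  have n2: "\<not> hiso la ra S2 (Px 1 r (\<lambda>i j. g j))" using n1 hiso_sym by blast
  show ?thesis unfolding silting2_def basic_presilting_def
  proof (intro conjI)
    show "\<forall>T\<in>set [Px 1 r (\<lambda>i j. g j), S2]. indec la ra T" using indec_Pg[OF g r] indec_S2 by simp
    show "\<forall>i<length [Px 1 r (\<lambda>i j. g j), S2]. \<forall>j<length [Px 1 r (\<lambda>i j. g j), S2]. i \<noteq> j \<longrightarrow>
        \<not> hiso la ra ([Px 1 r (\<lambda>i j. g j), S2] ! i) ([Px 1 r (\<lambda>i j. g j), S2] ! j)"
      using n1 n2 by (auto simp: less_Suc_eq)
    show "presilting la ra (dsum_list [Px 1 r (\<lambda>i j. g j), S2])" by (rule presilting_g[OF g])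
  qed
qed

lemma silt_h:
  assumes h: "left_gen la h l" and l: "l = lgen_num la"
  shows "silting2 la ra C1 (Px l 1 (\<lambda>i j. h i))"
proof -
  have n1: "\<not> hiso la ra C1 (Px l 1 (\<lambda>i j. h i))"
  proof
    assume "hiso la ra C1 (Px l 1 (\<lambda>i j. h i))"
    from noniso2[OF this] show False by simp
  qed
  have n2: "\<not> hiso la ra (Px l 1 (\<lambda>i j. h i)) C1" using n1 hiso_sym by blast
  show ?thesis unfolding silting2_def basic_presilting_def
  proof (intro conjI)
    show "\<forall>T\<in>set [C1, Px l 1 (\<lambda>i j. h i)]. indec la ra T" using indec_Ph[OF h l] indec_C1 by simp
    show "\<forall>i<length [C1, Px l 1 (\<lambda>i j. h i)]. \<forall>j<length [C1, Px l 1 (\<lambda>i j. h i)]. i \<noteq> j \<longrightarrow>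
        \<not> hiso la ra ([C1, Px l 1 (\<lambda>i j. h i)] ! i) ([C1, Px l 1 (\<lambda>i j. h i)] ! j)"
      using n1 n2 by (auto simp: less_Suc_eq)
    show "presilting la ra (dsum_list [C1, Px l 1 (\<lambda>i j. h i)])" by (rule presilting_h[OF h])
  qed
qed

lemma part_c:
  assumes g: "right_gen ra g (rgen_num ra)"
  shows "mu_plus la ra P1sh P2sh 1 (Px 1 (rgen_num ra) (\<lambda>i j. g j))"
proof -
  let ?U = "Px 1 (rgen_num ra) (\<lambda>i j. g j) :: ('a,'x,'b) cx"
  have s: "silting2 la ra ?U S2" by (rule silt_g[OF g refl])
  have n: "\<not> hiso la ra ?U S1"
  proof
    assume "hiso la ra ?U S1"
    from noniso1[OF this] show False by simp
  qed
  have u: "\<forall>V. silting2 la ra V S2 \<and> \<not> hiso la ra V S1 \<longrightarrow> hiso la ra V ?U"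
    using uniq_c[OF g refl] by blast
  have h1: "hom1_zero la ra (dsum ?U S2) (dsum S1 S2)" unfolding hom1_zero_def beq_def by simp
  have n2: "\<not> hiso la ra (dsum ?U S2) (dsum S1 S2)"
  proof
    assume "hiso la ra (dsum ?U S2) (dsum S1 S2)"
    from noniso1[OF this] show False by simp
  qed
  show ?thesis unfolding mu_plus_def mut_ok_def mut_cx_def sgt_def using s n u h1 n2 by simp
qed

lemma part_d:
  assumes h: "left_gen la h (lgen_num la)"
  shows "mu_minus la ra P1cx P2cx 2 (Px (lgen_num la) 1 (\<lambda>i j. h i))"
proof -
  let ?U = "Px (lgen_num la) 1 (\<lambda>i j. h i) :: ('a,'x,'b) cx"
  have s: "silting2 la ra C1 ?U" by (rule silt_h[OF h refl])
  have n: "\<not> hiso la ra ?U C2"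
  proof
    assume "hiso la ra ?U C2"
    from noniso2[OF hiso_sym[OF this]] show False by simp
  qed
  have u: "\<forall>V. silting2 la ra C1 V \<and> \<not> hiso la ra V C2 \<longrightarrow> hiso la ra V ?U"
    using uniq_d[OF h refl] by blast
  have h1: "hom1_zero la ra (dsum C1 C2) (dsum C1 ?U)" unfolding hom1_zero_def beq_def by simp
  have n2: "\<not> hiso la ra (dsum C1 C2) (dsum C1 ?U)"
  proof
    assume "hiso la ra (dsum C1 C2) (dsum C1 ?U)"
    from noniso2[OF this] show False by simp
  qed
  show ?thesis unfolding mu_minus_def mut_ok_def mut_cx_def sgt_def using s n u h1 n2 by simp
qed

end

theorem proposition3p10:
  fixes \<iota>A :: "'k::field \<Rightarrow> 'a::ring_1" and \<iota>B :: "'k \<Rightarrow> 'b::ring_1"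
    and la :: "'a \<Rightarrow> 'x::ab_group_add \<Rightarrow> 'x" and ra :: "'x \<Rightarrow> 'b \<Rightarrow> 'x"
  assumes "k_alg \<iota>A" and "k_alg \<iota>B"
    and "fin_dim_k (\<lambda>c a. \<iota>A c * a)" and "fin_dim_k (\<lambda>c b. \<iota>B c * b)"
    and "loc_ring TYPE('a)" and "loc_ring TYPE('b)"
    and "bimod la ra"
    and "\<forall>c x. la (\<iota>A c) x = ra x (\<iota>B c)"
    and "fin_dim_k (\<lambda>c x. la (\<iota>A c) x)"
  shows "cone hull {(0::real, -1::real), (1, - real (rgen_num ra))} \<in> gfan la ra
         \<and> cone hull {(1::real, 0::real), (real (lgen_num la), -1)} \<in> gfan la ra
         \<and> (\<forall>g. right_gen ra g (rgen_num ra) \<longrightarrow>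
              mu_plus la ra P1sh P2sh 1 (Px 1 (rgen_num ra) (\<lambda>i j. g j)))
         \<and> (\<forall>h. left_gen la h (lgen_num la) \<longrightarrow>
              mu_minus la ra P1cx P2cx 2 (Px (lgen_num la) 1 (\<lambda>i j. h i)))"
proof -
  interpret bictx "TYPE('a)" "TYPE('b)" la ra
    by unfold_locales (use assms in auto)
  have ex: "\<exists>g n. right_gen ra g n" "\<exists>h n. left_gen la h n"
    using fin_gen[OF assms(9) assms(8)] by auto
  obtain g0 where g0: "right_gen ra g0 (rgen_num ra)"
    using LeastI_ex[of "\<lambda>n. \<exists>g. right_gen ra g n"] ex(1) unfolding rgen_num_def by blast
  obtain h0 where h0: "left_gen la h0 (lgen_num la)"
    using LeastI_ex[of "\<lambda>n. \<exists>h. left_gen la h n"] ex(2) unfolding lgen_num_def by blast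
  have a: "cone hull {(0::real, -1::real), (1, - real (rgen_num ra))} \<in> gfan la ra"
  proof -
    have "basic_presilting la ra [Px 1 (rgen_num ra) (\<lambda>i j. g0 j), S2]"
      using silt_g[OF g0 refl] unfolding silting2_def .
    moreover have "gvec ` set [Px 1 (rgen_num ra) (\<lambda>i j. g0 j), S2] = {(0::real, -1::real), (1, - real (rgen_num ra))}"
      by (auto simp: gvec_def)
    ultimately show ?thesis unfolding gfan_def by (metis (mono_tags, lifting) mem_Collect_eq)
  qed
  have b: "cone hull {(1::real, 0::real), (real (lgen_num la), -1)} \<in> gfan la ra"
  proof -
    have "basic_presilting la ra [C1, Px (lgen_num la) 1 (\<lambda>i j. h0 i)]"
      using silt_h[OF h0 refl] unfolding silting2_def .
    moreover have "gvec ` set [C1, Px (lgen_num la) 1 (\<lambda>i j. h0 i)] = {(1::real, 0::real), (real (lgen_num la), -1)}"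
      by (auto simp: gvec_def)
    ultimately show ?thesis unfolding gfan_def by (metis (mono_tags, lifting) mem_Collect_eq)
  qed
  show ?thesis using a b part_c part_d by blast
qed

end
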